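(* Let $k$, $\varphi$, $b$, $a_1,\dots,a_d$, $u_{a_i}(s)$, $\mathbf V_{\mathfrak r}(s)$, $(M,D_t)$ and $(M_\varphi,D_s)$ be as in the context. For each $i=1,\dots,d$, let $\vec Y_{a_i,1}(t),\dots,\vec Y_{a_i,\mathfrak r}(t)$ be any basis of the space of horizontal elements of $(M,D_t)$ at $a_i$. For $i\in\{1,\dots,d\}$ and $j\in\{1,\dots,\mathfrak r\}$ let $w_{i,j}(s)\in k[[s-b]]^{\mathfrak rd}$ be the vector whose entry in position $(l-1)d+i$ is the $l$-th component of $\vec Y_{a_i,j}(u_{a_i}(s))$ ($l=1,\dots,\mathfrak r$), all other entries being $0$. Then the $\mathfrak rd$ vectors $\mathbf V_{\mathfrak r}(s)\,w_{i,j}(s)$, $1\le i\le d$, $1\le j\le\mathfrak r$, form a basis of the space of horizontal elements of $(M_\varphi,D_s)$ at $b$ (written in coordinates with respect to the basis $e_1,te_1,\dots,t^{d-1}e_1,\dots,t^{d-1}e_{\mathfrak r}$).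
   Context: $k$ is an algebraically closed field complete for a non-archimedean absolute value extending the $p$-adic one on $\mathbb Q_p$. ${\mathscr D}_t^\pm$ denotes the unit disc (open or closed) in coordinate $t$ with ring of analytic functions $\mathcal O_t^\pm$; $\mathcal O_t(a,r^-)$ is the ring of power series in $t-a$ converging on $|t-a|<r$. $\varphi:{\mathscr D}_t^\pm\to{\mathscr D}_s^\pm$ is a finite étale morphism of degree $d$ of unit discs (both open or both closed), $s=f(t)$, $f\in\mathcal O_t^\pm$, $f'$ invertible; $P(s,X)\in\mathcal O_s^\pm[X]$ is the unique monic degree-$d$ polynomial with $P(f(t),t)=0$. Fix $b\in{\mathscr D}_s^\pm(k)$, $\varphi^{-1}(b)=\{a_1,\dots,a_d\}$. $u_{a_i}(s)\in k[[s-b]]$ is the power series with constant term $a_i$ and $P(s,u_{a_i}(s))=0$ (positive radius of convergence). $\mathbf U(s)=(u_{a_i}(s)^{j-1})_{1\le i,j\le d}$, $\mathbf V(s)=\mathbf U(s)^{-1}$, and $\mathbf V_{\mathfrak r}(s)$ is block diagonal with $\mathfrak r$ blocks $\mathbf V(s)$. $(M,D_t)$ is a differential module of rank $\mathfrak r$: a free $\mathcal O_t^\pm$-module with $k$-linear $D_t$ satisfying $D_t(gm)=\frac{dg}{dt}m+gD_t(m)$, with fixed basis $e_1,\dots,e_{\mathfrak r}$. A horizontal element at $a\in{\mathscr D}_t^\pm(k)$ is an element of $\ker D_t$ on $M\otimes\mathcal O_t(a,r^-)$ for some $r>0$, identified with its coordinate vector in $k[[t-a]]^{\mathfrak r}$.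 The direct image $(M_\varphi,D_s)$ is $M$ as an $\mathcal O_s^\pm$-module via $s=f(t)$ with $D_s(m)=\frac{1}{f'(t)}D_t(m)$, with basis $e_1,te_1,\dots,t^{d-1}e_1,e_2,\dots,t^{d-1}e_{\mathfrak r}$; horizontal elements at $b$ are elements of $\ker D_s$ on $M_\varphi\otimes\mathcal O_s(b,r^-)$ for some $r>0$, identified with coordinate vectors in $k[[s-b]]^{\mathfrak rd}$. *)

theory Defs
  imports "HOL-Computational_Algebra.Formal_Power_Series"
          "HOL-Computational_Algebra.Polynomial"
          "HOL-Computational_Algebra.Primes"
begin

definition nonarch_abs :: "('k::field \<Rightarrow> real) \<Rightarrow> bool" where
  "nonarch_abs v \<longleftrightarrow> (\<forall>x. 0 \<le> v x) \<and> (\<forall>x. v x = 0 \<longleftrightarrow> x = 0)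
     \<and> (\<forall>x y. v (x * y) = v x * v y) \<and> (\<forall>x y. v (x + y) \<le> max (v x) (v y))"

definition v_complete :: "('k::field \<Rightarrow> real) \<Rightarrow> bool" where
  "v_complete v \<longleftrightarrow> (\<forall>X::nat \<Rightarrow> 'k.
     (\<forall>e>0. \<exists>N. \<forall>m\<ge>N. \<forall>n\<ge>N. v (X m - X n) < e) \<longrightarrow> (\<exists>L. (\<lambda>n. v (X n - L)) \<longlonglongrightarrow> 0))"

definition alg_closed_field :: "'k::field itself \<Rightarrow> bool" where
  "alg_closed_field _ \<longleftrightarrow> (\<forall>q::'k poly. degree q \<ge> 1 \<longrightarrow> (\<exists>x. poly q x = 0))"

definition extends_padic :: "nat \<Rightarrow> ('k::field_char_0 \<Rightarrow> real) \<Rightarrow> bool" where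
  "extends_padic p v \<longleftrightarrow> prime p \<and>
     (\<forall>n::int. n \<noteq> 0 \<longrightarrow> v (of_int n) = real p powr (- real (multiplicity (int p) n)))"

definition padic_base_field :: "nat \<Rightarrow> ('k::field_char_0 \<Rightarrow> real) \<Rightarrow> bool" where
  "padic_base_field p v \<longleftrightarrow> nonarch_abs v \<and> v_complete v \<and> alg_closed_field TYPE('k)
     \<and> extends_padic p v"

definition psum :: "('k::field \<Rightarrow> real) \<Rightarrow> 'k fps \<Rightarrow> 'k \<Rightarrow> 'k \<Rightarrow> bool" where
  "psum v c z y \<longleftrightarrow> (\<lambda>N. v ((\<Sum>n<N. fps_nth c n * z ^ n) - y)) \<longlonglongrightarrow> 0"

definition feval :: "('k::field \<Rightarrow> real) \<Rightarrow> 'k fps \<Rightarrow> 'k \<Rightarrow> 'k" where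
  "feval v c z = (THE y. psum v c z y)"

definition conv_ball :: "('k::field \<Rightarrow> real) \<Rightarrow> 'k fps \<Rightarrow> real \<Rightarrow> bool" where
  "conv_ball v c \<rho> \<longleftrightarrow> (\<forall>z. v z < \<rho> \<longrightarrow> (\<exists>y. psum v c z y))"

definition disc :: "bool \<Rightarrow> ('k::field \<Rightarrow> real) \<Rightarrow> 'k set" where
  "disc opn v = (if opn then {x. v x < 1} else {x. v x \<le> 1})"

text \<open>The ring of analytic functions on the unit disc, as a subring of k[[t]].\<close>
definition inO :: "bool \<Rightarrow> ('k::field \<Rightarrow> real) \<Rightarrow> 'k fps \<Rightarrow> bool" where
  "inO opn v c \<longleftrightarrow> (if opn
     then (\<forall>\<rho>. 0 < \<rho> \<and> \<rho> < 1 \<longrightarrow> (\<lambda>n. v (fps_nth c n) * \<rho> ^ n) \<longlonglongrightarrow> 0)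
     else (\<lambda>n. v (fps_nth c n)) \<longlonglongrightarrow> 0)"

text \<open>cs j (j<d) in O_s represent g in O_t on the basis 1,t,...,t^(d-1), i.e. g = sum cs_j(f(t)) t^j.\<close>
definition decomp_rel :: "bool \<Rightarrow> ('k::field \<Rightarrow> real) \<Rightarrow> 'k fps \<Rightarrow> nat \<Rightarrow> 'k fps
    \<Rightarrow> (nat \<Rightarrow> 'k fps) \<Rightarrow> bool" where
  "decomp_rel opn v f d g cs \<longleftrightarrow> (\<forall>j\<ge>d. cs j = 0) \<and> (\<forall>j<d. inO opn v (cs j)) \<and>
     (\<forall>x\<in>disc opn v. feval v g x = (\<Sum>j<d. feval v (cs j) (feval v f x) * x ^ j))"

definition decomp :: "bool \<Rightarrow> ('k::field \<Rightarrow> real) \<Rightarrow> 'k fps \<Rightarrow> nat \<Rightarrow> 'k fps \<Rightarrow> nat \<Rightarrow> 'k fps" where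
  "decomp opn v f d g = (THE cs. decomp_rel opn v f d g cs)"

definition finite_etale_disc :: "bool \<Rightarrow> ('k::field \<Rightarrow> real) \<Rightarrow> 'k fps \<Rightarrow> nat \<Rightarrow> bool" where
  "finite_etale_disc opn v f d \<longleftrightarrow> inO opn v f
     \<and> (\<forall>x\<in>disc opn v. feval v f x \<in> disc opn v)
     \<and> (\<exists>g. inO opn v g \<and> g * fps_deriv f = 1)
     \<and> (\<forall>g. inO opn v g \<longrightarrow> (\<exists>!cs. decomp_rel opn v f d g cs))"

definition dinv :: "bool \<Rightarrow> ('k::field \<Rightarrow> real) \<Rightarrow> 'k fps \<Rightarrow> 'k fps" where
  "dinv opn v f = (SOME g. inO opn v g \<and> g * fps_deriv f = 1)"

text \<open>M is free with basis e_0..e_(r-1), D_t(e_l) = sum_m G m l e_m.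
  Horizontal elements at a: coordinate vectors in k[[t-a]]^r.\<close>
definition horiz_t :: "bool \<Rightarrow> ('k::field \<Rightarrow> real) \<Rightarrow> nat \<Rightarrow> (nat \<Rightarrow> nat \<Rightarrow> 'k fps) \<Rightarrow> 'k
    \<Rightarrow> (nat \<Rightarrow> 'k fps) set" where
  "horiz_t opn v r G a = {Y. (\<forall>l\<ge>r. Y l = 0) \<and>
     (\<exists>\<rho>>0. \<rho> \<le> 1 \<and> (\<forall>l<r. conv_ball v (Y l) \<rho>) \<and>
        (\<forall>x. v (x - a) < \<rho> \<longrightarrow> (\<forall>m<r.
           feval v (fps_deriv (Y m)) (x - a) + (\<Sum>l<r. feval v (G m l) x * feval v (Y l) (x - a)) = 0)))}"

text \<open>Matrix of D_s on M_phi in the basis t^i e_l (position l*d+i, 0-based):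
  D_s(t^i e_l) = sum_{m,j} Ds_mat m j l i (s) t^j e_m.\<close>
definition Ds_mat :: "bool \<Rightarrow> ('k::field \<Rightarrow> real) \<Rightarrow> 'k fps \<Rightarrow> nat \<Rightarrow> (nat \<Rightarrow> nat \<Rightarrow> 'k fps)
    \<Rightarrow> nat \<Rightarrow> nat \<Rightarrow> nat \<Rightarrow> nat \<Rightarrow> 'k fps" where
  "Ds_mat opn v f d G m j l i = decomp opn v f d
     (dinv opn v f * (fps_deriv (fps_X ^ i) * (if m = l then 1 else 0) + fps_X ^ i * G m l)) j"

definition horiz_s :: "bool \<Rightarrow> ('k::field \<Rightarrow> real) \<Rightarrow> nat \<Rightarrow> nat \<Rightarrow> 'k fps
    \<Rightarrow> (nat \<Rightarrow> nat \<Rightarrow> 'k fps) \<Rightarrow> 'k \<Rightarrow> (nat \<Rightarrow> 'k fps) set" where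
  "horiz_s opn v r d f G b = {C. (\<forall>q\<ge>r * d. C q = 0) \<and>
     (\<exists>\<rho>>0. \<rho> \<le> 1 \<and> (\<forall>q<r * d. conv_ball v (C q) \<rho>) \<and>
        (\<forall>y. v (y - b) < \<rho> \<longrightarrow> (\<forall>m<r. \<forall>j<d.
           feval v (fps_deriv (C (m * d + j))) (y - b)
           + (\<Sum>l<r. \<Sum>i<d. feval v (Ds_mat opn v f d G m j l i) y * feval v (C (l * d + i)) (y - b))
           = 0)))}"

definition fam_basis :: "(nat \<Rightarrow> 'k::field fps) set \<Rightarrow> ('i \<Rightarrow> nat \<Rightarrow> 'k fps) \<Rightarrow> 'i set \<Rightarrow> bool" where
  "fam_basis S B I \<longleftrightarrow> finite I \<and> (\<forall>x\<in>I. B x \<in> S) \<and>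
     (\<forall>c. (\<forall>l. (\<Sum>x\<in>I. fps_const (c x) * B x l) = 0) \<longrightarrow> (\<forall>x\<in>I. c x = 0)) \<and>
     (\<forall>Y\<in>S. \<exists>c. \<forall>l. Y l = (\<Sum>x\<in>I. fps_const (c x) * B x l))"

definition fps_mat_inv :: "nat \<Rightarrow> (nat \<Rightarrow> nat \<Rightarrow> 'k::field fps) \<Rightarrow> nat \<Rightarrow> nat \<Rightarrow> 'k fps" where
  "fps_mat_inv d U = (SOME V.
     (\<forall>p<d. \<forall>q<d. (\<Sum>k<d. U p k * V k q) = (if p = q then 1 else 0)) \<and>
     (\<forall>p<d. \<forall>q<d. (\<Sum>k<d. V p k * U k q) = (if p = q then 1 else 0)))"

definition blockdiag :: "nat \<Rightarrow> nat \<Rightarrow> (nat \<Rightarrow> nat \<Rightarrow> 'k::field fps) \<Rightarrow> nat \<Rightarrow> nat \<Rightarrow> 'k fps" where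
  "blockdiag d r V = (\<lambda>p q. if p < r * d \<and> q < r * d \<and> p div d = q div d
     then V (p mod d) (q mod d) else 0)"

definition matvec :: "nat \<Rightarrow> (nat \<Rightarrow> nat \<Rightarrow> 'k::field fps) \<Rightarrow> (nat \<Rightarrow> 'k fps) \<Rightarrow> nat \<Rightarrow> 'k fps" where
  "matvec n A w = (\<lambda>p. \<Sum>q<n. A p q * w q)"

text \<open>w_{i,j}: entry l*d+i (0-based) is the l-th component of Y_{a_i,j}(u_{a_i}(s)).\<close>
definition wvec :: "nat \<Rightarrow> nat \<Rightarrow> (nat \<Rightarrow> nat \<Rightarrow> nat \<Rightarrow> 'k::field fps) \<Rightarrow> (nat \<Rightarrow> 'k fps)
    \<Rightarrow> (nat \<Rightarrow> 'k) \<Rightarrow> nat \<Rightarrow> nat \<Rightarrow> nat \<Rightarrow> 'k fps" where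
  "wvec d r Y u a i j = (\<lambda>q. if q < r * d \<and> q mod d = i
     then Y i j (q div d) oo (u i - fps_const (a i)) else 0)"

end

theory Submission
  imports Defs
begin

unbundle fps_syntax

definition null0 :: "(nat \<Rightarrow> real) \<Rightarrow> bool" where
  "null0 f \<longleftrightarrow> (\<forall>e>0. \<exists>N. \<forall>n\<ge>N. \<bar>f n\<bar> < e)"

lemma null0_LIMSEQ: "null0 f \<longleftrightarrow> f \<longlonglongrightarrow> 0"
  unfolding null0_def LIMSEQ_iff by simp

lemma null0_le: "null0 g \<Longrightarrow> (\<And>n. \<bar>f n\<bar> \<le> \<bar>g n\<bar>) \<Longrightarrow> null0 f"
  unfolding null0_def by (meson order.strict_trans1)

lemma null0_le_ev: "null0 g \<Longrightarrow> (\<And>n. n \<ge> M \<Longrightarrow> \<bar>f n\<bar> \<le> \<bar>g n\<bar>) \<Longrightarrow> null0 f"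
  unfolding null0_def
proof (intro allI impI)
  fix e :: real assume h: "\<forall>e>0. \<exists>N. \<forall>n\<ge>N. \<bar>g n\<bar> < e" "\<And>n. n \<ge> M \<Longrightarrow> \<bar>f n\<bar> \<le> \<bar>g n\<bar>" "e > 0"
  then obtain N where "\<forall>n\<ge>N. \<bar>g n\<bar> < e" by auto
  then have "\<forall>n\<ge>max N M. \<bar>f n\<bar> < e" using h(2) by (meson max.boundedE order.strict_trans1)
  then show "\<exists>N. \<forall>n\<ge>N. \<bar>f n\<bar> < e" by blast
qed

lemma null0_shift: "null0 f \<Longrightarrow> null0 (\<lambda>n. f (n + k))"
  unfolding null0_def by (meson le_add1 le_trans)

lemma null0_mult_const: "null0 f \<Longrightarrow> null0 (\<lambda>n. c * f n)"
  unfolding null0_LIMSEQ by (simp add: tendsto_mult_right_zero)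

lemma null0_max: "null0 f \<Longrightarrow> null0 g \<Longrightarrow> null0 (\<lambda>n. max \<bar>f n\<bar> \<bar>g n\<bar>)"
  unfolding null0_def
proof (intro allI impI)
  fix e :: real assume h: "\<forall>e>0. \<exists>N. \<forall>n\<ge>N. \<bar>f n\<bar> < e" "\<forall>e>0. \<exists>N. \<forall>n\<ge>N. \<bar>g n\<bar> < e" "e > 0"
  then obtain N1 N2 where "\<forall>n\<ge>N1. \<bar>f n\<bar> < e" "\<forall>n\<ge>N2. \<bar>g n\<bar> < e" by meson
  then have "\<forall>n\<ge>max N1 N2. \<bar>max \<bar>f n\<bar> \<bar>g n\<bar>\<bar> < e" by auto
  then show "\<exists>N. \<forall>n\<ge>N. \<bar>max \<bar>f n\<bar> \<bar>g n\<bar>\<bar> < e" by blast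
qed

lemma null0_bounded: "null0 f \<Longrightarrow> \<exists>B. \<forall>n. \<bar>f n\<bar> \<le> B"
proof -
  assume "null0 f"
  then obtain N where N: "\<forall>n\<ge>N. \<bar>f n\<bar> < 1" unfolding null0_def by (meson zero_less_one)
  define B where "B = max 1 (Max ((\<lambda>n. \<bar>f n\<bar>) ` {..N}))"
  have "\<bar>f n\<bar> \<le> B" for n
  proof (cases "n \<le> N")
    case True then show ?thesis unfolding B_def by (simp add: le_max_iff_disj)
  next
    case False then have "\<bar>f n\<bar> < 1" using N by simp
    then show ?thesis unfolding B_def by (simp add: le_max_iff_disj)
  qed
  then show ?thesis by blast
qed

locale nav =
  fixes v :: "'k::field_char_0 \<Rightarrow> real"
  assumes nonneg: "0 \<le> v x"
    and zero_iff: "v x = 0 \<longleftrightarrow> x = 0"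
    and vmult: "v (x * y) = v x * v y"
    and ultra: "v (x + y) \<le> max (v x) (v y)"
    and complete: "v_complete v"
    and small: "e > 0 \<Longrightarrow> \<exists>z. 0 < v z \<and> v z < e"
begin

lemma v0[simp]: "v 0 = 0" using zero_iff by simp

lemma v1[simp]: "v 1 = 1"
proof -
  have "v 1 = v 1 * v 1" using vmult[of 1 1] by simp
  moreover have "v 1 \<noteq> 0" using zero_iff by simp
  ultimately show ?thesis by (metis mult_cancel_left1)
qed

lemma vabs[simp]: "\<bar>v x\<bar> = v x" using nonneg by simp

lemma vpos: "x \<noteq> 0 \<Longrightarrow> v x > 0" using nonneg zero_iff by (metis less_eq_real_def)

lemma vminus1: "v (-1) = 1"
proof -
  have "v (-1) * v (-1) = 1" using vmult[of "-1" "-1"] by simp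
  then have "(v (-1) - 1) * (v (-1) + 1) = 0" by (simp add: algebra_simps)
  moreover have "v (-1) + 1 \<noteq> 0" using nonneg[of "-1"] by linarith
  ultimately show ?thesis by simp
qed

lemma vminus[simp]: "v (- x) = v x"
  using vmult[of "-1" x] vminus1 by simp

lemma vdiff_sym: "v (x - y) = v (y - x)"
  by (metis minus_diff_eq vminus)

lemma vpower: "v (x ^ n) = v x ^ n"
  by (induction n) (simp_all add: vmult)

lemma vinverse: "v (inverse x) = inverse (v x)"
proof (cases "x = 0")
  case False
  then have "v (inverse x) * v x = 1" using vmult[of "inverse x" x] by simp
  then show ?thesis by (metis inverse_unique mult.commute)
qed simp

lemma vdivide: "v (x / y) = v x / v y"
  by (simp add: divide_inverse vmult vinverse)

lemma ultra_le: "v x \<le> B \<Longrightarrow> v y \<le> B \<Longrightarrow> v (x + y) \<le> B"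
  using ultra[of x y] by simp

lemma ultra_lt: "v x < B \<Longrightarrow> v y < B \<Longrightarrow> v (x + y) < B"
  using ultra[of x y] by simp

lemma ultra_diff_le: "v x \<le> B \<Longrightarrow> v y \<le> B \<Longrightarrow> v (x - y) \<le> B"
  using ultra_le[of x B "-y"] by simp

lemma ultra_diff_lt: "v x < B \<Longrightarrow> v y < B \<Longrightarrow> v (x - y) < B"
  using ultra_lt[of x B "-y"] by simp

lemma vsum_le: "(\<And>i. i \<in> A \<Longrightarrow> v (f i) \<le> B) \<Longrightarrow> 0 \<le> B \<Longrightarrow> v (sum f A) \<le> B"
proof (induction A rule: infinite_finite_induct)
  case (insert x F) then show ?case by (simp add: ultra_le)
qed simp_all

lemma vsum_lt: "(\<And>i. i \<in> A \<Longrightarrow> v (f i) < B) \<Longrightarrow> 0 < B \<Longrightarrow> v (sum f A) < B"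
proof (induction A rule: infinite_finite_induct)
  case (insert x F) then show ?case by (simp add: ultra_lt)
qed simp_all

lemma v_of_nat: "v (of_nat n) \<le> 1"
  by (induction n) (simp_all add: ultra_le)

lemma v_of_nat_mult: "v (of_nat n * x) \<le> v x"
  using mult_left_le_one_le[OF nonneg[of x] nonneg[of "of_nat n"] v_of_nat[of n]] by (simp add: vmult)

lemma ultra_strict: "v y < v x \<Longrightarrow> v (x + y) = v x"
proof -
  assume a: "v y < v x"
  have "v (x + y) \<le> v x" using ultra[of x y] a by simp
  moreover have "v x \<le> max (v (x + y)) (v y)" using ultra[of "x + y" "-y"] by simp
  ultimately show ?thesis using a by auto
qed

lemma v_tri: "v (x - z) \<le> max (v (x - y)) (v (y - z))"
  using ultra[of "x - y" "y - z"] by simp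

definition vconv :: "(nat \<Rightarrow> 'k) \<Rightarrow> 'k \<Rightarrow> bool" where
  "vconv a y \<longleftrightarrow> null0 (\<lambda>N. v (sum a {..<N} - y))"

lemma vconv_unique: "vconv a y \<Longrightarrow> vconv a y' \<Longrightarrow> y = y'"
proof (rule ccontr)
  assume a: "vconv a y" "vconv a y'" "y \<noteq> y'"
  then have e: "v (y - y') > 0" using vpos by simp
  obtain N1 where N1: "\<forall>n\<ge>N1. v (sum a {..<n} - y) < v (y - y')"
    using a(1) e unfolding vconv_def null0_def by auto
  obtain N2 where N2: "\<forall>n\<ge>N2. v (sum a {..<n} - y') < v (y - y')"
    using a(2) e unfolding vconv_def null0_def by auto
  let ?n = "max N1 N2"
  have "v (y - y') \<le> max (v (y - sum a {..<?n})) (v (sum a {..<?n} - y'))" by (rule v_tri)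
  also have "\<dots> < v (y - y')" using N1 N2 by (simp add: vdiff_sym[of y])
  finally show False by simp
qed

lemma vconv_Cauchy:
  assumes "\<forall>e>0. \<exists>N. \<forall>m\<ge>N. \<forall>n\<ge>N. v (X m - X n) < e"
  shows "\<exists>L. null0 (\<lambda>n. v (X n - L))"
  using complete assms unfolding v_complete_def null0_LIMSEQ by blast

lemma vsum_diff_range: "(m::nat) \<le> n \<Longrightarrow> sum (a::nat\<Rightarrow>'a::ab_group_add) {..<n} - sum a {..<m} = sum a {m..<n}"
  using sum_diff_nat_ivl[of 0 m n a] by (simp add: atLeast0LessThan)

lemma vconv_exists:
  assumes "null0 (\<lambda>n. v (a n))"
  shows "\<exists>y. vconv a y"
proof -
  have "\<forall>e>0. \<exists>N. \<forall>m\<ge>N. \<forall>n\<ge>N. v (sum a {..<m} - sum a {..<n}) < e"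
  proof (intro allI impI)
    fix e :: real assume "e > 0"
    then obtain N where N: "\<forall>n\<ge>N. v (a n) < e" using assms unfolding null0_def by auto
    have "v (sum a {..<m} - sum a {..<n}) < e" if "m \<ge> N" "n \<ge> N" for m n
    proof (cases "n \<le> m")
      case True
      then have "v (sum a {..<m} - sum a {..<n}) = v (sum a {n..<m})" by (simp add: vsum_diff_range)
      also have "\<dots> < e" using N that \<open>e>0\<close> by (intro vsum_lt) auto
      finally show ?thesis .
    next
      case False
      then have "v (sum a {..<m} - sum a {..<n}) = v (sum a {m..<n})"
        by (subst vdiff_sym) (simp add: vsum_diff_range)
      also have "\<dots> < e" using N that \<open>e>0\<close> by (intro vsum_lt) auto
      finally show ?thesis .
    qed
    then show "\<exists>N. \<forall>m\<ge>N. \<forall>n\<ge>N. v (sum a {..<m} - sum a {..<n}) < e" by blast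
  qed
  then show ?thesis using vconv_Cauchy[of "\<lambda>n. sum a {..<n}"] unfolding vconv_def by blast
qed

lemma vconv_terms:
  assumes "vconv a y" shows "null0 (\<lambda>n. v (a n))"
  unfolding null0_def
proof (intro allI impI)
  fix e :: real assume "e > 0"
  then obtain N where N: "\<forall>n\<ge>N. v (sum a {..<n} - y) < e" using assms unfolding vconv_def null0_def by auto
  have "v (a n) < e" if "n \<ge> N" for n
  proof -
    have "a n = (sum a {..<Suc n} - y) - (sum a {..<n} - y)" by simp
    then have "v (a n) = v ((sum a {..<Suc n} - y) - (sum a {..<n} - y))" by simp
    also have "\<dots> < e"
    proof (rule ultra_diff_lt)
      show "v (sum a {..<Suc n} - y) < e" using that by (intro N[rule_format]) simp
      show "v (sum a {..<n} - y) < e" using that by (intro N[rule_format]) simp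
    qed
    finally show ?thesis .
  qed
  then show "\<exists>N. \<forall>n\<ge>N. \<bar>v (a n)\<bar> < e" by auto
qed

lemma vconv_iff_null: "(\<exists>y. vconv a y) \<longleftrightarrow> null0 (\<lambda>n. v (a n))"
  using vconv_exists vconv_terms by blast

lemma vconv_bound:
  assumes "vconv a y" "\<And>n. v (a n) \<le> B"
  shows "v y \<le> B"
proof (rule ccontr)
  assume "\<not> v y \<le> B"
  then have e: "v y - B > 0" by simp
  obtain N where N: "v (sum a {..<N} - y) < v y - B"
    using assms(1) e unfolding vconv_def null0_def by fastforce
  have B0: "0 \<le> B" using assms(2)[of 0] nonneg[of "a 0"] by linarith
  have "v (sum a {..<N}) \<le> B" using assms(2) B0 by (intro vsum_le) auto
  then have "v (sum a {..<N} - (sum a {..<N} - y)) \<le> max B (v (sum a {..<N} - y))"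
    by (rule_tac ultra_diff_le) auto
  then have "v y \<le> max B (v (sum a {..<N} - y))" by simp
  then show False using e B0 N by (auto simp: max_def split: if_splits)
qed

lemma vconv_add: "vconv a y \<Longrightarrow> vconv b z \<Longrightarrow> vconv (\<lambda>n. a n + b n) (y + z)"
  unfolding vconv_def null0_def
proof (intro allI impI)
  fix e :: real
  assume h: "\<forall>e>0. \<exists>N. \<forall>n\<ge>N. \<bar>v (sum a {..<n} - y)\<bar> < e" "\<forall>e>0. \<exists>N. \<forall>n\<ge>N. \<bar>v (sum b {..<n} - z)\<bar> < e" "e > 0"
  obtain N1 where N1: "\<forall>n\<ge>N1. v (sum a {..<n} - y) < e" using h(1) h(3) by auto
  obtain N2 where N2: "\<forall>n\<ge>N2. v (sum b {..<n} - z) < e" using h(2) h(3) by auto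
  note N = N1 N2
  have "v (sum (\<lambda>n. a n + b n) {..<n} - (y + z)) < e" if "n \<ge> max N1 N2" for n
  proof -
    have eq: "sum (\<lambda>n. a n + b n) {..<n} - (y + z) = (sum a {..<n} - y) + (sum b {..<n} - z)"
      by (simp add: sum.distrib)
    show ?thesis unfolding eq by (rule ultra_lt) (use N that in auto)
  qed
  then show "\<exists>N. \<forall>n\<ge>N. \<bar>v (sum (\<lambda>n. a n + b n) {..<n} - (y + z))\<bar> < e"
    by (intro exI[of _ "max N1 N2"]) simp
qed

lemma vconv_cmult: "vconv a y \<Longrightarrow> vconv (\<lambda>n. c * a n) (c * y)"
proof -
  assume "vconv a y"
  then have "null0 (\<lambda>N. v c * v (sum a {..<N} - y))" unfolding vconv_def by (rule null0_mult_const)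
  moreover have "v c * v (sum a {..<N} - y) = v (sum (\<lambda>n. c * a n) {..<N} - c * y)" for N
    by (simp add: vmult[symmetric] sum_distrib_left right_diff_distrib)
  ultimately show ?thesis unfolding vconv_def by simp
qed

lemma vconv_minus: "vconv a y \<Longrightarrow> vconv (\<lambda>n. - a n) (- y)"
  using vconv_cmult[of a y "-1"] by simp

lemma vconv_diff: "vconv a y \<Longrightarrow> vconv b z \<Longrightarrow> vconv (\<lambda>n. a n - b n) (y - z)"
  using vconv_add[of a y "\<lambda>n. - b n" "-z"] vconv_minus[of b z] by simp

lemma vconv_cong: "vconv a y \<Longrightarrow> (\<And>n. a n = b n) \<Longrightarrow> vconv b y"
  by (metis ext)

lemma vconv_finite:
  assumes "\<And>n. n \<ge> N \<Longrightarrow> a n = 0"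
  shows "vconv a (sum a {..<N})"
  unfolding vconv_def null0_def
proof (intro allI impI)
  fix e :: real assume "e > 0"
  show "\<exists>N'. \<forall>n\<ge>N'. \<bar>v (sum a {..<n} - sum a {..<N})\<bar> < e"
  proof (rule exI[of _ N], intro allI impI)
    fix n assume "n \<ge> N"
    then have "sum a {..<n} - sum a {..<N} = sum a {N..<n}" by (simp add: vsum_diff_range)
    also have "\<dots> = 0" using assms by (intro sum.neutral) auto
    finally show "\<bar>v (sum a {..<n} - sum a {..<N})\<bar> < e" using \<open>e>0\<close> by simp
  qed
qed

lemma vconv_zero: "vconv (\<lambda>n. 0) 0"
  using vconv_finite[of 0 "\<lambda>n. 0"] by simp

lemma vconv_sum:
  "finite I \<Longrightarrow> (\<And>i. i \<in> I \<Longrightarrow> vconv (a i) (y i)) \<Longrightarrow> vconv (\<lambda>n. \<Sum>i\<in>I. a i n) (\<Sum>i\<in>I. y i)"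
proof (induction I rule: finite_induct)
  case empty then show ?case by (simp add: vconv_zero)
next
  case (insert x F) then show ?case by (simp add: vconv_add)
qed

lemma vconv_shift:
  assumes "vconv a y" shows "vconv (\<lambda>n. a (n + k)) (y - sum a {..<k})"
proof -
  have eq: "sum (\<lambda>n. a (n + k)) {..<N} - (y - sum a {..<k}) = sum a {..<N + k} - y" for N
  proof -
    have "sum (\<lambda>n. a (n + k)) {..<N} = sum a {k..<N+k}"
      by (metis add.commute atLeast0LessThan sum.shift_bounds_nat_ivl add_0)
    moreover have "sum a {..<N+k} = sum a {..<k} + sum a {k..<N+k}"
      using vsum_diff_range[of k "N+k" a] by (metis diff_add_cancel add.commute le_add2)
    ultimately show ?thesis by simp
  qed
  show ?thesis using null0_shift[OF assms[unfolded vconv_def], of k] unfolding vconv_def eq .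
qed

lemma vconv_unshift:
  assumes "vconv (\<lambda>n. a (n + k)) z" shows "vconv a (z + sum a {..<k})"
proof -
  have eq: "sum a {..<N + k} - (z + sum a {..<k}) = sum (\<lambda>n. a (n + k)) {..<N} - z" for N
  proof -
    have "sum (\<lambda>n. a (n + k)) {..<N} = sum a {k..<N+k}"
      by (metis add.commute atLeast0LessThan sum.shift_bounds_nat_ivl add_0)
    moreover have "sum a {..<N+k} = sum a {..<k} + sum a {k..<N+k}"
      using vsum_diff_range[of k "N+k" a] by (metis diff_add_cancel add.commute le_add2)
    ultimately show ?thesis by simp
  qed
  have "null0 (\<lambda>N. v (sum a {..<N + k} - (z + sum a {..<k})))"
    using assms unfolding vconv_def eq .
  then show ?thesis unfolding vconv_def null0_def
  proof (intro allI impI)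
    fix e :: real assume h: "\<forall>e>0. \<exists>N. \<forall>n\<ge>N. \<bar>v (sum a {..<n + k} - (z + sum a {..<k}))\<bar> < e" "e > 0"
    then obtain N where N: "\<forall>n\<ge>N. \<bar>v (sum a {..<n + k} - (z + sum a {..<k}))\<bar> < e" by auto
    have "\<bar>v (sum a {..<n} - (z + sum a {..<k}))\<bar> < e" if "n \<ge> N + k" for n
      using N[rule_format, of "n - k"] that by simp
    then show "\<exists>N. \<forall>n\<ge>N. \<bar>v (sum a {..<n} - (z + sum a {..<k}))\<bar> < e" by blast
  qed
qed

lemma vconv_bound_tail:
  assumes "vconv a y" "\<And>n. n \<ge> k \<Longrightarrow> v (a n) \<le> B" "0 \<le> B"
  shows "v (y - sum a {..<k}) \<le> B"
  using vconv_bound[OF vconv_shift[OF assms(1), of k]] assms(2,3) by simp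

end


context nav
begin

lemma vfubini:
  assumes dec: "\<forall>e>0. \<exists>N. \<forall>n m. (N \<le> n \<or> N \<le> m) \<longrightarrow> v (a n m) < e"
    and rows: "\<And>n. vconv (a n) (R n)" and cols: "\<And>m. vconv (\<lambda>n. a n m) (C m)"
  shows "\<exists>Y. vconv R Y \<and> vconv C Y"
proof -
  have Rb: "\<exists>N. \<forall>n\<ge>N. v (R n) \<le> e" if "e > 0" for e
  proof -
    obtain N where N: "\<forall>n m. (N \<le> n \<or> N \<le> m) \<longrightarrow> v (a n m) < e" using dec \<open>e>0\<close> by blast
    have "v (R n) \<le> e" if "n \<ge> N" for n
      using vconv_bound[OF rows[of n], of e] N that by (simp add: less_imp_le)
    then show ?thesis by blast
  qed
  have Cb: "\<exists>N. \<forall>m\<ge>N. v (C m) \<le> e" if "e > 0" for e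
  proof -
    obtain N where N: "\<forall>n m. (N \<le> n \<or> N \<le> m) \<longrightarrow> v (a n m) < e" using dec \<open>e>0\<close> by blast
    have "v (C m) \<le> e" if "m \<ge> N" for m
      using vconv_bound[OF cols[of m], of e] N that by (simp add: less_imp_le)
    then show ?thesis by blast
  qed
  have "null0 (\<lambda>n. v (R n))" unfolding null0_def
  proof (intro allI impI)
    fix e :: real assume "e > 0"
    then obtain N where "\<forall>n\<ge>N. v (R n) \<le> e/2" using Rb[of "e/2"] by auto
    then show "\<exists>N. \<forall>n\<ge>N. \<bar>v (R n)\<bar> < e" using \<open>e>0\<close> by (intro exI[of _ N]) force
  qed
  then obtain Y where Y: "vconv R Y" using vconv_exists by blast
  have "null0 (\<lambda>n. v (C n))" unfolding null0_def
  proof (intro allI impI)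
    fix e :: real assume "e > 0"
    then obtain N where "\<forall>n\<ge>N. v (C n) \<le> e/2" using Cb[of "e/2"] by auto
    then show "\<exists>N. \<forall>n\<ge>N. \<bar>v (C n)\<bar> < e" using \<open>e>0\<close> by (intro exI[of _ N]) force
  qed
  then obtain Y' where Y': "vconv C Y'" using vconv_exists by blast
  have "Y = Y'"
  proof (rule ccontr)
    assume ne: "Y \<noteq> Y'"
    define e2 where "e2 = v (Y - Y') / 2"
    have e2: "e2 > 0" using ne vpos unfolding e2_def by simp
    obtain N where N: "\<forall>n m. (N \<le> n \<or> N \<le> m) \<longrightarrow> v (a n m) < e2" using dec e2 by blast
    obtain N1 where N1: "\<forall>n\<ge>N1. v (R n) \<le> e2" using Rb e2 by blast
    obtain N2 where N2: "\<forall>n\<ge>N2. v (C n) \<le> e2" using Cb e2 by blast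
    define K where "K = max N (max N1 N2)"
    define t where "t n = R n - sum (a n) {..<K}" for n
    define s where "s m = C m - (\<Sum>n<K. a n m)" for m
    define T1 where "T1 = Y - sum R {..<K}"
    define T2 where "T2 = Y' - sum C {..<K}"
    have t: "v (t n) \<le> e2" for n unfolding t_def
      using N e2 by (intro vconv_bound_tail[OF rows[of n]]) (auto simp: K_def less_imp_le)
    have s: "v (s m) \<le> e2" for m unfolding s_def
      using N e2 by (intro vconv_bound_tail[OF cols[of m]]) (auto simp: K_def less_imp_le)
    have T1: "v T1 \<le> e2" unfolding T1_def
      using N1 e2 by (intro vconv_bound_tail[OF Y]) (auto simp: K_def)
    have T2: "v T2 \<le> e2" unfolding T2_def
      using N2 e2 by (intro vconv_bound_tail[OF Y']) (auto simp: K_def)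
    have swap: "(\<Sum>n<K. \<Sum>m<K. a n m) = (\<Sum>m<K. \<Sum>n<K. a n m)" by (rule sum.swap)
    have "Y - Y' = (T1 - T2) + (sum t {..<K} - sum s {..<K})"
      unfolding T1_def T2_def t_def s_def sum_subtractf swap by simp
    moreover have "v ((T1 - T2) + (sum t {..<K} - sum s {..<K})) \<le> e2"
      using T1 T2 t s e2 by (intro ultra_le ultra_diff_le vsum_le) auto
    ultimately have "v (Y - Y') \<le> e2" by simp
    then show False using e2 unfolding e2_def by simp
  qed
  then show ?thesis using Y Y' by blast
qed

lemma vconv_cauchy:
  assumes x: "vconv x X" and y: "vconv y Yv"
  shows "vconv (\<lambda>n. \<Sum>k\<le>n. x k * y (n - k)) (X * Yv)"
proof -
  define a where "a k n = (if k \<le> n then x k * y (n - k) else 0)" for k n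
  have nx: "null0 (\<lambda>n. v (x n))" and ny: "null0 (\<lambda>n. v (y n))" using vconv_terms x y by auto
  obtain Bx where Bx: "\<forall>n. v (x n) \<le> Bx" using null0_bounded[OF nx] by auto
  obtain By where By: "\<forall>n. v (y n) \<le> By" using null0_bounded[OF ny] by auto
  have Bx0: "Bx \<ge> 0" using Bx nonneg[of "x 0"] by (meson order.trans)
  have By0: "By \<ge> 0" using By nonneg[of "y 0"] by (meson order.trans)
  have rows: "vconv (a k) (x k * Yv)" for k
  proof -
    have "vconv (\<lambda>n. a k (n + k)) (x k * Yv)"
      using vconv_cmult[OF y, of "x k"] unfolding a_def by simp
    from vconv_unshift[OF this] show ?thesis unfolding a_def by simp
  qed
  have cols: "vconv (\<lambda>k. a k n) (\<Sum>k\<le>n. x k * y (n - k))" for n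
  proof -
    have "vconv (\<lambda>k. a k n) (sum (\<lambda>k. a k n) {..<Suc n})"
      by (rule vconv_finite) (simp add: a_def)
    moreover have "sum (\<lambda>k. a k n) {..<Suc n} = (\<Sum>k\<le>n. x k * y (n - k))"
      unfolding lessThan_Suc_atMost a_def by simp
    ultimately show ?thesis by simp
  qed
  have dec: "\<forall>e>0. \<exists>N. \<forall>n m. (N \<le> n \<or> N \<le> m) \<longrightarrow> v (a n m) < e"
  proof (intro allI impI)
    fix e :: real assume e: "e > 0"
    obtain N1 where N1: "\<forall>n\<ge>N1. v (x n) < e / (By + 1)"
      using nx e By0 unfolding null0_def by (metis vabs divide_pos_pos add_nonneg_pos zero_less_one)
    obtain N2 where N2: "\<forall>n\<ge>N2. v (y n) < e / (Bx + 1)"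
      using ny e Bx0 unfolding null0_def by (metis vabs divide_pos_pos add_nonneg_pos zero_less_one)
    have "v (a n m) < e" if "N1 + N2 \<le> n \<or> N1 + N2 \<le> m" for n m
    proof (cases "n \<le> m")
      case False then show ?thesis using e by (simp add: a_def)
    next
      case True
      then have va: "v (a n m) = v (x n) * v (y (m - n))" by (simp add: a_def vmult)
      show ?thesis
      proof (cases "n \<ge> N1")
        case True
        have "v (x n) * v (y (m - n)) \<le> v (x n) * By" using By nonneg by (simp add: mult_left_mono)
        also have "\<dots> \<le> v (x n) * (By + 1)" using nonneg[of "x n"] by (simp add: mult_left_mono)
        also have "\<dots> < e" using N1 True By0 by (simp add: pos_less_divide_eq)
        finally show ?thesis using va by simp
      next
        case False
        then have "m - n \<ge> N2" using that \<open>n \<le> m\<close> by linarith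
        have "v (x n) * v (y (m - n)) \<le> Bx * v (y (m - n))" using Bx nonneg by (simp add: mult_right_mono)
        also have "\<dots> \<le> (Bx + 1) * v (y (m - n))" using nonneg[of "y (m-n)"] by (simp add: mult_right_mono)
        also have "\<dots> < e" using N2 \<open>m - n \<ge> N2\<close> Bx0 by (simp add: pos_less_divide_eq mult.commute)
        finally show ?thesis using va by simp
      qed
    qed
    then show "\<exists>N. \<forall>n m. (N \<le> n \<or> N \<le> m) \<longrightarrow> v (a n m) < e" by blast
  qed
  obtain Z where Z: "vconv (\<lambda>k. x k * Yv) Z" "vconv (\<lambda>n. \<Sum>k\<le>n. x k * y (n - k)) Z"
    using vfubini[OF dec rows cols] by blast
  have "vconv (\<lambda>k. x k * Yv) (X * Yv)" using vconv_cmult[OF x, of Yv] by (simp add: mult.commute)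
  then have "Z = X * Yv" using Z(1) vconv_unique by blast
  then show ?thesis using Z(2) by simp
qed

definition tz :: "'k fps \<Rightarrow> 'k \<Rightarrow> bool" where
  "tz c z \<longleftrightarrow> null0 (\<lambda>n. v (c $ n * z ^ n))"

abbreviation E :: "'k fps \<Rightarrow> 'k \<Rightarrow> 'k" where
  "E \<equiv> feval v"

lemma psum_iff: "psum v c z y \<longleftrightarrow> vconv (\<lambda>n. c $ n * z ^ n) y"
  unfolding psum_def vconv_def null0_LIMSEQ by simp

lemma tz_iff: "tz c z \<longleftrightarrow> (\<exists>y. psum v c z y)"
  unfolding psum_iff tz_def vconv_iff_null by simp

lemma E_eq: "vconv (\<lambda>n. c $ n * z ^ n) y \<Longrightarrow> E c z = y"
  unfolding feval_def psum_iff using vconv_unique by blast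

lemma E_conv: "tz c z \<Longrightarrow> vconv (\<lambda>n. c $ n * z ^ n) (E c z)"
  using E_eq tz_iff psum_iff by metis

lemma conv_ball_iff: "conv_ball v c \<rho> \<longleftrightarrow> (\<forall>z. v z < \<rho> \<longrightarrow> tz c z)"
  unfolding conv_ball_def tz_iff by simp

lemma tz_0pt: "tz c 0"
  unfolding tz_def by (rule null0_le_ev[of "\<lambda>n. 0" 1]) (auto simp: null0_def Suc_le_eq zero_power)

lemma E_0pt: "E c 0 = c $ 0"
proof -
  have "vconv (\<lambda>n. c $ n * 0 ^ n) (sum (\<lambda>n. c $ n * 0 ^ n) {..<1})"
    by (rule vconv_finite) simp
  then show ?thesis using E_eq by simp
qed

lemma tz_mono: "tz c z \<Longrightarrow> v w \<le> v z \<Longrightarrow> tz c w"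
  unfolding tz_def
  by (erule null0_le) (simp add: vmult vpower mult_left_mono power_mono nonneg)

lemma tz_add: "tz c z \<Longrightarrow> tz d z \<Longrightarrow> tz (c + d) z"
  unfolding tz_def
proof -
  assume "null0 (\<lambda>n. v (c $ n * z ^ n))" "null0 (\<lambda>n. v (d $ n * z ^ n))"
  from null0_max[OF this] show "null0 (\<lambda>n. v ((c + d) $ n * z ^ n))"
    by (rule null0_le) (simp add: distrib_right, meson abs_ge_self order_trans ultra)
qed

lemma tz_cmult: "tz c z \<Longrightarrow> tz (fps_const a * c) z"
  unfolding tz_def by (drule null0_mult_const[of _ "v a"]) (simp add: vmult mult.assoc)

lemma tz_minus: "tz c z \<Longrightarrow> tz (- c) z"
  unfolding tz_def by simp

lemma tz_diff: "tz c z \<Longrightarrow> tz d z \<Longrightarrow> tz (c - d) z"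
  using tz_add[of c z "- d"] tz_minus[of d z] by simp

lemma tz_finite: "(\<And>n. n \<ge> N \<Longrightarrow> c $ n = 0) \<Longrightarrow> tz c z"
  unfolding tz_def by (rule null0_le_ev[of "\<lambda>n. 0" N]) (auto simp: null0_def)

lemma tz_const: "tz (fps_const a) z"
  by (rule tz_finite[of 1]) simp

lemma tz_X: "tz fps_X z"
  by (rule tz_finite[of 2]) (simp add: fps_X_def)

lemma tz_0: "tz 0 z" and tz_1: "tz 1 z"
  using tz_const[of 0 z] tz_const[of 1 z] by simp_all

lemma mult_terms:
  "(c * d) $ n * z ^ n = (\<Sum>k\<le>n. (c $ k * z ^ k) * (d $ (n - k) * (z::'k) ^ (n - k)))"
proof -
  have "(c * d) $ n * z ^ n = (\<Sum>k\<le>n. c $ k * d $ (n - k) * z ^ n)"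
    unfolding fps_mult_nth atLeast0AtMost by (rule sum_distrib_right)
  also have "\<dots> = (\<Sum>k\<le>n. (c $ k * z ^ k) * (d $ (n - k) * z ^ (n - k)))"
  proof (rule sum.cong)
    fix k assume "k \<in> {..n}"
    then have "z ^ n = z ^ k * z ^ (n - k)" by (simp add: power_add[symmetric])
    then show "c $ k * d $ (n - k) * z ^ n = (c $ k * z ^ k) * (d $ (n - k) * z ^ (n - k))"
      by (simp add: algebra_simps)
  qed simp
  finally show ?thesis .
qed

lemma E_mult_conv: "tz c z \<Longrightarrow> tz d z \<Longrightarrow> vconv (\<lambda>n. (c * d) $ n * z ^ n) (E c z * E d z)"
  unfolding mult_terms by (rule vconv_cauchy) (simp_all add: E_conv)

lemma tz_mult: "tz c z \<Longrightarrow> tz d z \<Longrightarrow> tz (c * d) z"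
proof -
  assume "tz c z" "tz d z"
  from vconv_terms[OF E_mult_conv[OF this]] show ?thesis by (simp add: tz_def)
qed

lemma E_mult: "tz c z \<Longrightarrow> tz d z \<Longrightarrow> E (c * d) z = E c z * E d z"
  using E_mult_conv E_eq by blast

lemma E_add: "tz c z \<Longrightarrow> tz d z \<Longrightarrow> E (c + d) z = E c z + E d z"
  using vconv_add[OF E_conv E_conv] E_eq by (simp add: distrib_right)

lemma E_minus: "tz c z \<Longrightarrow> E (- c) z = - E c z"
  using vconv_minus[OF E_conv] E_eq by simp

lemma E_diff: "tz c z \<Longrightarrow> tz d z \<Longrightarrow> E (c - d) z = E c z - E d z"
  using E_add[of c z "- d"] E_minus[of d z] tz_minus[of d z] by simp

lemma E_cmult: "tz c z \<Longrightarrow> E (fps_const a * c) z = a * E c z"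
  using vconv_cmult[OF E_conv, of c z a] E_eq by (simp add: mult.assoc)

lemma E_finite: "(\<And>n. n \<ge> N \<Longrightarrow> c $ n = 0) \<Longrightarrow> E c z = (\<Sum>n<N. c $ n * z ^ n)"
  using vconv_finite[of N "\<lambda>n. c $ n * z ^ n"] E_eq by simp

lemma E_const: "E (fps_const a) z = a"
  using E_finite[of 1 "fps_const a" z] by simp

lemma E_X: "E fps_X z = z"
  using E_finite[of 2 fps_X z] by (simp add: fps_X_def numeral_2_eq_2)

lemma E_0: "E 0 z = 0" and E_1: "E 1 z = 1"
  using E_const[of 0 z] E_const[of 1 z] by simp_all

lemma tz_power: "tz c z \<Longrightarrow> tz (c ^ n) z"
  by (induction n) (simp_all add: tz_1 tz_mult)

lemma E_power: "tz c z \<Longrightarrow> E (c ^ n) z = E c z ^ n"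
  by (induction n) (simp_all add: E_1 E_mult tz_power)

lemma tz_sum: "(\<And>i. i \<in> I \<Longrightarrow> tz (f i) z) \<Longrightarrow> tz (\<Sum>i\<in>I. f i) z"
  by (induction I rule: infinite_finite_induct) (simp_all add: tz_0 tz_add)

lemma E_sum: "(\<And>i. i \<in> I \<Longrightarrow> tz (f i) z) \<Longrightarrow> E (\<Sum>i\<in>I. f i) z = (\<Sum>i\<in>I. E (f i) z)"
  by (induction I rule: infinite_finite_induct) (simp_all add: E_0 E_add tz_sum)

lemma tz_deriv: "tz c z \<Longrightarrow> tz (fps_deriv c) z"
proof (cases "z = 0")
  case True then show ?thesis by (simp add: tz_0pt)
next
  case False
  assume "tz c z"
  then have "null0 (\<lambda>n. v (c $ (n + 1) * z ^ (n + 1)))" unfolding tz_def by (rule null0_shift)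
  then have "null0 (\<lambda>n. inverse (v z) * v (c $ (n + 1) * z ^ (n + 1)))" by (rule null0_mult_const)
  then show ?thesis unfolding tz_def
  proof (rule null0_le)
    fix n
    have "v (fps_deriv c $ n * z ^ n) = v (of_nat (Suc n)) * v (c $ (n + 1)) * v z ^ n"
      by (simp add: vmult vpower)
    also have "\<dots> \<le> v (c $ (n + 1)) * v z ^ n"
      using mult_left_le_one_le[OF mult_nonneg_nonneg[OF nonneg[of "c $ (n+1)"] zero_le_power[OF nonneg[of z]]] nonneg[of "of_nat (Suc n)"] v_of_nat[of "Suc n"]]
      by (simp add: mult.assoc)
    also have "\<dots> = inverse (v z) * v (c $ (n + 1) * z ^ (n + 1))"
      using vpos[OF False] by (simp add: vmult vpower field_simps)
    finally show "\<bar>v (fps_deriv c $ n * z ^ n)\<bar> \<le> \<bar>inverse (v z) * v (c $ (n + 1) * z ^ (n + 1))\<bar>"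
      using nonneg vpos[OF False] by simp
  qed
qed

end


context nav
begin

section \<open>Identity theorem\<close>

lemma ident_zero:
  assumes rho: "\<rho> > 0" and tzc: "\<And>z. v z < \<rho> \<Longrightarrow> tz c z" and E0: "\<And>z. v z < \<rho> \<Longrightarrow> E c z = 0"
  shows "c = 0"
proof (rule ccontr)
  assume cne: "c \<noteq> 0"
  define n where "n = subdegree c"
  have cn: "c $ n \<noteq> 0" using cne unfolding n_def by simp
  have cl: "\<And>k. k < n \<Longrightarrow> c $ k = 0" unfolding n_def by auto
  obtain z0 where z0: "0 < v z0" "v z0 < \<rho>" using small rho by blast
  have z0ne: "z0 \<noteq> 0" using z0 by auto
  have "null0 (\<lambda>k. v (c $ k * z0 ^ k))" using tzc[OF z0(2)] unfolding tz_def .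
  then obtain M where M: "\<And>k. v (c $ k * z0 ^ k) \<le> M" using null0_bounded by fastforce
  define A where "A = v (c $ n * z0 ^ n)"
  have A: "A > 0" unfolding A_def using cn z0ne by (simp add: vpos)
  have MA: "M \<ge> A" using M[of n] unfolding A_def .
  then have M0: "M > 0" using A by simp
  obtain w where w: "0 < v w" "v w < min 1 (A / M)" using small[of "min 1 (A / M)"] A M0 by auto
  define z where "z = z0 * w"
  have vz: "v z < \<rho>"
  proof -
    have "v z0 * v w < v z0 * 1" using z0 w by (intro mult_strict_left_mono) auto
    moreover have "v (z0 * w) = v z0 * v w" by (rule vmult)
    ultimately show ?thesis using z0(2) by (simp only: z_def)
  qed
  have conv: "vconv (\<lambda>k. c $ k * z ^ k) (E c z)" by (rule E_conv[OF tzc[OF vz]])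
  have vw1: "v w \<le> 1" using w by simp
  have tail: "v (E c z - sum (\<lambda>k. c $ k * z ^ k) {..<Suc n}) \<le> M * v w ^ Suc n"
  proof (rule vconv_bound_tail[OF conv])
    fix k assume k: "Suc n \<le> k"
    have "v (c $ k * z ^ k) = v (c $ k * z0 ^ k) * v w ^ k"
      unfolding z_def by (simp add: vmult vpower power_mult_distrib)
    also have "\<dots> \<le> M * v w ^ k" using M[of k] nonneg by (simp add: mult_right_mono)
    also have "\<dots> \<le> M * v w ^ Suc n"
      using M0 w vw1 k by (intro mult_left_mono power_decreasing) auto
    finally show "v (c $ k * z ^ k) \<le> M * v w ^ Suc n" .
  next
    show "0 \<le> M * v w ^ Suc n" using M0 nonneg by simp
  qed
  have head: "sum (\<lambda>k. c $ k * z ^ k) {..<Suc n} = c $ n * z ^ n"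
    using cl by (simp add: sum.neutral)
  have vhead: "v (c $ n * z ^ n) = A * v w ^ n"
    unfolding A_def z_def by (simp add: vmult vpower power_mult_distrib)
  have "M * v w < A" using w M0 by (simp add: pos_less_divide_eq mult.commute)
  then have "M * v w * v w ^ n < A * v w ^ n" using w by simp
  then have lt: "v (E c z - c $ n * z ^ n) < v (c $ n * z ^ n)"
    using tail head vhead by (simp add: mult.assoc mult.commute)
  have "E c z = c $ n * z ^ n + (E c z - c $ n * z ^ n)" by simp
  then have "v (E c z) = v (c $ n * z ^ n)" using ultra_strict[OF lt] by simp
  also have "\<dots> > 0" using vhead A w by simp
  finally show False using E0[OF vz] by simp
qed

lemma ident_eq:
  assumes "\<rho> > 0" "\<And>z. v z < \<rho> \<Longrightarrow> tz c z" "\<And>z. v z < \<rho> \<Longrightarrow> tz d z"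
    "\<And>z. v z < \<rho> \<Longrightarrow> E c z = E d z"
  shows "c = d"
proof -
  have "c - d = 0"
    by (rule ident_zero[OF assms(1)]) (simp_all add: tz_diff E_diff assms(2-4))
  then show ?thesis by simp
qed

section \<open>Composition\<close>

lemma power_nth_zero: "g $ 0 = 0 \<Longrightarrow> m < n \<Longrightarrow> (g ^ n) $ m = (0::'k)"
proof (induction n arbitrary: m)
  case 0 then show ?case by simp
next
  case (Suc n)
  have "(g ^ Suc n) $ m = (\<Sum>i=0..m. g $ i * (g ^ n) $ (m - i))" by (simp add: fps_mult_nth)
  also have "\<dots> = 0"
  proof (rule sum.neutral, intro ballI)
    fix i assume im: "i \<in> {0..m}"
    show "g $ i * (g ^ n) $ (m - i) = 0"
    proof (cases "i = 0")
      case True then show ?thesis using Suc.prems by simp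
    next
      case False
      then have "m - i < n" using Suc.prems(2) im by auto
      then show ?thesis using Suc.IH[of "m - i", OF Suc.prems(1)] by simp
    qed
  qed
  finally show ?case .
qed

lemma pow_bound:
  assumes "\<And>k. v (g $ k * z ^ k) \<le> W" "0 \<le> W"
  shows "v ((g ^ n) $ m * z ^ m) \<le> W ^ n"
proof (induction n arbitrary: m)
  case 0 then show ?case by (cases m) simp_all
next
  case (Suc n)
  have "v ((g ^ Suc n) $ m * z ^ m) = v (\<Sum>k\<le>m. (g $ k * z ^ k) * ((g ^ n) $ (m - k) * z ^ (m - k)))"
    by (simp only: power_Suc mult_terms)
  also have "\<dots> \<le> W ^ Suc n"
  proof (rule vsum_le)
    fix k
    have "v ((g $ k * z ^ k) * ((g ^ n) $ (m - k) * z ^ (m - k))) \<le> W * W ^ n"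
      using mult_mono[OF assms(1)[of k] Suc.IH[of "m-k"] assms(2) nonneg] by (simp only: vmult)
    then show "v ((g $ k * z ^ k) * ((g ^ n) $ (m - k) * z ^ (m - k))) \<le> W ^ Suc n" by simp
  qed (simp add: assms)
  finally show ?case .
qed

lemma finite_null0:
  "(\<And>n. n < (K::nat) \<Longrightarrow> null0 (f n)) \<Longrightarrow> e > 0 \<Longrightarrow> \<exists>N. \<forall>n<K. \<forall>m\<ge>N. \<bar>f n m\<bar> < e"
proof (induction K)
  case 0 then show ?case by simp
next
  case (Suc K)
  then obtain N1 where N1: "\<forall>n<K. \<forall>m\<ge>N1. \<bar>f n m\<bar> < e" by auto
  obtain N2 where N2: "\<forall>m\<ge>N2. \<bar>f K m\<bar> < e" using Suc.prems(1)[of K] Suc.prems(2) unfolding null0_def by auto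
  have "\<forall>n<Suc K. \<forall>m\<ge>max N1 N2. \<bar>f n m\<bar> < e"
    using N1 N2 by (auto simp: less_Suc_eq)
  then show ?case by blast
qed

lemma comp_point:
  assumes g0: "g $ 0 = 0" and tg: "tz g z" and tc: "tz c w" and gw: "\<And>k. v (g $ k * z ^ k) \<le> v w"
  shows "tz (c oo g) z \<and> E (c oo g) z = E c (E g z)"
proof -
  define a where "a n m = c $ n * ((g ^ n) $ m * z ^ m)" for n m
  have rows: "vconv (a n) (c $ n * E g z ^ n)" for n
    using vconv_cmult[OF E_conv[OF tz_power[OF tg, of n]], of "c $ n"] E_power[OF tg, of n]
    unfolding a_def by simp
  have cols: "vconv (\<lambda>n. a n m) ((c oo g) $ m * z ^ m)" for m
  proof -
    have "vconv (\<lambda>n. a n m) (sum (\<lambda>n. a n m) {..<Suc m})"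
      by (rule vconv_finite) (simp add: a_def power_nth_zero[OF g0])
    moreover have "sum (\<lambda>n. a n m) {..<Suc m} = (c oo g) $ m * z ^ m"
      unfolding a_def fps_compose_nth lessThan_Suc_atMost atLeast0AtMost sum_distrib_right
      by (simp add: mult.assoc)
    ultimately show ?thesis by simp
  qed
  have W0: "0 \<le> v w" by (rule nonneg)
  have dec: "\<forall>e>0. \<exists>N. \<forall>n m. (N \<le> n \<or> N \<le> m) \<longrightarrow> v (a n m) < e"
  proof (intro allI impI)
    fix e :: real assume e: "e > 0"
    obtain N1 where N1: "\<forall>n\<ge>N1. v (c $ n * w ^ n) < e" using tc e unfolding tz_def null0_def by auto
    have "null0 (\<lambda>m. v (c $ n) * v ((g ^ n) $ m * z ^ m))" for n
      using tz_power[OF tg, of n] unfolding tz_def by (rule null0_mult_const)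
    then obtain N2 where N2: "\<forall>n<N1. \<forall>m\<ge>N2. \<bar>v (c $ n) * v ((g ^ n) $ m * z ^ m)\<bar> < e"
      using finite_null0[of N1 "\<lambda>n m. v (c $ n) * v ((g ^ n) $ m * z ^ m)" e] e by blast
    have "v (a n m) < e" if "max N1 N2 \<le> n \<or> max N1 N2 \<le> m" for n m
    proof (cases "n \<ge> N1")
      case True
      have "v (a n m) = v (c $ n) * v ((g ^ n) $ m * z ^ m)" unfolding a_def by (simp add: vmult)
      also have "\<dots> \<le> v (c $ n) * v w ^ n" using pow_bound[OF gw W0] by (simp add: mult_left_mono nonneg)
      also have "\<dots> < e" using N1 True by (simp add: vmult vpower)
      finally show ?thesis .
    next
      case False
      then have "m \<ge> N2" using that by auto
      have "n < N1" using False by simp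
      then show ?thesis using N2 \<open>m \<ge> N2\<close> unfolding a_def by (simp add: vmult abs_mult)
    qed
    then show "\<exists>N. \<forall>n m. (N \<le> n \<or> N \<le> m) \<longrightarrow> v (a n m) < e" by blast
  qed
  obtain Y where Y: "vconv (\<lambda>n. c $ n * E g z ^ n) Y" "vconv (\<lambda>m. (c oo g) $ m * z ^ m) Y"
    using vfubini[OF dec rows cols] by blast
  have "E c (E g z) = Y" using E_eq[OF Y(1)] .
  moreover have "E (c oo g) z = Y" using E_eq[OF Y(2)] .
  moreover have "tz (c oo g) z" using vconv_terms[OF Y(2)] unfolding tz_def .
  ultimately show ?thesis by simp
qed

lemma comp_ball:
  assumes g0: "g $ 0 = 0" and rg: "\<rho>g > 0" and tg: "\<And>z. v z < \<rho>g \<Longrightarrow> tz g z"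
    and rc: "\<rho>c > 0" and tc: "\<And>w. v w < \<rho>c \<Longrightarrow> tz c w"
  shows "\<exists>\<rho>>0. \<forall>z. v z < \<rho> \<longrightarrow> tz (c oo g) z \<and> E (c oo g) z = E c (E g z) \<and> v (E g z) < \<rho>c"
proof -
  obtain z0 where z0: "0 < v z0" "v z0 < \<rho>g" using small rg by blast
  have z0ne: "z0 \<noteq> 0" using z0 by auto
  have "null0 (\<lambda>k. v (g $ k * z0 ^ k))" using tg[OF z0(2)] unfolding tz_def .
  then obtain M where M: "\<And>k. v (g $ k * z0 ^ k) \<le> M" using null0_bounded by fastforce
  have M0: "M \<ge> 0" using M[of 0] nonneg[of "g $ 0 * z0 ^ 0"] by linarith
  obtain t where t: "0 < v t" "v t < 1 / (M + 1)" using small[of "1 / (M + 1)"] M0 by auto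
  define W0 where "W0 = inverse t"
  have vW0: "v W0 = inverse (v t)" unfolding W0_def by (simp add: vinverse)
  have W0M: "v W0 > M"
  proof -
    have "v t * (M + 1) < 1" using t M0 by (simp add: pos_less_divide_eq)
    then have "M + 1 < inverse (v t)" using t by (simp add: field_simps)
    then show ?thesis using vW0 by simp
  qed
  have W0pos: "v W0 > 0" using W0M M0 by simp
  define \<rho> where "\<rho> = min (v z0) (\<rho>c * v z0 / v W0)"
  have rho: "\<rho> > 0" unfolding \<rho>_def using z0 rc W0pos by simp
  have "tz (c oo g) z \<and> E (c oo g) z = E c (E g z) \<and> v (E g z) < \<rho>c" if vz: "v z < \<rho>" for z
  proof -
    define w where "w = W0 * z / z0"
    have vw: "v w = v W0 * v z / v z0" unfolding w_def by (simp add: vmult vdivide)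
    have "v w < \<rho>c"
    proof -
      have "v z < \<rho>c * v z0 / v W0" using vz unfolding \<rho>_def by simp
      then have "v z * v W0 < \<rho>c * v z0" using W0pos by (simp add: pos_less_divide_eq)
      then show ?thesis unfolding vw using z0 by (simp add: pos_divide_less_eq mult.commute)
    qed
    have vzz0: "v z \<le> v z0" using vz unfolding \<rho>_def by simp
    have tgz: "tz g z" using tg vz z0 unfolding \<rho>_def by simp
    have gw: "v (g $ k * z ^ k) \<le> v w" for k
    proof (cases "k = 0")
      case True then show ?thesis using g0 nonneg by simp
    next
      case False
      define q where "q = v z / v z0"
      have q0: "0 \<le> q" and q1: "q \<le> 1" unfolding q_def using z0 vzz0 nonneg by auto
      have "v (g $ k * z ^ k) = v (g $ k * z0 ^ k) * q ^ k"
        unfolding q_def using z0 by (simp add: vmult vpower power_divide)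
      also have "\<dots> \<le> M * q ^ k" using M[of k] q0 by (simp add: mult_right_mono)
      also have "\<dots> \<le> M * q" using M0 q0 q1 False
        by (intro mult_left_mono) (simp_all add: power_le_one_iff power_decreasing[of 1 k q, simplified])
      also have "\<dots> \<le> v W0 * q" using W0M q0 by (simp add: mult_right_mono)
      also have "\<dots> = v w" unfolding vw q_def by simp
      finally show ?thesis .
    qed
    have main: "tz (c oo g) z \<and> E (c oo g) z = E c (E g z)"
      by (rule comp_point[OF g0 tgz tc[OF \<open>v w < \<rho>c\<close>] gw])
    have "v (E g z) \<le> v w" by (rule vconv_bound[OF E_conv[OF tgz] gw])
    then show ?thesis using main \<open>v w < \<rho>c\<close> by simp
  qed
  then show ?thesis using rho by blast
qed

section \<open>Translation\<close>

definition vs :: "(nat \<Rightarrow> 'k) \<Rightarrow> 'k" where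
  "vs a = (THE y. vconv a y)"

lemma vs_eq: "vconv a y \<Longrightarrow> vs a = y"
  unfolding vs_def using vconv_unique by blast

definition tr :: "'k fps \<Rightarrow> 'k \<Rightarrow> 'k fps" where
  "tr c a = Abs_fps (\<lambda>n. vs (\<lambda>k. c $ k * of_nat (k choose n) * a ^ (k - n)))"

lemma tr_coeff_conv:
  assumes "tz c a"
  shows "vconv (\<lambda>k. c $ k * of_nat (k choose n) * a ^ (k - n)) (tr c a $ n)"
proof -
  have "null0 (\<lambda>k. v (c $ k * of_nat (k choose n) * a ^ (k - n)))"
  proof (cases "a = 0")
    case True
    show ?thesis
    proof (rule null0_le_ev[of "\<lambda>k. 0" "Suc n"])
      show "null0 (\<lambda>k. 0)" by (simp add: null0_def)
    next
      fix k assume "Suc n \<le> k"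
      then have "k - n > 0" by simp
      then show "\<bar>v (c $ k * of_nat (k choose n) * a ^ (k - n))\<bar> \<le> \<bar>0\<bar>" by (simp add: True zero_power)
    qed
  next
    case False
    have "null0 (\<lambda>k. inverse (v a ^ n) * v (c $ k * a ^ k))"
      using assms unfolding tz_def by (rule null0_mult_const)
    then show ?thesis
    proof (rule null0_le_ev[of _ n])
      fix k assume k: "n \<le> k"
      have "v (c $ k * of_nat (k choose n) * a ^ (k - n)) = v (of_nat (k choose n)) * (v (c $ k) * v a ^ (k - n))"
        by (simp add: vmult vpower)
      also have "\<dots> \<le> v (c $ k) * v a ^ (k - n)"
        by (rule mult_left_le_one_le) (simp_all add: nonneg v_of_nat)
      also have "\<dots> = inverse (v a ^ n) * v (c $ k * a ^ k)"
      proof -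
        have "v a ^ k = v a ^ n * v a ^ (k - n)" using k by (simp add: power_add[symmetric])
        then show ?thesis using vpos[OF False] by (simp add: vmult vpower field_simps)
      qed
      finally show "\<bar>v (c $ k * of_nat (k choose n) * a ^ (k - n))\<bar> \<le> \<bar>inverse (v a ^ n) * v (c $ k * a ^ k)\<bar>"
        using nonneg by simp
    qed
  qed
  from vconv_exists[OF this] obtain y where y: "vconv (\<lambda>k. c $ k * of_nat (k choose n) * a ^ (k - n)) y"
    by blast
  then have "tr c a $ n = y" unfolding tr_def using vs_eq by simp
  then show ?thesis using y by simp
qed

lemma max_power: "max (x::real) y ^ k = max (x ^ k) (y ^ k)" if "0 \<le> x" "0 \<le> y"
proof (cases "x \<le> y")
  case True
  then have "x ^ k \<le> y ^ k" by (simp add: power_mono that)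
  then show ?thesis by (simp add: max_def True)
next
  case False
  then have "y ^ k \<le> x ^ k" using that by (simp add: power_mono)
  then show ?thesis using False by (auto simp add: max_def)
qed

lemma tr_point:
  assumes ta: "tz c a" and tzz: "tz c z"
  shows "tz (tr c a) z \<and> tz c (a + z) \<and> E c (a + z) = E (tr c a) z"
proof -
  have taz: "tz c (a + z)"
  proof (cases "v a \<le> v z")
    case True then show ?thesis using ultra[of a z] by (rule_tac tz_mono[OF tzz]) auto
  next
    case False then show ?thesis using ultra[of a z] by (rule_tac tz_mono[OF ta]) auto
  qed
  define b where "b k n = c $ k * of_nat (k choose n) * a ^ (k - n) * z ^ n" for k n
  have rows: "vconv (b k) (c $ k * (a + z) ^ k)" for k
  proof -
    have "vconv (b k) (sum (b k) {..<Suc k})" by (rule vconv_finite) (simp add: b_def)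
    moreover have "sum (b k) {..<Suc k} = c $ k * (a + z) ^ k"
    proof -
      have bin: "(a + z) ^ k = (\<Sum>n\<le>k. of_nat (k choose n) * z ^ n * a ^ (k - n))"
        using binomial_ring[of z a k] by (simp add: add.commute)
      show ?thesis unfolding bin b_def lessThan_Suc_atMost sum_distrib_left
        by (rule sum.cong) (simp_all add: algebra_simps)
    qed
    ultimately show ?thesis by simp
  qed
  have cols: "vconv (\<lambda>k. b k n) (tr c a $ n * z ^ n)" for n
    using vconv_cmult[OF tr_coeff_conv[OF ta, of n], of "z ^ n"] unfolding b_def
    by (simp add: mult.commute)
  have dec: "\<forall>e>0. \<exists>N. \<forall>k n. (N \<le> k \<or> N \<le> n) \<longrightarrow> v (b k n) < e"
  proof (intro allI impI)
    fix e :: real assume e: "e > 0"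
    from null0_max[OF ta[unfolded tz_def] tzz[unfolded tz_def]]
    obtain N where N: "\<forall>k\<ge>N. max (v (c $ k * a ^ k)) (v (c $ k * z ^ k)) < e"
      using e unfolding null0_def by fastforce
    have "v (b k n) < e" if "N \<le> k \<or> N \<le> n" for k n
    proof (cases "n \<le> k")
      case False then show ?thesis using e by (simp add: b_def binomial_eq_0)
    next
      case True
      then have kN: "k \<ge> N" using that by auto
      define m where "m = max (v a) (v z)"
      have "v (b k n) = v (of_nat (k choose n)) * (v (c $ k) * (v a ^ (k - n) * v z ^ n))"
        unfolding b_def by (simp add: vmult vpower)
      also have "\<dots> \<le> v (c $ k) * (v a ^ (k - n) * v z ^ n)"
        by (rule mult_left_le_one_le) (simp_all add: nonneg v_of_nat)
      also have "\<dots> \<le> v (c $ k) * (m ^ (k - n) * m ^ n)"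
        unfolding m_def by (intro mult_left_mono mult_mono power_mono) (simp_all add: nonneg le_max_iff_disj)
      also have "\<dots> = v (c $ k) * m ^ k" using True by (simp add: power_add[symmetric])
      also have "\<dots> = max (v (c $ k * a ^ k)) (v (c $ k * z ^ k))"
        unfolding m_def using nonneg by (simp add: max_power vmult vpower max_mult_distrib_left nonneg)
      also have "\<dots> < e" using N kN by simp
      finally show ?thesis .
    qed
    then show "\<exists>N. \<forall>k n. (N \<le> k \<or> N \<le> n) \<longrightarrow> v (b k n) < e" by blast
  qed
  obtain Y where Y: "vconv (\<lambda>k. c $ k * (a + z) ^ k) Y" "vconv (\<lambda>n. tr c a $ n * z ^ n) Y"
    using vfubini[OF dec rows cols] by blast
  show ?thesis using E_eq[OF Y(1)] E_eq[OF Y(2)] vconv_terms[OF Y(2)] taz unfolding tz_def by simp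
qed

lemma tr_deriv:
  assumes ta: "tz c a"
  shows "fps_deriv (tr c a) = tr (fps_deriv c) a"
proof (rule fps_ext)
  fix n
  have A: "vconv (\<lambda>k. of_nat (Suc n) * (c $ k * of_nat (k choose Suc n) * a ^ (k - Suc n)))
      (of_nat (Suc n) * tr c a $ Suc n)"
    by (rule vconv_cmult[OF tr_coeff_conv[OF ta]])
  have A': "vconv (\<lambda>k. of_nat (Suc n) * (c $ (k + 1) * of_nat ((k + 1) choose Suc n) * a ^ (k + 1 - Suc n)))
      (of_nat (Suc n) * tr c a $ Suc n)"
    using vconv_shift[OF A, of 1] by simp
  have B: "vconv (\<lambda>k. fps_deriv c $ k * of_nat (k choose n) * a ^ (k - n)) (tr (fps_deriv c) a $ n)"
    by (rule tr_coeff_conv[OF tz_deriv[OF ta]])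
  have eq: "of_nat (Suc n) * (c $ (k + 1) * of_nat ((k + 1) choose Suc n) * a ^ (k + 1 - Suc n))
      = fps_deriv c $ k * of_nat (k choose n) * a ^ (k - n)" for k
  proof -
    have "Suc n * (Suc k choose Suc n) = Suc k * (k choose n)" by (rule Suc_times_binomial)
    then have H: "(of_nat (Suc n) :: 'k) * of_nat (Suc k choose Suc n) = of_nat (Suc k) * of_nat (k choose n)"
      by (metis of_nat_mult)
    have L: "of_nat (Suc n) * (c $ (k + 1) * of_nat ((k + 1) choose Suc n) * a ^ (k + 1 - Suc n))
      = ((of_nat (Suc n) :: 'k) * of_nat (Suc k choose Suc n)) * (c $ Suc k * a ^ (k - n))"
      by (simp del: of_nat_Suc add: mult_ac)
    have R: "fps_deriv c $ k * of_nat (k choose n) * a ^ (k - n)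
      = ((of_nat (Suc k) :: 'k) * of_nat (k choose n)) * (c $ Suc k * a ^ (k - n))"
      by (simp del: of_nat_Suc add: fps_deriv_nth mult_ac)
    show ?thesis unfolding L R H ..
  qed
  have "of_nat (Suc n) * tr c a $ Suc n = tr (fps_deriv c) a $ n"
    using A' B unfolding eq using vconv_unique by blast
  then show "fps_deriv (tr c a) $ n = tr (fps_deriv c) a $ n" by (simp add: mult.commute)
qed

lemma disc_iff: "x \<in> disc opn v \<longleftrightarrow> (if opn then v x < 1 else v x \<le> 1)"
  unfolding disc_def by simp

lemma inO_tz:
  assumes "inO opn v c" "x \<in> disc opn v"
  shows "tz c x"
proof (cases opn)
  case True
  then have vx: "v x < 1" using assms(2) by (simp add: disc_iff)
  define r where "r = (v x + 1) / 2"
  have r: "0 < r" "r < 1" "v x \<le> r" unfolding r_def using vx nonneg[of x] by auto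
  have "(\<lambda>n. v (c $ n) * r ^ n) \<longlonglongrightarrow> 0" using assms(1) True r unfolding inO_def by simp
  then have "null0 (\<lambda>n. v (c $ n) * r ^ n)" unfolding null0_LIMSEQ .
  then show ?thesis unfolding tz_def
  proof (rule null0_le)
    fix n
    have "v x ^ n \<le> r ^ n" by (rule power_mono) (use r nonneg in auto)
    then show "\<bar>v (c $ n * x ^ n)\<bar> \<le> \<bar>v (c $ n) * r ^ n\<bar>"
      using nonneg[of "c $ n"] r by (simp add: vmult vpower mult_left_mono abs_mult power_abs)
  qed
next
  case False
  then have vx: "v x \<le> 1" using assms(2) by (simp add: disc_iff)
  have "(\<lambda>n. v (c $ n)) \<longlonglongrightarrow> 0" using assms(1) False unfolding inO_def by simp
  then have "null0 (\<lambda>n. v (c $ n))" unfolding null0_LIMSEQ .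
  then show ?thesis unfolding tz_def
    by (rule null0_le) (simp add: vmult vpower nonneg mult_left_le power_le_one vx)
qed

lemma disc_small: "v z < 1 \<Longrightarrow> z \<in> disc opn v"
  unfolding disc_iff by simp

lemma disc_add: "a \<in> disc opn v \<Longrightarrow> v z < 1 \<Longrightarrow> a + z \<in> disc opn v"
  unfolding disc_iff using ultra[of a z] by (auto split: if_splits)

lemma inO_tr:
  assumes "inO opn v c" "a \<in> disc opn v" "v z < 1"
  shows "tz (tr c a) z \<and> E c (a + z) = E (tr c a) z"
  using tr_point[OF inO_tz[OF assms(1,2)] inO_tz[OF assms(1) disc_small[OF assms(3)]]] by simp

end


lemma pow_diff_factor:
  fixes x y :: "'a::comm_ring_1"
  shows "x ^ j - y ^ j = (x - y) * (\<Sum>p<j. x ^ p * y ^ (j - 1 - p))"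
proof (cases j)
  case 0 then show ?thesis by simp
next
  case (Suc n)
  then show ?thesis using diff_power_eq_sum[of x n y] by simp
qed

lemma root_unique:
  fixes q :: "nat \<Rightarrow> 'k::field fps" and x y :: "'k fps"
  assumes x0: "x $ 0 = y $ 0"
    and rx: "(\<Sum>j<d. q j * x ^ j) + x ^ d = 0" and ry: "(\<Sum>j<d. q j * y ^ j) + y ^ d = 0"
    and nz: "(\<Sum>j<d. q j $ 0 * of_nat j * (x $ 0) ^ (j - 1)) + of_nat d * (x $ 0) ^ (d - 1) \<noteq> 0"
  shows "x = y"
proof -
  define D where "D j = (\<Sum>p<j. x ^ p * y ^ (j - 1 - p))" for j
  have pd: "x ^ j - y ^ j = (x - y) * D j" for j unfolding D_def by (rule pow_diff_factor)
  define S where "S = (\<Sum>j<d. q j * D j) + D d"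
  have "0 = ((\<Sum>j<d. q j * x ^ j) + x ^ d) - ((\<Sum>j<d. q j * y ^ j) + y ^ d)" using rx ry by simp
  also have "\<dots> = (\<Sum>j<d. q j * (x ^ j - y ^ j)) + (x ^ d - y ^ d)"
    by (simp add: sum_subtractf right_diff_distrib)
  also have "\<dots> = (x - y) * S" unfolding S_def pd
    by (simp add: distrib_left sum_distrib_left mult_ac)
  finally have eq: "(x - y) * S = 0" by simp
  have D0: "D j $ 0 = of_nat j * (x $ 0) ^ (j - 1)" for j
  proof -
    have "D j $ 0 = (\<Sum>p<j. (x $ 0) ^ p * (x $ 0) ^ (j - 1 - p))"
      unfolding D_def by (simp add: fps_sum_nth fps_mult_nth_0 fps_power_zeroth x0)
    also have "\<dots> = (\<Sum>p<j. (x $ 0) ^ (j - 1))"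
      by (rule sum.cong) (auto simp: power_add[symmetric])
    finally show ?thesis by simp
  qed
  have "S $ 0 = (\<Sum>j<d. q j $ 0 * of_nat j * (x $ 0) ^ (j - 1)) + of_nat d * (x $ 0) ^ (d - 1)"
    unfolding S_def by (simp add: fps_sum_nth fps_mult_nth_0 D0 mult.assoc)
  then have "S \<noteq> 0" using nz by auto
  then have "x - y = 0" using eq by simp
  then show ?thesis by simp
qed

lemma poly_deriv_nonzero:
  fixes c :: "nat \<Rightarrow> 'k::field" and \<alpha> :: "nat \<Rightarrow> 'k"
  assumes inj: "inj_on \<alpha> {..<d}"
    and roots: "\<And>k. k < d \<Longrightarrow> (\<Sum>j<d. c j * \<alpha> k ^ j) + \<alpha> k ^ d = 0"
    and i: "i < d"
  shows "(\<Sum>j<d. c j * of_nat j * \<alpha> i ^ (j - 1)) + of_nat d * \<alpha> i ^ (d - 1) \<noteq> 0"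
proof -
  define p where "p = (\<Sum>j<d. monom (c j) j) + monom 1 d"
  have polyp: "poly p x = (\<Sum>j<d. c j * x ^ j) + x ^ d" for x
    unfolding p_def by (simp add: poly_sum poly_monom)
  have cp: "coeff p d = 1" unfolding p_def by (simp add: coeff_sum coeff_monom)
  then have p0: "p \<noteq> 0" by auto
  have degp: "degree p = d"
  proof (rule antisym)
    show "degree p \<le> d" unfolding p_def
      by (intro degree_add_le degree_sum_le) (auto simp: degree_monom_le intro: order.trans[OF degree_monom_le])
    show "d \<le> degree p" using cp by (simp add: le_degree)
  qed
  have "poly p (\<alpha> i) = 0" using roots[OF i] polyp by simp
  then obtain R where R: "p = [:- \<alpha> i, 1:] * R" unfolding poly_eq_0_iff_dvd by (auto elim: dvdE)
  have R0: "R \<noteq> 0" using p0 R by auto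
  have "degree p = degree [:- \<alpha> i, 1:] + degree R" unfolding R
    by (rule degree_mult_eq) (use R0 in auto)
  then have degR: "degree R = d - 1" using degp by simp
  have Rroots: "poly R (\<alpha> k) = 0" if "k < d" "k \<noteq> i" for k
  proof -
    have "\<alpha> k \<noteq> \<alpha> i" using inj that i unfolding inj_on_def by auto
    moreover have "poly p (\<alpha> k) = 0" using roots[OF that(1)] polyp by simp
    ultimately show ?thesis using R by simp
  qed
  have Ri: "poly R (\<alpha> i) \<noteq> 0"
  proof
    assume "poly R (\<alpha> i) = 0"
    then have "\<alpha> ` {..<d} \<subseteq> {x. poly R x = 0}" using Rroots by auto
    then have "card (\<alpha> ` {..<d}) \<le> card {x. poly R x = 0}"
      by (intro card_mono poly_roots_finite R0)
    also have "\<dots> \<le> degree R" by (rule card_poly_roots_bound[OF R0])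
    finally have "d \<le> d - 1" using card_image[OF inj] degR by simp
    then show False using i by simp
  qed
  have "poly (pderiv p) (\<alpha> i) = poly R (\<alpha> i)"
    unfolding R pderiv_mult by (simp add: pderiv_pCons)
  moreover have "poly (pderiv p) x = (\<Sum>j<d. c j * of_nat j * x ^ (j - 1)) + of_nat d * x ^ (d - 1)" for x
  proof -
    have "pderiv p = (\<Sum>j<d. pderiv (monom (c j) j)) + pderiv (monom 1 d)"
      unfolding p_def pderiv_add using higher_pderiv_sum[of 1 "\<lambda>j. monom (c j) j" "{..<d}"] by simp
    then show ?thesis by (simp add: poly_sum pderiv_monom poly_monom mult_ac)
  qed
  ultimately show ?thesis using Ri by simp
qed


lemma null0_convmax:
  assumes na: "null0 \<alpha>" and nb: "null0 \<beta>"
    and g: "\<And>n. \<exists>k\<le>n. \<bar>\<gamma> n\<bar> \<le> \<bar>\<alpha> k\<bar> * \<bar>\<beta> (n - k)\<bar>"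
  shows "null0 \<gamma>"
  unfolding null0_def
proof (intro allI impI)
  fix e :: real assume e: "e > 0"
  obtain Ba where Ba: "\<And>n. \<bar>\<alpha> n\<bar> \<le> Ba" using null0_bounded[OF na] by auto
  obtain Bb where Bb: "\<And>n. \<bar>\<beta> n\<bar> \<le> Bb" using null0_bounded[OF nb] by auto
  have Ba0: "Ba \<ge> 0" using Ba[of 0] by linarith
  have Bb0: "Bb \<ge> 0" using Bb[of 0] by linarith
  obtain N1 where N1: "\<forall>n\<ge>N1. \<bar>\<alpha> n\<bar> < e / (Bb + 1)"
    using na e Bb0 unfolding null0_def by (meson add_nonneg_pos divide_pos_pos zero_less_one)
  obtain N2 where N2: "\<forall>n\<ge>N2. \<bar>\<beta> n\<bar> < e / (Ba + 1)"
    using nb e Ba0 unfolding null0_def by (meson add_nonneg_pos divide_pos_pos zero_less_one)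
  have "\<bar>\<gamma> n\<bar> < e" if n: "n \<ge> N1 + N2" for n
  proof -
    obtain k where k: "k \<le> n" "\<bar>\<gamma> n\<bar> \<le> \<bar>\<alpha> k\<bar> * \<bar>\<beta> (n - k)\<bar>" using g by blast
    show ?thesis
    proof (cases "k \<ge> N1")
      case True
      have "\<bar>\<alpha> k\<bar> * \<bar>\<beta> (n - k)\<bar> \<le> \<bar>\<alpha> k\<bar> * (Bb + 1)"
        using Bb[of "n - k"] by (intro mult_left_mono) auto
      also have "\<dots> < e" using N1 True Bb0 by (simp add: pos_less_divide_eq)
      finally show ?thesis using k by simp
    next
      case False
      then have "n - k \<ge> N2" using n by linarith
      have "\<bar>\<alpha> k\<bar> * \<bar>\<beta> (n - k)\<bar> \<le> (Ba + 1) * \<bar>\<beta> (n - k)\<bar>"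
        using Ba[of k] by (intro mult_right_mono) auto
      also have "\<dots> < e"
      proof -
        have "\<bar>\<beta> (n - k)\<bar> < e / (Ba + 1)" using N2 \<open>n - k \<ge> N2\<close> by simp
        then have "\<bar>\<beta> (n - k)\<bar> * (Ba + 1) < e" using Ba0 by (simp add: pos_less_divide_eq)
        then show ?thesis by (simp add: mult.commute)
      qed
      finally show ?thesis using k by simp
    qed
  qed
  then show "\<exists>N. \<forall>n\<ge>N. \<bar>\<gamma> n\<bar> < e" by blast
qed

context nav
begin

lemma vsum_le_max:
  assumes "finite A" "A \<noteq> {}"
  shows "\<exists>i\<in>A. v (sum f A) \<le> v (f i)"
proof -
  define M where "M = Max ((\<lambda>j. v (f j)) ` A)"
  have "M \<in> (\<lambda>j. v (f j)) ` A" unfolding M_def using assms by (intro Max_in) auto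
  then obtain i where i: "i \<in> A" "v (f i) = M" by auto
  have "v (sum f A) \<le> M"
  proof (rule vsum_le)
    fix j assume "j \<in> A"
    then show "v (f j) \<le> M" unfolding M_def using assms by (intro Max_ge) auto
  next
    show "0 \<le> M" using i(2) nonneg[of "f i"] by simp
  qed
  then show ?thesis using i by auto
qed

lemma coeff_mult_bound:
  fixes \<rho> :: real
  assumes "0 \<le> \<rho>"
  shows "\<exists>k\<le>n. \<bar>v ((c * d) $ n) * \<rho> ^ n\<bar> \<le> \<bar>v (c $ k) * \<rho> ^ k\<bar> * \<bar>v (d $ (n - k)) * \<rho> ^ (n - k)\<bar>"
proof -
  obtain k where k: "k \<in> {0..n}" "v ((c * d) $ n) \<le> v (c $ k * d $ (n - k))"
    using vsum_le_max[of "{0..n}" "\<lambda>k. c $ k * d $ (n - k)"] by (auto simp: fps_mult_nth)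
  have rn: "\<rho> ^ n = \<rho> ^ k * \<rho> ^ (n - k)" using k(1) by (simp add: power_add[symmetric])
  have h1: "v ((c * d) $ n) * \<rho> ^ n \<le> (v (c $ k) * v (d $ (n - k))) * \<rho> ^ n"
    using k(2) assms by (intro mult_right_mono) (simp_all add: vmult)
  have h2: "(v (c $ k) * v (d $ (n - k))) * \<rho> ^ n = (v (c $ k) * \<rho> ^ k) * (v (d $ (n - k)) * \<rho> ^ (n - k))"
    unfolding rn by (simp only: mult_ac)
  have "v ((c * d) $ n) * \<rho> ^ n \<le> (v (c $ k) * \<rho> ^ k) * (v (d $ (n - k)) * \<rho> ^ (n - k))"
    using h1 h2 by simp
  then show ?thesis using k(1) assms nonneg by (intro exI[of _ k]) (simp add: abs_mult)
qed

lemma null0_coeff_mult: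
  assumes "0 \<le> \<rho>" "null0 (\<lambda>n. v (c $ n) * \<rho> ^ n)" "null0 (\<lambda>n. v (d $ n) * \<rho> ^ n)"
  shows "null0 (\<lambda>n. v ((c * d) $ n) * \<rho> ^ n)"
  by (rule null0_convmax[OF assms(2,3)]) (rule coeff_mult_bound[OF assms(1)])

lemma null0_coeff_add:
  assumes "null0 (\<lambda>n. v (c $ n) * \<rho> ^ n)" "null0 (\<lambda>n. v (d $ n) * \<rho> ^ n)" "0 \<le> \<rho>"
  shows "null0 (\<lambda>n. v ((c + d) $ n) * \<rho> ^ n)"
  using null0_max[OF assms(1,2)]
proof (rule null0_le)
  fix n
  have "v ((c + d) $ n) * \<rho> ^ n \<le> max (v (c $ n)) (v (d $ n)) * \<rho> ^ n"
    using ultra[of "c $ n" "d $ n"] assms(3) by (simp add: mult_right_mono)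
  also have "\<dots> = max (v (c $ n) * \<rho> ^ n) (v (d $ n) * \<rho> ^ n)"
    using assms(3) by (simp add: max_mult_distrib_right)
  finally show "\<bar>v ((c + d) $ n) * \<rho> ^ n\<bar> \<le> \<bar>max \<bar>v (c $ n) * \<rho> ^ n\<bar> \<bar>v (d $ n) * \<rho> ^ n\<bar>\<bar>"
    using assms(3) nonneg by (simp add: abs_mult)
qed

lemma inO_iff: "inO opn v c \<longleftrightarrow> (if opn then (\<forall>\<rho>. 0 < \<rho> \<and> \<rho> < 1 \<longrightarrow> null0 (\<lambda>n. v (c $ n) * \<rho> ^ n))
   else null0 (\<lambda>n. v (c $ n) * 1 ^ n))"
  unfolding inO_def null0_LIMSEQ by simp

lemma inO_alt: "inO opn v c \<longleftrightarrow> (\<forall>\<rho>. (if opn then 0 < \<rho> \<and> \<rho> < 1 else \<rho> = 1) \<longrightarrow> null0 (\<lambda>n. v (c $ n) * \<rho> ^ n))"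
  unfolding inO_def null0_LIMSEQ by auto

lemma inO_add:
  assumes "inO opn v c" "inO opn v d" shows "inO opn v (c + d)"
  unfolding inO_alt
proof (intro allI impI)
  fix \<rho> :: real assume h: "if opn then 0 < \<rho> \<and> \<rho> < 1 else \<rho> = 1"
  then have r0: "0 \<le> \<rho>" by (auto split: if_splits)
  show "null0 (\<lambda>n. v ((c + d) $ n) * \<rho> ^ n)"
    by (rule null0_coeff_add[OF assms(1)[unfolded inO_alt, rule_format, OF h] assms(2)[unfolded inO_alt, rule_format, OF h] r0])
qed

lemma inO_mult:
  assumes "inO opn v c" "inO opn v d" shows "inO opn v (c * d)"
  unfolding inO_alt
proof (intro allI impI)
  fix \<rho> :: real assume h: "if opn then 0 < \<rho> \<and> \<rho> < 1 else \<rho> = 1"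
  then have r0: "0 \<le> \<rho>" by (auto split: if_splits)
  show "null0 (\<lambda>n. v ((c * d) $ n) * \<rho> ^ n)"
    by (rule null0_coeff_mult[OF r0 assms(1)[unfolded inO_alt, rule_format, OF h] assms(2)[unfolded inO_alt, rule_format, OF h]])
qed

lemma inO_finite:
  assumes z: "\<And>n. n \<ge> N \<Longrightarrow> c $ n = 0" shows "inO opn v c"
  unfolding inO_alt
proof (intro allI impI)
  fix \<rho> :: real
  show "null0 (\<lambda>n. v (c $ n) * \<rho> ^ n)"
    by (rule null0_le_ev[of "\<lambda>n. 0" N]) (simp_all add: null0_def z)
qed

lemma inO_const: "inO opn v (fps_const k)"
  by (rule inO_finite[of 1]) simp

lemma inO_X: "inO opn v fps_X"
  by (rule inO_finite[of 2]) (simp add: fps_X_def)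

lemma inO_power: "inO opn v c \<Longrightarrow> inO opn v (c ^ n)"
  by (induction n) (simp_all add: inO_mult inO_const[of opn 1, simplified])

lemma inO_sum: "(\<And>i. i \<in> I \<Longrightarrow> inO opn v (f i)) \<Longrightarrow> inO opn v (\<Sum>i\<in>I. f i)"
  by (induction I rule: infinite_finite_induct) (simp_all add: inO_add inO_const[of opn 0, simplified])

section \<open>Germs\<close>

definition good :: "'k fps \<Rightarrow> bool" where
  "good c \<longleftrightarrow> (\<exists>\<rho>>0. \<forall>z. v z < \<rho> \<longrightarrow> tz c z)"

lemma goodI: "\<rho> > 0 \<Longrightarrow> (\<And>z. v z < \<rho> \<Longrightarrow> tz c z) \<Longrightarrow> good c"
  unfolding good_def by blast

lemma good2:
  assumes "good c" "good d"
  obtains \<rho> where "\<rho> > 0" "\<And>z. v z < \<rho> \<Longrightarrow> tz c z" "\<And>z. v z < \<rho> \<Longrightarrow> tz d z"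
proof -
  obtain r1 where r1: "r1 > 0" "\<And>z. v z < r1 \<Longrightarrow> tz c z" using assms(1) unfolding good_def by blast
  obtain r2 where r2: "r2 > 0" "\<And>z. v z < r2 \<Longrightarrow> tz d z" using assms(2) unfolding good_def by blast
  show ?thesis by (rule that[of "min r1 r2"]) (use r1 r2 in auto)
qed

lemma good_add: "good c \<Longrightarrow> good d \<Longrightarrow> good (c + d)"
  by (erule good2, assumption) (rule goodI, assumption, simp add: tz_add)

lemma good_mult: "good c \<Longrightarrow> good d \<Longrightarrow> good (c * d)"
  by (erule good2, assumption) (rule goodI, assumption, simp add: tz_mult)

lemma good_minus: "good c \<Longrightarrow> good (- c)"
  unfolding good_def using tz_minus by blast

lemma good_diff: "good c \<Longrightarrow> good d \<Longrightarrow> good (c - d)"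
  using good_add[of c "- d"] good_minus[of d] by simp

lemma good_const: "good (fps_const k)"
  by (rule goodI[of 1]) (simp_all add: tz_const)

lemma good_0: "good 0" and good_1: "good 1"
  using good_const[of 0] good_const[of 1] by simp_all

lemma good_X: "good fps_X"
  by (rule goodI[of 1]) (simp_all add: tz_X)

lemma good_power: "good c \<Longrightarrow> good (c ^ n)"
  by (induction n) (simp_all add: good_1 good_mult)

lemma good_sum: "(\<And>i. i \<in> I \<Longrightarrow> good (f i)) \<Longrightarrow> good (\<Sum>i\<in>I. f i)"
  by (induction I rule: infinite_finite_induct) (simp_all add: good_0 good_add)

lemma good_prod: "(\<And>i. i \<in> I \<Longrightarrow> good (f i)) \<Longrightarrow> good (\<Prod>i\<in>I. f i)"
  by (induction I rule: infinite_finite_induct) (simp_all add: good_1 good_mult)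

lemma good_deriv: "good c \<Longrightarrow> good (fps_deriv c)"
  unfolding good_def using tz_deriv by blast

lemma good_comp: "g $ 0 = 0 \<Longrightarrow> good g \<Longrightarrow> good c \<Longrightarrow> good (c oo g)"
proof -
  assume g0: "g $ 0 = 0" and "good g" "good c"
  then obtain rg rc where rg: "rg > 0" "\<And>z. v z < rg \<Longrightarrow> tz g z"
    and rc: "rc > 0" "\<And>z. v z < rc \<Longrightarrow> tz c z" unfolding good_def by blast
  from comp_ball[OF g0 rg rc] show ?thesis unfolding good_def by blast
qed

definition geom :: "'k fps" where "geom = Abs_fps (\<lambda>n. 1)"

lemma good_geom: "good geom"
proof (rule goodI[of 1])
  fix z assume z: "v z < 1"
  have "(\<lambda>n. v z ^ n) \<longlonglongrightarrow> 0" using z nonneg[of z] by (intro LIMSEQ_power_zero) simp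
  then show "tz geom z" unfolding tz_def geom_def null0_LIMSEQ by (simp add: vpower)
qed simp

lemma geom_inv: "geom * (1 - fps_X) = 1"
proof -
  have "geom $ 0 \<noteq> 0" unfolding geom_def by simp
  then have "geom * inverse geom = 1" by (simp add: inverse_mult_eq_1')
  then show ?thesis unfolding geom_def fps_inverse_gp' .
qed

lemma good_inverse:
  assumes c0: "c $ 0 \<noteq> 0" and gc: "good c"
  shows "good (inverse c)"
proof -
  define g where "g = 1 - fps_const (inverse (c $ 0)) * c"
  have g0: "g $ 0 = 0" unfolding g_def using c0 by simp
  have gg: "good g" unfolding g_def by (intro good_diff good_1 good_mult good_const gc)
  define K where "K = geom oo g"
  have gK: "good K" unfolding K_def by (rule good_comp[OF g0 gg good_geom])
  have "K * (1 - g) = (geom * (1 - fps_X)) oo g"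
    unfolding K_def fps_compose_mult_distrib[OF g0] fps_compose_sub_distrib
    by (simp add: fps_X_fps_compose_startby0[OF g0])
  then have K1: "K * (1 - g) = 1" unfolding geom_inv by simp
  have cg: "c = fps_const (c $ 0) * (1 - g)" unfolding g_def using c0
    by (simp add: algebra_simps fps_const_mult[symmetric])
  have "c * (fps_const (inverse (c $ 0)) * K) = 1"
  proof -
    have "c * (fps_const (inverse (c $ 0)) * K) = (fps_const (c $ 0) * fps_const (inverse (c $ 0))) * (K * (1 - g))"
      by (subst cg) (simp add: mult_ac)
    also have "\<dots> = 1" using c0 K1 by (simp add: fps_const_mult)
    finally show ?thesis .
  qed
  then have "inverse c = fps_const (inverse (c $ 0)) * K" by (rule fps_inverse_unique)
  then show ?thesis using gK by (simp add: good_mult good_const)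
qed

lemma good_finite:
  "(\<And>q. q < (N::nat) \<Longrightarrow> good (C q)) \<Longrightarrow> \<exists>\<rho>>0. \<rho> \<le> 1 \<and> (\<forall>q<N. \<forall>z. v z < \<rho> \<longrightarrow> tz (C q) z)"
proof (induction N)
  case 0 then show ?case by (intro exI[of _ 1]) simp
next
  case (Suc N)
  then obtain r1 where r1: "r1 > 0" "r1 \<le> 1" "\<forall>q<N. \<forall>z. v z < r1 \<longrightarrow> tz (C q) z" by auto
  obtain r2 where r2: "r2 > 0" "\<forall>z. v z < r2 \<longrightarrow> tz (C N) z" using Suc.prems[of N] unfolding good_def by auto
  show ?case by (rule exI[of _ "min r1 r2"]) (use r1 r2 in \<open>auto simp: less_Suc_eq\<close>)
qed

lemma radius_finite:
  "(\<And>j. j < (N::nat) \<Longrightarrow> \<exists>\<rho>>0. \<forall>z. v z < \<rho> \<longrightarrow> Q j z) \<Longrightarrow> \<exists>\<rho>>0. \<rho> \<le> 1 \<and> (\<forall>z. v z < \<rho> \<longrightarrow> (\<forall>j<N. Q j z))"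
proof (induction N)
  case 0 then show ?case by (intro exI[of _ 1]) simp
next
  case (Suc N)
  then obtain r1 where r1: "r1 > 0" "r1 \<le> 1" "\<forall>z. v z < r1 \<longrightarrow> (\<forall>j<N. Q j z)" by auto
  obtain r2 where r2: "r2 > 0" "\<forall>z. v z < r2 \<longrightarrow> Q N z" using Suc.prems[of N] by auto
  have "\<forall>z. v z < min r1 r2 \<longrightarrow> (\<forall>j<Suc N. Q j z)"
  proof (intro allI impI)
    fix z j assume z: "v z < min r1 r2" and j: "j < Suc N"
    show "Q j z"
    proof (cases "j = N")
      case True then show ?thesis using r2 z by simp
    next
      case False then show ?thesis using r1(3) z j by simp
    qed
  qed
  then show ?case using r1 r2 by (intro exI[of _ "min r1 r2"]) simp
qed

lemma good_tr: "tz c a \<Longrightarrow> (\<And>z. v z < \<rho> \<Longrightarrow> tz c z) \<Longrightarrow> \<rho> > 0 \<Longrightarrow> good (tr c a)"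
  using tr_point unfolding good_def by blast

end


locale setting = nav +
  fixes opn :: bool and f :: "'a fps" and d r :: nat and P :: "nat \<Rightarrow> 'a fps"
    and b :: 'a and a :: "nat \<Rightarrow> 'a" and u :: "nat \<Rightarrow> 'a fps"
    and G :: "nat \<Rightarrow> nat \<Rightarrow> 'a fps" and Y :: "nat \<Rightarrow> nat \<Rightarrow> nat \<Rightarrow> 'a fps"
  assumes fe: "finite_etale_disc opn v f d"
    and Pin: "\<forall>j<d. inO opn v (P j)"
    and Pf: "\<forall>x\<in>disc opn v. (\<Sum>j<d. feval v (P j) (feval v f x) * x ^ j) + x ^ d = 0"
    and bdisc: "b \<in> disc opn v"
    and ainj: "inj_on a {..<d}"
    and afib: "a ` {..<d} = {x \<in> disc opn v. feval v f x = b}"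
    and uass: "\<forall>i<d. fps_nth (u i) 0 = a i \<and> (\<exists>\<rho>>0. \<rho> \<le> 1 \<and> conv_ball v (u i) \<rho> \<and>
           (\<forall>y. v (y - b) < \<rho> \<longrightarrow>
              (\<Sum>j<d. feval v (P j) y * feval v (u i) (y - b) ^ j) + feval v (u i) (y - b) ^ d = 0))"
    and Gin: "\<forall>m<r. \<forall>l<r. inO opn v (G m l)"
    and Ybas: "\<forall>i<d. fam_basis (horiz_t opn v r G (a i)) (Y i) {..<r}"
begin

abbreviation Dk where "Dk \<equiv> disc opn v"

definition fa :: "nat \<Rightarrow> 'a fps" where "fa i = tr f (a i) - fps_const b"
definition ui :: "nat \<Rightarrow> 'a fps" where "ui i = u i - fps_const (a i)"
definition Pb :: "nat \<Rightarrow> 'a fps" where "Pb j = tr (P j) b"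
definition dv :: "'a fps" where "dv = dinv opn v f"

lemma f_in: "inO opn v f" using fe unfolding finite_etale_disc_def by simp

lemma dv_prop: "inO opn v dv \<and> dv * fps_deriv f = 1"
proof -
  have "\<exists>g. inO opn v g \<and> g * fps_deriv f = 1" using fe unfolding finite_etale_disc_def by simp
  then show ?thesis unfolding dv_def dinv_def by (rule someI_ex)
qed

lemma a_prop: "i < d \<Longrightarrow> a i \<in> Dk \<and> E f (a i) = b"
  using afib by blast

lemma tr0: "tz c x \<Longrightarrow> tr c x $ 0 = E c x"
  using tr_point[of c x 0] by (simp add: tz_0pt E_0pt)

lemma fa0: "i < d \<Longrightarrow> fa i $ 0 = 0"
  unfolding fa_def using tr0[OF inO_tz[OF f_in]] a_prop by simp

lemma ui0: "i < d \<Longrightarrow> ui i $ 0 = 0"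
  unfolding ui_def using uass by simp

lemma fa_pt: "i < d \<Longrightarrow> v z < 1 \<Longrightarrow> tz (fa i) z \<and> E (fa i) z = E f (a i + z) - b"
  using inO_tr[OF f_in _ , of "a i" z] a_prop[of i] unfolding fa_def
  by (simp add: tz_diff tz_const E_diff E_const)

lemma good_fa: "i < d \<Longrightarrow> good (fa i)"
  using fa_pt by (intro goodI[of 1]) auto

lemma Pb_pt: "j < d \<Longrightarrow> v z < 1 \<Longrightarrow> tz (Pb j) z \<and> E (Pb j) z = E (P j) (b + z)"
  using inO_tr[of opn "P j" b z] Pin bdisc unfolding Pb_def by simp

lemma good_Pb: "j < d \<Longrightarrow> good (Pb j)"
  using Pb_pt by (intro goodI[of 1]) auto

lemma u_rad: "i < d \<Longrightarrow> \<exists>\<rho>>0. \<rho> \<le> 1 \<and> (\<forall>z. v z < \<rho> \<longrightarrow> tz (u i) z) \<and>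
   (\<forall>y. v (y - b) < \<rho> \<longrightarrow> (\<Sum>j<d. E (P j) y * E (u i) (y - b) ^ j) + E (u i) (y - b) ^ d = 0)"
  using uass unfolding conv_ball_iff by blast

lemma good_u: "i < d \<Longrightarrow> good (u i)"
  using u_rad unfolding good_def by blast

lemma good_ui: "i < d \<Longrightarrow> good (ui i)"
  unfolding ui_def by (intro good_diff good_u good_const)

lemma E_sumprod:
  assumes "\<And>j. j < N \<Longrightarrow> tz (q j) z" "tz x z"
  shows "tz (\<Sum>j<N. q j * x ^ j) z \<and> E (\<Sum>j<N. q j * x ^ j) z = (\<Sum>j<N. E (q j) z * E x z ^ j)"
proof -
  have t1: "\<And>j. j \<in> {..<N} \<Longrightarrow> tz (q j * x ^ j) z" using assms by (simp add: tz_mult tz_power)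
  have t2: "tz (\<Sum>j<N. q j * x ^ j) z" using t1 by (rule tz_sum)
  have "E (\<Sum>j<N. q j * x ^ j) z = (\<Sum>j<N. E (q j * x ^ j) z)" by (rule E_sum[OF t1])
  also have "\<dots> = (\<Sum>j<N. E (q j) z * E x z ^ j)"
    by (rule sum.cong) (use assms in \<open>simp_all add: E_mult E_power tz_power\<close>)
  finally show ?thesis using t2 by simp
qed

lemma E_polyexp:
  assumes "\<And>j. j < d \<Longrightarrow> tz (q j) z" "tz x z"
  shows "tz ((\<Sum>j<d. q j * x ^ j) + x ^ d) z \<and>
    E ((\<Sum>j<d. q j * x ^ j) + x ^ d) z = (\<Sum>j<d. E (q j) z * E x z ^ j) + E x z ^ d"
proof -
  note S = E_sumprod[of d q z x, OF assms]
  have "E ((\<Sum>j<d. q j * x ^ j) + x ^ d) z = E (\<Sum>j<d. q j * x ^ j) z + E (x ^ d) z"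
    by (rule E_add[OF conjunct1[OF S] tz_power[OF assms(2)]])
  then show ?thesis using S assms by (simp add: tz_add tz_power E_power)
qed

lemma u_root: "i < d \<Longrightarrow> (\<Sum>j<d. Pb j * u i ^ j) + u i ^ d = 0"
proof -
  assume i: "i < d"
  obtain \<rho> where \<rho>: "\<rho> > 0" "\<rho> \<le> 1" "\<And>z. v z < \<rho> \<Longrightarrow> tz (u i) z"
    and eq: "\<And>y. v (y - b) < \<rho> \<Longrightarrow> (\<Sum>j<d. E (P j) y * E (u i) (y - b) ^ j) + E (u i) (y - b) ^ d = 0"
    using u_rad[OF i] by blast
  show ?thesis
  proof (rule ident_zero[OF \<rho>(1)])
    fix z assume z: "v z < \<rho>"
    then have z1: "v z < 1" using \<rho> by simp
    have tzP: "\<And>j. j < d \<Longrightarrow> tz (Pb j) z" using Pb_pt z1 by blast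
    note EP = E_polyexp[of Pb z "u i", OF tzP \<rho>(3)[OF z]]
    show "tz ((\<Sum>j<d. Pb j * u i ^ j) + u i ^ d) z" using EP by simp
    have "E ((\<Sum>j<d. Pb j * u i ^ j) + u i ^ d) z = (\<Sum>j<d. E (P j) (b + z) * E (u i) z ^ j) + E (u i) z ^ d"
      using EP Pb_pt[OF _ z1] by simp
    also have "\<dots> = 0" using eq[of "b + z"] z by simp
    finally show "E ((\<Sum>j<d. Pb j * u i ^ j) + u i ^ d) z = 0" .
  qed
qed

lemma tau_root:
  assumes i: "i < d"
  shows "(\<Sum>j<d. (Pb j oo fa i) * (fps_X + fps_const (a i)) ^ j) + (fps_X + fps_const (a i)) ^ d = 0"
proof -
  have "\<exists>\<rho>>0. \<forall>z. v z < \<rho> \<longrightarrow> (tz (Pb j oo fa i) z \<and> E (Pb j oo fa i) z = E (Pb j) (E (fa i) z) \<and> v (E (fa i) z) < 1)"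
    if j: "j < d" for j
    by (rule comp_ball[OF fa0[OF i], of 1 1]) (use fa_pt[OF i] Pb_pt[OF j] in auto)
  note ex = this
  obtain \<rho> where \<rho>: "\<rho> > 0" "\<rho> \<le> 1"
    and R: "\<And>z. v z < \<rho> \<Longrightarrow> (\<forall>j<d. tz (Pb j oo fa i) z \<and> E (Pb j oo fa i) z = E (Pb j) (E (fa i) z) \<and> v (E (fa i) z) < 1)"
    using radius_finite[of d "\<lambda>j z. tz (Pb j oo fa i) z \<and> E (Pb j oo fa i) z = E (Pb j) (E (fa i) z) \<and> v (E (fa i) z) < 1", OF ex]
    by blast
  show ?thesis
  proof (rule ident_zero[OF \<rho>(1)])
    fix z assume z: "v z < \<rho>"
    then have z1: "v z < 1" using \<rho> by simp
    have tX: "tz (fps_X + fps_const (a i)) z" by (simp add: tz_add tz_X tz_const)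
    note EPX = E_polyexp[of "\<lambda>j. Pb j oo fa i" z "fps_X + fps_const (a i)", OF _ tX]
    show "tz ((\<Sum>j<d. (Pb j oo fa i) * (fps_X + fps_const (a i)) ^ j) + (fps_X + fps_const (a i)) ^ d) z"
      using EPX R[OF z] by simp
    define x where "x = a i + z"
    have xd: "x \<in> Dk" unfolding x_def using disc_add a_prop[OF i] z1 by blast
    have Ef: "E f x = b + E (fa i) z" using fa_pt[OF i z1] unfolding x_def by simp
    have EX: "E (fps_X + fps_const (a i)) z = x" unfolding x_def by (simp add: E_add tz_X tz_const E_X E_const)
    have EP: "E (Pb j oo fa i) z = E (P j) (E f x)" if "j < d" for j
      using R[OF z] that Pb_pt[OF that, of "E (fa i) z"] Ef by simp
    have "E ((\<Sum>j<d. (Pb j oo fa i) * (fps_X + fps_const (a i)) ^ j) + (fps_X + fps_const (a i)) ^ d) z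
        = (\<Sum>j<d. E (P j) (E f x) * x ^ j) + x ^ d"
      using EPX R[OF z] EX EP by simp
    also have "\<dots> = 0" using Pf xd by blast
    finally show "E ((\<Sum>j<d. (Pb j oo fa i) * (fps_X + fps_const (a i)) ^ j) + (fps_X + fps_const (a i)) ^ d) z = 0" .
  qed
qed

lemma fa1: "i < d \<Longrightarrow> fa i $ 1 \<noteq> 0"
proof -
  assume i: "i < d"
  have ta: "tz f (a i)" using inO_tz[OF f_in] a_prop[OF i] by blast
  have "fa i $ 1 = fps_deriv (tr f (a i)) $ 0" unfolding fa_def by simp
  also have "\<dots> = tr (fps_deriv f) (a i) $ 0" using tr_deriv[OF ta] by simp
  also have "\<dots> = E (fps_deriv f) (a i)" using tr0[OF tz_deriv[OF ta]] .
  finally have eq: "fa i $ 1 = E (fps_deriv f) (a i)" .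
  have tdv: "tz dv (a i)" using inO_tz dv_prop a_prop[OF i] by blast
  have "E dv (a i) * E (fps_deriv f) (a i) = E (dv * fps_deriv f) (a i)"
    using E_mult[OF tdv tz_deriv[OF ta]] by simp
  also have "\<dots> = 1" using dv_prop by (simp add: E_1)
  finally show ?thesis using eq by auto
qed

lemma Pb0: "j < d \<Longrightarrow> Pb j $ 0 = E (P j) b"
  unfolding Pb_def using tr0 inO_tz Pin bdisc by blast

lemma deriv_nz: "i < d \<Longrightarrow> (\<Sum>j<d. Pb j $ 0 * of_nat j * (a i) ^ (j - 1)) + of_nat d * (a i) ^ (d - 1) \<noteq> 0"
proof -
  assume i: "i < d"
  have "(\<Sum>j<d. E (P j) b * of_nat j * a i ^ (j - 1)) + of_nat d * a i ^ (d - 1) \<noteq> 0"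
  proof (rule poly_deriv_nonzero[OF ainj _ i])
    fix k assume k: "k < d"
    show "(\<Sum>j<d. E (P j) b * a k ^ j) + a k ^ d = 0" using Pf a_prop[OF k] by force
  qed
  then show ?thesis using Pb0 by simp
qed

lemma ui_inv: "i < d \<Longrightarrow> ui i = fps_inv (fa i)"
proof -
  assume i: "i < d"
  define h where "h = fps_inv (fa i)"
  have h0: "h $ 0 = 0" unfolding h_def by (simp add: fps_inv_def)
  have fah: "fa i oo h = fps_X" unfolding h_def by (rule fps_inv_right[OF fa0[OF i] fa1[OF i]])
  define Z where "Z = fps_X + fps_const (a i)"
  have Zh: "Z oo h = h + fps_const (a i)" unfolding Z_def
    by (simp add: fps_compose_add_distrib fps_X_fps_compose_startby0[OF h0])
  have "0 = ((\<Sum>j<d. (Pb j oo fa i) * Z ^ j) + Z ^ d) oo h"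
    using tau_root[OF i] unfolding Z_def by simp
  also have "\<dots> = (\<Sum>j<d. Pb j * (h + fps_const (a i)) ^ j) + (h + fps_const (a i)) ^ d"
  proof -
    have "((Pb j oo fa i) * Z ^ j) oo h = Pb j * (h + fps_const (a i)) ^ j" for j
    proof -
      have "(Pb j oo fa i) oo h = Pb j oo (fa i oo h)"
        by (rule fps_compose_assoc[OF h0 fa0[OF i], symmetric])
      then have "(Pb j oo fa i) oo h = Pb j" using fah by simp
      then show ?thesis using Zh by (simp add: fps_compose_mult_distrib[OF h0] fps_compose_power[OF h0, symmetric])
    qed
    then show ?thesis
      by (simp add: fps_compose_add_distrib fps_compose_sum_distrib fps_compose_power[OF h0, symmetric] Zh)
  qed
  finally have rh: "(\<Sum>j<d. Pb j * (h + fps_const (a i)) ^ j) + (h + fps_const (a i)) ^ d = 0" by simp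
  have "u i = h + fps_const (a i)"
  proof (rule root_unique[where q = Pb and d = d])
    show "u i $ 0 = (h + fps_const (a i)) $ 0" using uass i h0 by simp
    show "(\<Sum>j<d. Pb j * u i ^ j) + u i ^ d = 0" by (rule u_root[OF i])
    show "(\<Sum>j<d. Pb j * (h + fps_const (a i)) ^ j) + (h + fps_const (a i)) ^ d = 0" by (rule rh)
    show "(\<Sum>j<d. Pb j $ 0 * of_nat j * (u i $ 0) ^ (j - 1)) + of_nat d * (u i $ 0) ^ (d - 1) \<noteq> 0"
      using deriv_nz[OF i] uass i by simp
  qed
  then show ?thesis unfolding ui_def h_def by simp
qed

lemma fa_ui: "i < d \<Longrightarrow> fa i oo ui i = fps_X"
  using ui_inv fps_inv_right fa0 fa1 by metis

lemma ui_fa: "i < d \<Longrightarrow> ui i oo fa i = fps_X"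
  using ui_inv fps_inv fa0 fa1 by metis

lemma ui1: "i < d \<Longrightarrow> ui i $ 1 \<noteq> 0"
proof -
  assume i: "i < d"
  have "(fa i oo ui i) $ 1 = fa i $ 1 * ui i $ 1"
    by (simp add: fps_compose_nth fa0[OF i] ui0[OF i] numeral_2_eq_2 fps_mult_nth atLeast0AtMost)
  then show ?thesis using fa_ui[OF i] by auto
qed

lemma f_u: "i < d \<Longrightarrow> \<exists>\<rho>>0. \<rho> \<le> 1 \<and> (\<forall>z. v z < \<rho> \<longrightarrow> tz (u i) z \<and> tz (ui i) z \<and> E (u i) z \<in> Dk \<and>
    E f (E (u i) z) = b + z \<and> v (E (ui i) z) < 1)"
proof -
  assume i: "i < d"
  obtain r1 where r1: "r1 > 0" "r1 \<le> 1" "\<And>z. v z < r1 \<Longrightarrow> tz (u i) z" using u_rad[OF i] by blast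
  have tui: "v z < r1 \<Longrightarrow> tz (ui i) z" for z unfolding ui_def using r1 by (simp add: tz_diff tz_const)
  obtain r2 where r2: "r2 > 0" "\<And>z. v z < r2 \<Longrightarrow> tz (fa i oo ui i) z \<and> E (fa i oo ui i) z = E (fa i) (E (ui i) z) \<and> v (E (ui i) z) < 1"
    using comp_ball[OF ui0[OF i] r1(1) tui, of 1 "fa i"] fa_pt[OF i] by auto
  have "tz (u i) z \<and> tz (ui i) z \<and> E (u i) z \<in> Dk \<and> E f (E (u i) z) = b + z \<and> v (E (ui i) z) < 1"
    if z: "v z < min r1 r2" for z
  proof -
    have zz: "v z < r1" "v z < r2" using z by auto
    define w where "w = E (ui i) z"
    have w1: "v w < 1" using r2(2)[OF zz(2)] unfolding w_def by simp
    have Eu: "E (u i) z = a i + w" unfolding w_def ui_def using r1(3)[OF zz(1)] by (simp add: E_diff tz_const E_const)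
    have "E (fa i) w = z" using r2(2)[OF zz(2)] unfolding w_def fa_ui[OF i] by (simp add: E_X)
    then have "E f (a i + w) = b + z" using fa_pt[OF i w1] by (simp add: algebra_simps)
    moreover have "a i + w \<in> Dk" using disc_add a_prop[OF i] w1 by blast
    ultimately show ?thesis using Eu r1(3)[OF zz(1)] tui[OF zz(1)] w1 unfolding w_def by simp
  qed
  then show ?thesis using r1 r2 by (intro exI[of _ "min r1 r2"]) auto
qed

lemma decomp_prop:
  assumes g: "inO opn v g"
  shows "decomp_rel opn v f d g (decomp opn v f d g)"
proof -
  have "\<exists>!cs. decomp_rel opn v f d g cs" using fe g unfolding finite_etale_disc_def by blast
  then show ?thesis unfolding decomp_def by (rule theI')
qed

lemma decomp_formal:
  assumes g: "inO opn v g" and i: "i < d"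
  shows "tr g (a i) oo ui i = (\<Sum>j<d. tr (decomp opn v f d g j) b * u i ^ j)"
proof -
  define cs where "cs = decomp opn v f d g"
  have dr: "decomp_rel opn v f d g cs" unfolding cs_def by (rule decomp_prop[OF g])
  have csin: "\<And>j. j < d \<Longrightarrow> inO opn v (cs j)" and cseq: "\<And>x. x \<in> Dk \<Longrightarrow> E g x = (\<Sum>j<d. E (cs j) (E f x) * x ^ j)"
    using dr unfolding decomp_rel_def by auto
  obtain r1 where r1: "r1 > 0" "r1 \<le> 1" and F: "\<And>z. v z < r1 \<Longrightarrow> tz (u i) z \<and> tz (ui i) z \<and> E (u i) z \<in> Dk \<and>
    E f (E (u i) z) = b + z \<and> v (E (ui i) z) < 1" using f_u[OF i] by blast
  have tg: "v w < 1 \<Longrightarrow> tz (tr g (a i)) w" for w using inO_tr[OF g] a_prop[OF i] by blast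
  have tui: "\<And>z. v z < r1 \<Longrightarrow> tz (ui i) z" using F by blast
  obtain r2 where r2: "r2 > 0" "\<And>z. v z < r2 \<Longrightarrow> tz (tr g (a i) oo ui i) z \<and> E (tr g (a i) oo ui i) z = E (tr g (a i)) (E (ui i) z)"
    using comp_ball[OF ui0[OF i] r1(1) tui zero_less_one tg] by blast
  show ?thesis unfolding cs_def[symmetric]
  proof (rule ident_eq[of "min r1 r2"])
    show "min r1 r2 > 0" using r1 r2 by simp
  next
    fix z assume "v z < min r1 r2"
    then have z: "v z < r1" "v z < r2" by auto
    then have z1: "v z < 1" using r1 by simp
    show "tz (tr g (a i) oo ui i) z" using r2(2)[OF z(2)] by simp
    have tcs: "j < d \<Longrightarrow> tz (tr (cs j) b) z \<and> E (cs j) (b + z) = E (tr (cs j) b) z" for j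
      using inO_tr[OF csin bdisc z1] by simp
    note S = E_sumprod[of d "\<lambda>j. tr (cs j) b" z "u i"]
    show "tz (\<Sum>j<d. tr (cs j) b * u i ^ j) z"
      using S tcs F[OF z(1)] by simp
    define w where "w = E (ui i) z"
    have w1: "v w < 1" using F[OF z(1)] unfolding w_def by simp
    have Eu: "E (u i) z = a i + w" unfolding w_def ui_def using F[OF z(1)] by (simp add: E_diff tz_const E_const)
    have "E (tr g (a i) oo ui i) z = E (tr g (a i)) w" using r2(2)[OF z(2)] unfolding w_def by simp
    also have "\<dots> = E g (E (u i) z)" using inO_tr[OF g _ w1, of "a i"] a_prop[OF i] Eu by simp
    also have "\<dots> = (\<Sum>j<d. E (cs j) (b + z) * E (u i) z ^ j)" using cseq F[OF z(1)] by simp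
    also have "\<dots> = E (\<Sum>j<d. tr (cs j) b * u i ^ j) z"
      using S tcs F[OF z(1)] by simp
    finally show "E (tr g (a i) oo ui i) z = E (\<Sum>j<d. tr (cs j) b * u i ^ j) z" .
  qed
qed

lemma decomp_in: "inO opn v g \<Longrightarrow> j < d \<Longrightarrow> inO opn v (decomp opn v f d g j)"
  using decomp_prop unfolding decomp_rel_def by blast

end


context setting
begin

lemma horiz_t_key:
  assumes \<alpha>: "\<alpha> \<in> Dk" and m: "m < r" and z1: "v z < 1" and tY: "\<And>l. l < r \<Longrightarrow> tz (Yv l) z"
  shows "tz (fps_deriv (Yv m) + (\<Sum>l<r. tr (G m l) \<alpha> * Yv l)) z \<and>
    E (fps_deriv (Yv m) + (\<Sum>l<r. tr (G m l) \<alpha> * Yv l)) z = E (fps_deriv (Yv m)) z + (\<Sum>l<r. E (G m l) (\<alpha> + z) * E (Yv l) z)"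
proof -
  have tG: "l < r \<Longrightarrow> tz (tr (G m l) \<alpha>) z \<and> E (G m l) (\<alpha> + z) = E (tr (G m l) \<alpha>) z" for l
  proof -
    assume l: "l < r"
    have "inO opn v (G m l)" using Gin m l by blast
    from inO_tr[OF this \<alpha> z1] show ?thesis .
  qed
  have t1: "\<And>l. l \<in> {..<r} \<Longrightarrow> tz (tr (G m l) \<alpha> * Yv l) z" using tG tY by (simp add: tz_mult)
  have t2: "tz (\<Sum>l<r. tr (G m l) \<alpha> * Yv l) z" using t1 by (rule tz_sum)
  have tdm: "tz (fps_deriv (Yv m)) z" using tY[OF m] by (rule tz_deriv)
  have e1: "E (fps_deriv (Yv m) + (\<Sum>l<r. tr (G m l) \<alpha> * Yv l)) z = E (fps_deriv (Yv m)) z + E (\<Sum>l<r. tr (G m l) \<alpha> * Yv l) z"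
    by (rule E_add[OF tdm t2])
  have e2: "E (\<Sum>l<r. tr (G m l) \<alpha> * Yv l) z = (\<Sum>l<r. E (tr (G m l) \<alpha> * Yv l) z)"
    by (rule E_sum[OF t1])
  have e3: "(\<Sum>l<r. E (tr (G m l) \<alpha> * Yv l) z) = (\<Sum>l<r. E (G m l) (\<alpha> + z) * E (Yv l) z)"
  proof (rule sum.cong[OF refl])
    fix l assume "l \<in> {..<r}"
    then have l: "l < r" by simp
    show "E (tr (G m l) \<alpha> * Yv l) z = E (G m l) (\<alpha> + z) * E (Yv l) z"
      using E_mult[of "tr (G m l) \<alpha>" z "Yv l"] tG[OF l] tY[OF l] by simp
  qed
  have "E (fps_deriv (Yv m) + (\<Sum>l<r. tr (G m l) \<alpha> * Yv l)) z = E (fps_deriv (Yv m)) z + (\<Sum>l<r. E (G m l) (\<alpha> + z) * E (Yv l) z)"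
    unfolding e1 e2 e3 ..
  then show ?thesis using tz_add[OF tdm t2] by simp
qed

lemma horiz_t_iff:
  assumes \<alpha>: "\<alpha> \<in> Dk"
  shows "Yv \<in> horiz_t opn v r G \<alpha> \<longleftrightarrow> ((\<forall>l\<ge>r. Yv l = 0) \<and> (\<exists>\<rho>>0. \<rho> \<le> 1 \<and> (\<forall>l<r. \<forall>z. v z < \<rho> \<longrightarrow> tz (Yv l) z))
     \<and> (\<forall>m<r. fps_deriv (Yv m) + (\<Sum>l<r. tr (G m l) \<alpha> * Yv l) = 0))"
proof
  assume h: "Yv \<in> horiz_t opn v r G \<alpha>"
  then have h1: "\<forall>l\<ge>r. Yv l = 0" and "\<exists>\<rho>>0. \<rho> \<le> 1 \<and> (\<forall>l<r. conv_ball v (Yv l) \<rho>) \<and>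
        (\<forall>x. v (x - \<alpha>) < \<rho> \<longrightarrow> (\<forall>m<r.
           E (fps_deriv (Yv m)) (x - \<alpha>) + (\<Sum>l<r. E (G m l) x * E (Yv l) (x - \<alpha>)) = 0))"
    unfolding horiz_t_def mem_Collect_eq by auto
  then obtain \<rho> where \<rho>0: "\<rho> > 0" "\<rho> \<le> 1" and cb: "\<forall>l<r. conv_ball v (Yv l) \<rho>"
    and eq0: "\<forall>x. v (x - \<alpha>) < \<rho> \<longrightarrow> (\<forall>m<r.
           E (fps_deriv (Yv m)) (x - \<alpha>) + (\<Sum>l<r. E (G m l) x * E (Yv l) (x - \<alpha>)) = 0)"
    by auto
  have \<rho>: "\<rho> > 0" "\<rho> \<le> 1" "\<And>l z. l < r \<Longrightarrow> v z < \<rho> \<Longrightarrow> tz (Yv l) z"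
    using \<rho>0 cb unfolding conv_ball_iff by auto
  have eq: "\<And>x m. v (x - \<alpha>) < \<rho> \<Longrightarrow> m < r \<Longrightarrow>
      E (fps_deriv (Yv m)) (x - \<alpha>) + (\<Sum>l<r. E (G m l) x * E (Yv l) (x - \<alpha>)) = 0"
    using eq0 by blast
  have "fps_deriv (Yv m) + (\<Sum>l<r. tr (G m l) \<alpha> * Yv l) = 0" if m: "m < r" for m
  proof (rule ident_zero[OF \<rho>(1)])
    fix z assume z: "v z < \<rho>"
    have z1: "v z < 1" using z \<rho> by simp
    have tY': "\<And>l. l < r \<Longrightarrow> tz (Yv l) z" using \<rho>(3) z by blast
    note K = horiz_t_key[where Yv = Yv, OF \<alpha> m z1 tY']
    show "tz (fps_deriv (Yv m) + (\<Sum>l<r. tr (G m l) \<alpha> * Yv l)) z" using K z \<rho> by simp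
    show "E (fps_deriv (Yv m) + (\<Sum>l<r. tr (G m l) \<alpha> * Yv l)) z = 0"
      using K z \<rho> eq[of "\<alpha> + z" m] m by simp
  qed
  then have C3: "\<forall>m<r. fps_deriv (Yv m) + (\<Sum>l<r. tr (G m l) \<alpha> * Yv l) = 0" by simp
  have C2: "\<exists>\<rho>>0. \<rho> \<le> 1 \<and> (\<forall>l<r. \<forall>z. v z < \<rho> \<longrightarrow> tz (Yv l) z)"
    by (intro exI[of _ \<rho>]) (use \<rho> in auto)
  show "(\<forall>l\<ge>r. Yv l = 0) \<and> (\<exists>\<rho>>0. \<rho> \<le> 1 \<and> (\<forall>l<r. \<forall>z. v z < \<rho> \<longrightarrow> tz (Yv l) z))
     \<and> (\<forall>m<r. fps_deriv (Yv m) + (\<Sum>l<r. tr (G m l) \<alpha> * Yv l) = 0)"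
    by (rule conjI[OF h1 conjI[OF C2 C3]])
next
  assume h: "(\<forall>l\<ge>r. Yv l = 0) \<and> (\<exists>\<rho>>0. \<rho> \<le> 1 \<and> (\<forall>l<r. \<forall>z. v z < \<rho> \<longrightarrow> tz (Yv l) z))
     \<and> (\<forall>m<r. fps_deriv (Yv m) + (\<Sum>l<r. tr (G m l) \<alpha> * Yv l) = 0)"
  then obtain \<rho> where \<rho>0: "\<rho> > 0" "\<rho> \<le> 1" and tY0: "\<forall>l<r. \<forall>z. v z < \<rho> \<longrightarrow> tz (Yv l) z" by auto
  have \<rho>: "\<rho> > 0" "\<rho> \<le> 1" "\<And>l z. l < r \<Longrightarrow> v z < \<rho> \<Longrightarrow> tz (Yv l) z" using \<rho>0 tY0 by auto
  have "E (fps_deriv (Yv m)) (x - \<alpha>) + (\<Sum>l<r. E (G m l) x * E (Yv l) (x - \<alpha>)) = 0"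
    if x: "v (x - \<alpha>) < \<rho>" and m: "m < r" for x m
  proof -
    have z1: "v (x - \<alpha>) < 1" using x \<rho> by simp
    have tY': "\<And>l. l < r \<Longrightarrow> tz (Yv l) (x - \<alpha>)" using \<rho>(3) x by blast
    note K = horiz_t_key[where Yv = Yv, OF \<alpha> m z1 tY']
    have "E (fps_deriv (Yv m) + (\<Sum>l<r. tr (G m l) \<alpha> * Yv l)) (x - \<alpha>) = 0" using h m by (simp add: E_0)
    then show ?thesis using K x \<rho> by simp
  qed
  then have "\<forall>x. v (x - \<alpha>) < \<rho> \<longrightarrow> (\<forall>m<r.
           E (fps_deriv (Yv m)) (x - \<alpha>) + (\<Sum>l<r. E (G m l) x * E (Yv l) (x - \<alpha>)) = 0)" by blast
  moreover have "\<forall>l<r. conv_ball v (Yv l) \<rho>" using \<rho> unfolding conv_ball_iff by blast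
  ultimately show "Yv \<in> horiz_t opn v r G \<alpha>" unfolding horiz_t_def mem_Collect_eq
    using h \<rho>(1,2) by (intro conjI exI[of _ \<rho>]) simp_all
qed

lemma idx_lt: "l < r \<Longrightarrow> i < d \<Longrightarrow> l * d + i < r * (d::nat)"
proof -
  assume "l < r" "i < d"
  then have "l * d + i < l * d + d" by simp
  also have "\<dots> = Suc l * d" by simp
  also have "\<dots> \<le> r * d" using \<open>l < r\<close> by (intro mult_right_mono) auto
  finally show ?thesis .
qed

definition gD :: "nat \<Rightarrow> nat \<Rightarrow> nat \<Rightarrow> 'a fps" where
  "gD m l i = dv * (fps_deriv (fps_X ^ i) * (if m = l then 1 else 0) + fps_X ^ i * G m l)"

lemma Ds_eq: "Ds_mat opn v f d G m j l i = decomp opn v f d (gD m l i) j"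
  unfolding Ds_mat_def gD_def dv_def ..

lemma inO_Xpow: "inO opn v (fps_X ^ i)"
  by (rule inO_power[OF inO_X])

lemma inO_dXpow: "inO opn v (fps_deriv (fps_X ^ i))"
  by (rule inO_finite[of i]) simp

lemma gD_in: "m < r \<Longrightarrow> l < r \<Longrightarrow> inO opn v (gD m l i)"
  unfolding gD_def using dv_prop Gin
  by (intro inO_mult inO_add inO_Xpow inO_dXpow) (auto simp: inO_const[of opn 1, simplified] inO_const[of opn 0, simplified])

lemma Dm_in: "m < r \<Longrightarrow> l < r \<Longrightarrow> j < d \<Longrightarrow> inO opn v (Ds_mat opn v f d G m j l i)"
  unfolding Ds_eq by (rule decomp_in[OF gD_in])

definition ODEs :: "(nat \<Rightarrow> 'a fps) \<Rightarrow> nat \<Rightarrow> nat \<Rightarrow> 'a fps" where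
  "ODEs C m j = fps_deriv (C (m * d + j)) + (\<Sum>l<r. \<Sum>i<d. tr (Ds_mat opn v f d G m j l i) b * C (l * d + i))"

lemma horiz_s_key:
  assumes m: "m < r" and j: "j < d" and z1: "v z < 1" and tC: "\<And>q. q < r * d \<Longrightarrow> tz (C q) z"
  shows "tz (ODEs C m j) z \<and> E (ODEs C m j) z = E (fps_deriv (C (m * d + j))) z
     + (\<Sum>l<r. \<Sum>i<d. E (Ds_mat opn v f d G m j l i) (b + z) * E (C (l * d + i)) z)"
proof -
  have tD: "l < r \<Longrightarrow> tz (tr (Ds_mat opn v f d G m j l i) b) z \<and>
      E (Ds_mat opn v f d G m j l i) (b + z) = E (tr (Ds_mat opn v f d G m j l i) b) z" for l i
    using inO_tr[OF Dm_in[OF m _ j] bdisc z1] by simp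
  have t0: "\<And>l i. l < r \<Longrightarrow> i < d \<Longrightarrow> tz (tr (Ds_mat opn v f d G m j l i) b * C (l * d + i)) z"
    using tD tC idx_lt by (simp add: tz_mult)
  have t1: "\<And>l. l \<in> {..<r} \<Longrightarrow> tz (\<Sum>i<d. tr (Ds_mat opn v f d G m j l i) b * C (l * d + i)) z"
    by (rule tz_sum) (use t0 in auto)
  have t2: "tz (\<Sum>l<r. \<Sum>i<d. tr (Ds_mat opn v f d G m j l i) b * C (l * d + i)) z" using t1 by (rule tz_sum)
  have tdm: "tz (fps_deriv (C (m * d + j))) z" using tC[OF idx_lt[OF m j]] by (rule tz_deriv)
  have e1: "E (ODEs C m j) z = E (fps_deriv (C (m * d + j))) z + E (\<Sum>l<r. \<Sum>i<d. tr (Ds_mat opn v f d G m j l i) b * C (l * d + i)) z"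
    unfolding ODEs_def by (rule E_add[OF tdm t2])
  have e2: "E (\<Sum>l<r. \<Sum>i<d. tr (Ds_mat opn v f d G m j l i) b * C (l * d + i)) z = (\<Sum>l<r. E (\<Sum>i<d. tr (Ds_mat opn v f d G m j l i) b * C (l * d + i)) z)"
    by (rule E_sum) (rule t1)
  have "E (ODEs C m j) z = E (fps_deriv (C (m * d + j))) z + (\<Sum>l<r. E (\<Sum>i<d. tr (Ds_mat opn v f d G m j l i) b * C (l * d + i)) z)"
    unfolding e1 e2 ..
  also have "\<dots> = E (fps_deriv (C (m * d + j))) z + (\<Sum>l<r. \<Sum>i<d. E (Ds_mat opn v f d G m j l i) (b + z) * E (C (l * d + i)) z)"
  proof -
    have "E (\<Sum>i<d. tr (Ds_mat opn v f d G m j l i) b * C (l * d + i)) z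
        = (\<Sum>i<d. E (Ds_mat opn v f d G m j l i) (b + z) * E (C (l * d + i)) z)" if l: "l < r" for l
    proof -
      have "E (\<Sum>i<d. tr (Ds_mat opn v f d G m j l i) b * C (l * d + i)) z
          = (\<Sum>i<d. E (tr (Ds_mat opn v f d G m j l i) b * C (l * d + i)) z)"
        by (rule E_sum) (use t0 l in auto)
      also have "\<dots> = (\<Sum>i<d. E (Ds_mat opn v f d G m j l i) (b + z) * E (C (l * d + i)) z)"
        by (rule sum.cong) (use tD tC idx_lt l in \<open>auto simp: E_mult\<close>)
      finally show ?thesis .
    qed
    then show ?thesis by simp
  qed
  finally show ?thesis using tdm t2 unfolding ODEs_def by (simp add: tz_add)
qed

lemma horiz_s_iff:
  "C \<in> horiz_s opn v r d f G b \<longleftrightarrow> ((\<forall>q\<ge>r * d. C q = 0) \<and> (\<exists>\<rho>>0. \<rho> \<le> 1 \<and> (\<forall>q<r * d. \<forall>z. v z < \<rho> \<longrightarrow> tz (C q) z))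
     \<and> (\<forall>m<r. \<forall>j<d. ODEs C m j = 0))"
proof
  assume h: "C \<in> horiz_s opn v r d f G b"
  then have h1: "\<forall>q\<ge>r * d. C q = 0" and "\<exists>\<rho>>0. \<rho> \<le> 1 \<and> (\<forall>q<r * d. conv_ball v (C q) \<rho>) \<and>
        (\<forall>y. v (y - b) < \<rho> \<longrightarrow> (\<forall>m<r. \<forall>j<d.
           E (fps_deriv (C (m * d + j))) (y - b)
           + (\<Sum>l<r. \<Sum>i<d. E (Ds_mat opn v f d G m j l i) y * E (C (l * d + i)) (y - b))
           = 0))"
    unfolding horiz_s_def mem_Collect_eq by auto
  then obtain \<rho> where \<rho>0: "\<rho> > 0" "\<rho> \<le> 1" and cb: "\<forall>q<r * d. conv_ball v (C q) \<rho>"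
    and eq0: "\<forall>y. v (y - b) < \<rho> \<longrightarrow> (\<forall>m<r. \<forall>j<d.
           E (fps_deriv (C (m * d + j))) (y - b)
           + (\<Sum>l<r. \<Sum>i<d. E (Ds_mat opn v f d G m j l i) y * E (C (l * d + i)) (y - b))
           = 0)"
    by auto
  have \<rho>: "\<rho> > 0" "\<rho> \<le> 1" "\<And>q z. q < r * d \<Longrightarrow> v z < \<rho> \<Longrightarrow> tz (C q) z"
    using \<rho>0 cb unfolding conv_ball_iff by auto
  have eq: "\<And>y m j. v (y - b) < \<rho> \<Longrightarrow> m < r \<Longrightarrow> j < d \<Longrightarrow>
      E (fps_deriv (C (m * d + j))) (y - b) + (\<Sum>l<r. \<Sum>i<d. E (Ds_mat opn v f d G m j l i) y * E (C (l * d + i)) (y - b)) = 0"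
    using eq0 by blast
  have "ODEs C m j = 0" if m: "m < r" and j: "j < d" for m j
  proof (rule ident_zero[OF \<rho>(1)])
    fix z assume z: "v z < \<rho>"
    have z1: "v z < 1" using z \<rho> by simp
    have tC': "\<And>q. q < r * d \<Longrightarrow> tz (C q) z" using \<rho>(3) z by blast
    note K = horiz_s_key[where C = C, OF m j z1 tC']
    show "tz (ODEs C m j) z" using K z \<rho> by simp
    show "E (ODEs C m j) z = 0" using K z \<rho> eq[of "b + z" m j] m j by simp
  qed
  then have C3: "\<forall>m<r. \<forall>j<d. ODEs C m j = 0" by simp
  have C2: "\<exists>\<rho>>0. \<rho> \<le> 1 \<and> (\<forall>q<r * d. \<forall>z. v z < \<rho> \<longrightarrow> tz (C q) z)"
    by (intro exI[of _ \<rho>]) (use \<rho> in auto)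
  show "(\<forall>q\<ge>r * d. C q = 0) \<and> (\<exists>\<rho>>0. \<rho> \<le> 1 \<and> (\<forall>q<r * d. \<forall>z. v z < \<rho> \<longrightarrow> tz (C q) z))
     \<and> (\<forall>m<r. \<forall>j<d. ODEs C m j = 0)"
    by (rule conjI[OF h1 conjI[OF C2 C3]])
next
  assume h: "(\<forall>q\<ge>r * d. C q = 0) \<and> (\<exists>\<rho>>0. \<rho> \<le> 1 \<and> (\<forall>q<r * d. \<forall>z. v z < \<rho> \<longrightarrow> tz (C q) z))
     \<and> (\<forall>m<r. \<forall>j<d. ODEs C m j = 0)"
  then obtain \<rho> where \<rho>0: "\<rho> > 0" "\<rho> \<le> 1" and tC0: "\<forall>q<r * d. \<forall>z. v z < \<rho> \<longrightarrow> tz (C q) z" by auto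
  have \<rho>: "\<rho> > 0" "\<rho> \<le> 1" "\<And>q z. q < r * d \<Longrightarrow> v z < \<rho> \<Longrightarrow> tz (C q) z" using \<rho>0 tC0 by auto
  have "E (fps_deriv (C (m * d + j))) (y - b) + (\<Sum>l<r. \<Sum>i<d. E (Ds_mat opn v f d G m j l i) y * E (C (l * d + i)) (y - b)) = 0"
    if y: "v (y - b) < \<rho>" and m: "m < r" and j: "j < d" for y m j
  proof -
    have z1: "v (y - b) < 1" using y \<rho> by simp
    have tC': "\<And>q. q < r * d \<Longrightarrow> tz (C q) (y - b)" using \<rho>(3) y by blast
    note K = horiz_s_key[where C = C, OF m j z1 tC']
    have "E (ODEs C m j) (y - b) = 0" using h m j by (simp add: E_0)
    then show ?thesis using K y \<rho> by simp
  qed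
  then have "\<forall>y. v (y - b) < \<rho> \<longrightarrow> (\<forall>m<r. \<forall>j<d.
           E (fps_deriv (C (m * d + j))) (y - b)
           + (\<Sum>l<r. \<Sum>i<d. E (Ds_mat opn v f d G m j l i) y * E (C (l * d + i)) (y - b))
           = 0)" by blast
  moreover have "\<forall>q<r * d. conv_ball v (C q) \<rho>" using \<rho> unfolding conv_ball_iff by blast
  ultimately show "C \<in> horiz_s opn v r d f G b" unfolding horiz_s_def mem_Collect_eq
    using h \<rho>(1,2) by (intro conjI exI[of _ \<rho>]) simp_all
qed

end


context setting
begin

definition DO :: "'a fps \<Rightarrow> bool" where "DO c \<longleftrightarrow> (\<forall>x\<in>Dk. tz c x)"

lemma DO_inO: "inO opn v c \<Longrightarrow> DO c" unfolding DO_def using inO_tz by blast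
lemma DO_mult: "DO c \<Longrightarrow> DO c' \<Longrightarrow> DO (c * c')" unfolding DO_def using tz_mult by blast
lemma DO_add: "DO c \<Longrightarrow> DO c' \<Longrightarrow> DO (c + c')" unfolding DO_def using tz_add by blast
lemma DO_deriv: "DO c \<Longrightarrow> DO (fps_deriv c)" unfolding DO_def using tz_deriv by blast
lemma DO_const: "DO (fps_const k)" unfolding DO_def using tz_const by blast
lemma DO_X: "DO fps_X" unfolding DO_def using tz_X by blast
lemma DO_power: "DO c \<Longrightarrow> DO (c ^ n)" unfolding DO_def using tz_power by blast

lemma DO_tr:
  assumes "DO c" "\<alpha> \<in> Dk" "v z < 1"
  shows "tz (tr c \<alpha>) z \<and> E c (\<alpha> + z) = E (tr c \<alpha>) z"
  using tr_point[of c \<alpha> z] assms disc_small[of z opn] unfolding DO_def by blast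

lemma DO_tr_tz: "DO c \<Longrightarrow> \<alpha> \<in> Dk \<Longrightarrow> v z < 1 \<Longrightarrow> tz (tr c \<alpha>) z"
  using DO_tr by blast

lemma DO_at: "DO c \<Longrightarrow> \<alpha> \<in> Dk \<Longrightarrow> v z < 1 \<Longrightarrow> tz c (\<alpha> + z)"
  unfolding DO_def using disc_add by blast

lemma tr_mult:
  assumes c: "DO c" and c': "DO c'" and \<alpha>: "\<alpha> \<in> Dk"
  shows "tr (c * c') \<alpha> = tr c \<alpha> * tr c' \<alpha>"
proof (rule ident_eq[of 1])
  fix z :: 'a assume z: "v z < 1"
  show "tz (tr (c * c') \<alpha>) z" using DO_tr_tz[OF DO_mult[OF c c'] \<alpha> z] .
  show "tz (tr c \<alpha> * tr c' \<alpha>) z" using DO_tr_tz[OF c \<alpha> z] DO_tr_tz[OF c' \<alpha> z] by (rule tz_mult)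
  have "E (tr (c * c') \<alpha>) z = E (c * c') (\<alpha> + z)" using DO_tr[OF DO_mult[OF c c'] \<alpha> z] by simp
  also have "\<dots> = E c (\<alpha> + z) * E c' (\<alpha> + z)" using DO_at[OF c \<alpha> z] DO_at[OF c' \<alpha> z] by (rule E_mult)
  also have "\<dots> = E (tr c \<alpha>) z * E (tr c' \<alpha>) z" using DO_tr[OF c \<alpha> z] DO_tr[OF c' \<alpha> z] by simp
  also have "\<dots> = E (tr c \<alpha> * tr c' \<alpha>) z" using DO_tr_tz[OF c \<alpha> z] DO_tr_tz[OF c' \<alpha> z] by (simp add: E_mult)
  finally show "E (tr (c * c') \<alpha>) z = E (tr c \<alpha> * tr c' \<alpha>) z" .
qed simp

lemma tr_add:
  assumes c: "DO c" and c': "DO c'" and \<alpha>: "\<alpha> \<in> Dk"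
  shows "tr (c + c') \<alpha> = tr c \<alpha> + tr c' \<alpha>"
proof (rule ident_eq[of 1])
  fix z :: 'a assume z: "v z < 1"
  show "tz (tr (c + c') \<alpha>) z" using DO_tr_tz[OF DO_add[OF c c'] \<alpha> z] .
  show "tz (tr c \<alpha> + tr c' \<alpha>) z" using DO_tr_tz[OF c \<alpha> z] DO_tr_tz[OF c' \<alpha> z] by (rule tz_add)
  have "E (tr (c + c') \<alpha>) z = E (c + c') (\<alpha> + z)" using DO_tr[OF DO_add[OF c c'] \<alpha> z] by simp
  also have "\<dots> = E c (\<alpha> + z) + E c' (\<alpha> + z)" using DO_at[OF c \<alpha> z] DO_at[OF c' \<alpha> z] by (rule E_add)
  also have "\<dots> = E (tr c \<alpha>) z + E (tr c' \<alpha>) z" using DO_tr[OF c \<alpha> z] DO_tr[OF c' \<alpha> z] by simp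
  also have "\<dots> = E (tr c \<alpha> + tr c' \<alpha>) z" using DO_tr_tz[OF c \<alpha> z] DO_tr_tz[OF c' \<alpha> z] by (simp add: E_add)
  finally show "E (tr (c + c') \<alpha>) z = E (tr c \<alpha> + tr c' \<alpha>) z" .
qed simp

lemma tr_const:
  assumes \<alpha>: "\<alpha> \<in> Dk"
  shows "tr (fps_const k) \<alpha> = fps_const k"
proof (rule ident_eq[of 1])
  fix z :: 'a assume z: "v z < 1"
  show "tz (tr (fps_const k) \<alpha>) z" using DO_tr_tz[OF DO_const \<alpha> z] .
  show "tz (fps_const k) z" by (rule tz_const)
  show "E (tr (fps_const k) \<alpha>) z = E (fps_const k) z" using DO_tr[OF DO_const \<alpha> z] by (simp add: E_const)
qed simp

lemma tr_X:
  assumes \<alpha>: "\<alpha> \<in> Dk"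
  shows "tr fps_X \<alpha> = fps_X + fps_const \<alpha>"
proof (rule ident_eq[of 1])
  fix z :: 'a assume z: "v z < 1"
  show "tz (tr fps_X \<alpha>) z" using DO_tr_tz[OF DO_X \<alpha> z] .
  show "tz (fps_X + fps_const \<alpha>) z" by (simp add: tz_add tz_X tz_const)
  show "E (tr fps_X \<alpha>) z = E (fps_X + fps_const \<alpha>) z"
    using DO_tr[OF DO_X \<alpha> z] by (simp add: E_add tz_X tz_const E_X E_const add.commute)
qed simp

lemma tr_power:
  assumes c: "DO c" and \<alpha>: "\<alpha> \<in> Dk"
  shows "tr (c ^ n) \<alpha> = tr c \<alpha> ^ n"
proof (induction n)
  case 0 then show ?case using tr_const[OF \<alpha>, of 1] by simp
next
  case (Suc n)
  have "tr (c ^ Suc n) \<alpha> = tr (c * c ^ n) \<alpha>" by simp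
  also have "\<dots> = tr c \<alpha> * tr (c ^ n) \<alpha>" by (rule tr_mult[OF c DO_power[OF c] \<alpha>])
  finally show ?case using Suc by simp
qed

lemma DO_f: "DO f" using DO_inO[OF f_in] .
lemma DO_dv: "DO dv" using DO_inO dv_prop by blast
lemma DO_G: "m < r \<Longrightarrow> l < r \<Longrightarrow> DO (G m l)" using DO_inO Gin by blast

lemma dvu: "i < d \<Longrightarrow> tr dv (a i) oo ui i = fps_deriv (u i)"
proof -
  assume i: "i < d"
  have ad: "a i \<in> Dk" using a_prop[OF i] by blast
  define F' where "F' = tr (fps_deriv f) (a i)"
  have h1: "tr dv (a i) * F' = 1"
  proof -
    have "tr dv (a i) * F' = tr (dv * fps_deriv f) (a i)" unfolding F'_def
      by (rule tr_mult[OF DO_dv DO_deriv[OF DO_f] ad, symmetric])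
    also have "\<dots> = 1" using dv_prop tr_const[OF ad, of 1] by simp
    finally show ?thesis .
  qed
  have h2: "F' = fps_deriv (fa i)" unfolding F'_def fa_def
    using tr_deriv[of f "a i"] DO_f ad unfolding DO_def by simp
  have h3: "(F' oo ui i) * fps_deriv (ui i) = 1"
  proof -
    have "fps_deriv (fa i oo ui i) = 1" using fa_ui[OF i] by simp
    then show ?thesis unfolding h2 fps_compose_deriv[OF ui0[OF i]] .
  qed
  have h4: "(tr dv (a i) oo ui i) * (F' oo ui i) = 1"
    using h1 fps_compose_mult_distrib[OF ui0[OF i], of "tr dv (a i)" F'] by simp
  have "tr dv (a i) oo ui i = (tr dv (a i) oo ui i) * ((F' oo ui i) * fps_deriv (ui i))" using h3 by simp
  also have "\<dots> = fps_deriv (ui i)" using h4 by (simp add: mult.assoc[symmetric])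
  also have "\<dots> = fps_deriv (u i)" unfolding ui_def by simp
  finally show ?thesis .
qed

lemma Xa_ui: "i < d \<Longrightarrow> (fps_X + fps_const (a i)) oo ui i = u i"
  using ui0 unfolding ui_def
  by (simp add: fps_compose_add_distrib fps_X_fps_compose_startby0)

definition Gu :: "nat \<Rightarrow> nat \<Rightarrow> nat \<Rightarrow> 'a fps" where
  "Gu i m l = tr (G m l) (a i) oo ui i"

lemma tr_gD:
  assumes i: "i < d" and m: "m < r" and l: "l < r"
  shows "tr (gD m l k) (a i) oo ui i
    = fps_deriv (u i) * (of_nat k * u i ^ (k - 1) * (if m = l then 1 else 0) + u i ^ k * Gu i m l)"
proof -
  have ad: "a i \<in> Dk" using a_prop[OF i] by blast
  have u0: "ui i $ 0 = 0" by (rule ui0[OF i])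
  define Z where "Z = fps_X + fps_const (a i)"
  have DOd: "DO (fps_deriv (fps_X ^ k))" by (intro DO_deriv DO_power DO_X)
  have DOc: "DO (if m = l then 1 else 0 :: 'a fps)" using DO_const[of 1] DO_const[of 0] by simp
  have trc: "tr (if m = l then 1 else 0 :: 'a fps) (a i) = (if m = l then 1 else 0)"
    using tr_const[OF ad, of 1] tr_const[OF ad, of 0] by simp
  have trXk: "tr (fps_X ^ k) (a i) = Z ^ k" unfolding Z_def using tr_power[OF DO_X ad] tr_X[OF ad] by simp
  have trdXk: "tr (fps_deriv (fps_X ^ k)) (a i) = of_nat k * Z ^ (k - 1)"
  proof -
    have "tr (fps_deriv (fps_X ^ k)) (a i) = fps_deriv (tr (fps_X ^ k) (a i))"
      using tr_deriv[of "fps_X ^ k" "a i"] DO_power[OF DO_X] ad unfolding DO_def by simp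
    also have "\<dots> = of_nat k * Z ^ (k - 1)" unfolding trXk fps_deriv_power' Z_def by simp
    finally show ?thesis .
  qed
  have "tr (gD m l k) (a i) = tr dv (a i) * (of_nat k * Z ^ (k - 1) * (if m = l then 1 else 0) + Z ^ k * tr (G m l) (a i))"
    unfolding gD_def
    by (simp add: tr_mult tr_add DO_dv DO_mult DO_add DOd DOc DO_power DO_X DO_G[OF m l] ad trc trXk trdXk)
  then have "tr (gD m l k) (a i) oo ui i = (tr dv (a i) oo ui i) * ((of_nat k oo ui i) * (Z oo ui i) ^ (k - 1) * ((if m = l then 1 else 0) oo ui i) + (Z oo ui i) ^ k * Gu i m l)"
    unfolding Gu_def
    by (simp add: fps_compose_mult_distrib[OF u0] fps_compose_add_distrib fps_compose_power[OF u0])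
  also have "\<dots> = fps_deriv (u i) * (of_nat k * u i ^ (k - 1) * (if m = l then 1 else 0) + u i ^ k * Gu i m l)"
  proof -
    have ofn: "(of_nat k :: 'a fps) oo ui i = of_nat k"
      by (metis fps_of_nat fps_const_compose)
    show ?thesis unfolding dvu[OF i] Z_def Xa_ui[OF i] ofn by simp
  qed
  finally show ?thesis .
qed

lemma Dsum:
  assumes i: "i < d" and m: "m < r" and l: "l < r"
  shows "(\<Sum>j<d. tr (Ds_mat opn v f d G m j l k) b * u i ^ j)
    = fps_deriv (u i) * (of_nat k * u i ^ (k - 1) * (if m = l then 1 else 0) + u i ^ k * Gu i m l)"
  unfolding Ds_eq decomp_formal[OF gD_in[OF m l] i, symmetric] by (rule tr_gD[OF i m l])

end


context setting
begin

definition Phi :: "nat \<Rightarrow> (nat \<Rightarrow> 'a fps) \<Rightarrow> nat \<Rightarrow> 'a fps" where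
  "Phi i C m = (\<Sum>j<d. C (m * d + j) * u i ^ j)"

lemma transform:
  assumes i: "i < d" and m: "m < r"
  shows "(\<Sum>j<d. ODEs C m j * u i ^ j) = fps_deriv (Phi i C m) + fps_deriv (u i) * (\<Sum>l<r. Gu i m l * Phi i C l)"
proof -
  define U where "U = u i"
  define U' where "U' = fps_deriv (u i)"
  define D where "D j l k = tr (Ds_mat opn v f d G m j l k) b" for j l k
  have S1: "(\<Sum>j<d. ODEs C m j * U ^ j) = (\<Sum>j<d. fps_deriv (C (m * d + j)) * U ^ j) + (\<Sum>j<d. (\<Sum>l<r. \<Sum>k<d. D j l k * C (l * d + k)) * U ^ j)"
    unfolding ODEs_def D_def by (simp add: distrib_right sum.distrib)
  have S2: "(\<Sum>j<d. (\<Sum>l<r. \<Sum>k<d. D j l k * C (l * d + k)) * U ^ j) = (\<Sum>l<r. \<Sum>k<d. C (l * d + k) * (\<Sum>j<d. D j l k * U ^ j))"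
  proof -
    have "(\<Sum>j<d. (\<Sum>l<r. \<Sum>k<d. D j l k * C (l * d + k)) * U ^ j) = (\<Sum>j<d. \<Sum>l<r. \<Sum>k<d. D j l k * C (l * d + k) * U ^ j)"
      by (simp add: sum_distrib_right)
    also have "\<dots> = (\<Sum>l<r. \<Sum>j<d. \<Sum>k<d. D j l k * C (l * d + k) * U ^ j)" by (rule sum.swap)
    also have "\<dots> = (\<Sum>l<r. \<Sum>k<d. \<Sum>j<d. D j l k * C (l * d + k) * U ^ j)" by (rule sum.cong[OF refl], rule sum.swap)
    also have "\<dots> = (\<Sum>l<r. \<Sum>k<d. C (l * d + k) * (\<Sum>j<d. D j l k * U ^ j))" by (simp add: sum_distrib_left mult_ac)
    finally show ?thesis .
  qed
  define A where "A k = of_nat k * U ^ (k - 1)" for k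
  have S3: "(\<Sum>l<r. \<Sum>k<d. C (l * d + k) * (\<Sum>j<d. D j l k * U ^ j))
      = (\<Sum>l<r. \<Sum>k<d. (if m = l then U' * (C (l * d + k) * A k) else 0) + U' * (Gu i m l * (C (l * d + k) * U ^ k)))"
  proof (rule sum.cong[OF refl], rule sum.cong[OF refl])
    fix l k assume "l \<in> {..<r}" "k \<in> {..<d}"
    then have l: "l < r" by simp
    have "(\<Sum>j<d. D j l k * U ^ j) = U' * (A k * (if m = l then 1 else 0) + U ^ k * Gu i m l)"
      unfolding D_def U_def U'_def A_def by (rule Dsum[OF i m l])
    then show "C (l * d + k) * (\<Sum>j<d. D j l k * U ^ j) = (if m = l then U' * (C (l * d + k) * A k) else 0) + U' * (Gu i m l * (C (l * d + k) * U ^ k))"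
      by (cases "m = l") (simp_all add: distrib_left mult_ac)
  qed
  have S4: "(\<Sum>l<r. \<Sum>k<d. (if m = l then U' * (C (l * d + k) * A k) else 0) + U' * (Gu i m l * (C (l * d + k) * U ^ k)))
      = U' * (\<Sum>k<d. C (m * d + k) * A k) + U' * (\<Sum>l<r. Gu i m l * Phi i C l)"
  proof -
    have "(\<Sum>l<r. \<Sum>k<d. (if m = l then U' * (C (l * d + k) * A k) else 0) + U' * (Gu i m l * (C (l * d + k) * U ^ k)))
        = (\<Sum>l<r. (if m = l then (\<Sum>k<d. U' * (C (l * d + k) * A k)) else 0) + (\<Sum>k<d. U' * (Gu i m l * (C (l * d + k) * U ^ k))))"
    proof (rule sum.cong[OF refl])
      fix l
      show "(\<Sum>k<d. (if m = l then U' * (C (l * d + k) * A k) else 0) + U' * (Gu i m l * (C (l * d + k) * U ^ k)))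
        = (if m = l then (\<Sum>k<d. U' * (C (l * d + k) * A k)) else 0) + (\<Sum>k<d. U' * (Gu i m l * (C (l * d + k) * U ^ k)))"
        by (cases "m = l") (simp_all add: sum.distrib)
    qed
    also have "\<dots> = (\<Sum>l<r. (if m = l then (\<Sum>k<d. U' * (C (l * d + k) * A k)) else 0)) + (\<Sum>l<r. \<Sum>k<d. U' * (Gu i m l * (C (l * d + k) * U ^ k)))"
      by (rule sum.distrib)
    also have "(\<Sum>l<r. (if m = l then (\<Sum>k<d. U' * (C (l * d + k) * A k)) else 0)) = (\<Sum>k<d. U' * (C (m * d + k) * A k))"
      using m by simp
    also have "(\<Sum>l<r. \<Sum>k<d. U' * (Gu i m l * (C (l * d + k) * U ^ k))) = U' * (\<Sum>l<r. Gu i m l * Phi i C l)"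
      unfolding Phi_def U_def by (simp add: sum_distrib_left)
    finally show ?thesis by (simp add: sum_distrib_left)
  qed
  have S5: "fps_deriv (Phi i C m) = (\<Sum>j<d. fps_deriv (C (m * d + j)) * U ^ j) + U' * (\<Sum>k<d. C (m * d + k) * A k)"
  proof -
    have "fps_deriv (Phi i C m) = (\<Sum>j<d. C (m * d + j) * fps_deriv (U ^ j) + fps_deriv (C (m * d + j)) * U ^ j)"
      unfolding Phi_def U_def by (simp only: fps_deriv_sum fps_deriv_mult)
    also have "\<dots> = (\<Sum>j<d. U' * (C (m * d + j) * A j)) + (\<Sum>j<d. fps_deriv (C (m * d + j)) * U ^ j)"
      unfolding sum.distrib A_def U'_def fps_deriv_power' by (simp add: mult_ac U_def)
    also have "\<dots> = (\<Sum>j<d. fps_deriv (C (m * d + j)) * U ^ j) + U' * (\<Sum>k<d. C (m * d + k) * A k)"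
      by (simp add: sum_distrib_left add.commute)
    finally show ?thesis .
  qed
  have "(\<Sum>j<d. ODEs C m j * U ^ j) = fps_deriv (Phi i C m) + U' * (\<Sum>l<r. Gu i m l * Phi i C l)"
    unfolding S1 S2 S3 S4 S5 by (simp only: add.assoc)
  then show ?thesis unfolding U_def U'_def .
qed

end


context setting
begin

lemma sum_delta_r: "q < (N::nat) \<Longrightarrow> (\<Sum>j<N. g j * (if q = j then 1 else 0)) = (g q :: 'b::comm_semiring_1)"
proof -
  assume q: "q < N"
  have "(\<Sum>j<N. g j * (if q = j then 1 else 0)) = (\<Sum>j<N. if q = j then g j else 0)"
    by (rule sum.cong) simp_all
  then show ?thesis using q by simp
qed

lemma sum_delta_l: "q < (N::nat) \<Longrightarrow> (\<Sum>j<N. (if q = j then 1 else 0) * g j) = (g q :: 'b::comm_semiring_1)"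
  using sum_delta_r[of q N g] by (simp add: mult.commute)

lemma u_dist: "p < d \<Longrightarrow> k < d \<Longrightarrow> p \<noteq> k \<Longrightarrow> (u p - u k) $ 0 \<noteq> 0"
  using uass ainj unfolding inj_on_def by auto

definition Lp :: "nat \<Rightarrow> 'a fps poly" where
  "Lp i = (\<Prod>k\<in>{..<d} - {i}. [: - u k * inverse (u i - u k), inverse (u i - u k) :])"

definition W :: "nat \<Rightarrow> nat \<Rightarrow> 'a fps" where "W q i = coeff (Lp i) q"

lemma poly_L: "p < d \<Longrightarrow> i < d \<Longrightarrow> poly (Lp i) (u p) = (if p = i then 1 else 0)"
proof -
  assume p: "p < d" and i: "i < d"
  have fac: "poly [: - u k * inverse (u i - u k), inverse (u i - u k) :] x = (x - u k) * inverse (u i - u k)" for k x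
    by (simp add: algebra_simps)
  show ?thesis
  proof (cases "p = i")
    case True
    have "poly (Lp i) (u p) = (\<Prod>k\<in>{..<d} - {i}. (u i - u k) * inverse (u i - u k))"
      unfolding Lp_def poly_prod fac True ..
    also have "\<dots> = (\<Prod>k\<in>{..<d} - {i}. 1)"
      by (rule prod.cong[OF refl]) (use u_dist i in \<open>auto intro: inverse_mult_eq_1'\<close>)
    finally show ?thesis using True by simp
  next
    case False
    have "poly (Lp i) (u p) = (\<Prod>k\<in>{..<d} - {i}. (u p - u k) * inverse (u i - u k))"
      unfolding Lp_def poly_prod fac ..
    also have "\<dots> = 0" by (rule prod_zero) (use p False in auto)
    finally show ?thesis using False by simp
  qed
qed

lemma deg_L: "degree (Lp i) \<le> d - 1" if i: "i < d"
proof -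
  define F where "F k = [: - u k * inverse (u i - u k), inverse (u i - u k) :]" for k
  have F1: "degree (F k) \<le> 1" for k
    unfolding F_def by (rule order.trans[OF degree_pCons_le]) simp
  have "degree (Lp i) \<le> (\<Sum>k\<in>{..<d} - {i}. degree (F k))"
    unfolding Lp_def F_def[symmetric] using degree_prod_sum_le[of "{..<d} - {i}" F] by (simp add: o_def)
  also have "\<dots> \<le> (\<Sum>k\<in>{..<d} - {i}. (1::nat))" by (rule sum_mono) (rule F1)
  also have "\<dots> = d - 1" using i by simp
  finally show ?thesis .
qed

lemma poly_lt: "degree (p :: 'a fps poly) < N \<Longrightarrow> poly p x = (\<Sum>q<N. coeff p q * x ^ q)"
proof -
  assume "degree p < N"
  then have "(\<Sum>q<N. coeff p q * x ^ q) = (\<Sum>q\<le>degree p. coeff p q * x ^ q)"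
    by (intro sum.mono_neutral_cong_right) (auto simp: coeff_eq_0)
  then show ?thesis by (subst poly_altdef) simp
qed

lemma UW: "p < d \<Longrightarrow> i < d \<Longrightarrow> (\<Sum>q<d. u p ^ q * W q i) = (if p = i then 1 else 0)"
proof -
  assume p: "p < d" and i: "i < d"
  have "degree (Lp i) < d" using deg_L[OF i] i by simp
  then have "poly (Lp i) (u p) = (\<Sum>q<d. coeff (Lp i) q * u p ^ q)" by (rule poly_lt)
  then show ?thesis using poly_L[OF p i] unfolding W_def by (simp add: mult.commute)
qed

lemma WU: "q < d \<Longrightarrow> k < d \<Longrightarrow> (\<Sum>i<d. W q i * u i ^ k) = (if q = k then 1 else 0)"
proof -
  assume q: "q < d" and k: "k < d"
  define M where "M = (\<Sum>i<d. smult (u i ^ k) (Lp i)) - monom 1 k"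
  have degM: "degree M \<le> d - 1" unfolding M_def
  proof (rule degree_diff_le)
    have "degree (smult (u i ^ k) (Lp i)) \<le> d - 1" if "i \<in> {..<d}" for i
      using degree_smult_le[of "u i ^ k" "Lp i"] deg_L[of i] that by simp
    then show "degree (\<Sum>i<d. smult (u i ^ k) (Lp i)) \<le> d - 1"
      by (rule degree_sum_le[OF finite_lessThan])
    show "degree (monom (1::'a fps) k) \<le> d - 1" using k by (simp add: degree_monom_eq)
  qed
  have rootM: "poly M (u p) = 0" if p: "p < d" for p
  proof -
    have "poly M (u p) = (\<Sum>i<d. u i ^ k * (if p = i then 1 else 0)) - u p ^ k"
      unfolding M_def by (simp add: poly_sum poly_monom poly_L[OF p])
    also have "\<dots> = 0" using p by (simp add: sum_delta_r)
    finally show ?thesis .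
  qed
  have "M = 0"
  proof (rule ccontr)
    assume M0: "M \<noteq> 0"
    have inj: "inj_on u {..<d}"
    proof (rule inj_onI)
      fix p p' assume "p \<in> {..<d}" "p' \<in> {..<d}" "u p = u p'"
      then show "p = p'" using u_dist[of p p'] by auto
    qed
    have "u ` {..<d} \<subseteq> {x. poly M x = 0}" using rootM by auto
    then have "card (u ` {..<d}) \<le> card {x. poly M x = 0}"
      by (intro card_mono poly_roots_finite M0)
    also have "\<dots> \<le> degree M" by (rule card_poly_roots_bound[OF M0])
    finally have "d \<le> d - 1" using card_image[OF inj] degM by simp
    then show False using q by simp
  qed
  then have "coeff M q = 0" by simp
  then show ?thesis unfolding M_def W_def by (simp add: coeff_sum coeff_monom mult.commute)
qed

abbreviation V0 where "V0 \<equiv> fps_mat_inv d (\<lambda>p q. u p ^ q)"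

lemma V0_eq: "p < d \<Longrightarrow> q < d \<Longrightarrow> V0 p q = W p q"
proof -
  assume p: "p < d" and q: "q < d"
  have ex: "(\<forall>p<d. \<forall>q<d. (\<Sum>k<d. u p ^ k * W k q) = (if p = q then 1 else 0)) \<and>
     (\<forall>p<d. \<forall>q<d. (\<Sum>k<d. W p k * u k ^ q) = (if p = q then 1 else 0))"
    using UW WU by simp
  have V: "(\<forall>p<d. \<forall>q<d. (\<Sum>k<d. u p ^ k * V0 k q) = (if p = q then 1 else 0)) \<and>
     (\<forall>p<d. \<forall>q<d. (\<Sum>k<d. V0 p k * u k ^ q) = (if p = q then 1 else 0))"
    unfolding fps_mat_inv_def by (rule someI[of _ W], rule ex)
  have "V0 p q = (\<Sum>k<d. V0 p k * (if q = k then 1 else 0))" using q by (simp add: sum_delta_r)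
  also have "\<dots> = (\<Sum>k<d. V0 p k * (\<Sum>s<d. u k ^ s * W s q))"
    by (rule sum.cong[OF refl]) (use UW q in \<open>auto simp: eq_commute\<close>)
  also have "\<dots> = (\<Sum>k<d. \<Sum>s<d. V0 p k * u k ^ s * W s q)"
    by (simp add: sum_distrib_left mult_ac)
  also have "\<dots> = (\<Sum>s<d. \<Sum>k<d. V0 p k * u k ^ s * W s q)" by (rule sum.swap)
  also have "\<dots> = (\<Sum>s<d. (\<Sum>k<d. V0 p k * u k ^ s) * W s q)"
    by (simp add: sum_distrib_right)
  also have "\<dots> = (\<Sum>s<d. (if p = s then 1 else 0) * W s q)" using V p by simp
  also have "\<dots> = W p q" using p by (simp add: sum_delta_l)
  finally show ?thesis .
qed

lemma good_coeff_prod: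
  assumes "\<And>x n. x \<in> S \<Longrightarrow> good (coeff (F x) n)"
  shows "good (coeff (\<Prod>x\<in>S. F x) n)"
  using assms
proof (induction S arbitrary: n rule: infinite_finite_induct)
  case (infinite S) then show ?case by (simp add: coeff_1 good_0 good_1)
next
  case empty then show ?case by (simp add: coeff_1 good_0 good_1)
next
  case (insert x S)
  then show ?case by (simp add: coeff_mult good_sum good_mult)
qed

lemma good_W: "i < d \<Longrightarrow> good (W q i)"
  unfolding W_def Lp_def
proof (rule good_coeff_prod)
  fix k n assume i: "i < d" and k: "k \<in> {..<d} - {i}"
  have gi: "good (inverse (u i - u k))"
    using k i u_dist[of i k] by (intro good_inverse good_diff good_u) auto
  have "good (- u k * inverse (u i - u k))" using k by (intro good_mult good_minus good_u gi) auto
  then show "good (coeff [: - u k * inverse (u i - u k), inverse (u i - u k) :] n)"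
    using gi by (cases n) (auto simp: good_0 coeff_pCons split: nat.splits)
qed

lemma vanish:
  assumes h: "\<And>i. i < d \<Longrightarrow> (\<Sum>j<d. Ov j * u i ^ j) = 0" and q: "q < d"
  shows "Ov q = 0"
proof -
  have "Ov q = (\<Sum>j<d. Ov j * (if q = j then 1 else 0))" using q by (simp add: sum_delta_r)
  also have "\<dots> = (\<Sum>j<d. Ov j * (\<Sum>i<d. W q i * u i ^ j))" using WU q by simp
  also have "\<dots> = (\<Sum>j<d. \<Sum>i<d. W q i * (Ov j * u i ^ j))"
    by (simp add: sum_distrib_left mult_ac)
  also have "\<dots> = (\<Sum>i<d. \<Sum>j<d. W q i * (Ov j * u i ^ j))" by (rule sum.swap)
  also have "\<dots> = (\<Sum>i<d. W q i * (\<Sum>j<d. Ov j * u i ^ j))"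
    by (simp add: sum_distrib_left)
  also have "\<dots> = 0" using h by simp
  finally show ?thesis .
qed

end


lemma dm1: "p < d \<Longrightarrow> (m * d + p) div d = (m::nat)"
  by (simp add: add.commute[of "m * d"])

lemma dm2: "p < d \<Longrightarrow> (m * d + p) mod d = (p::nat)"
  by (simp add: add.commute[of "m * d"])

lemma dm3: "q < r * d \<Longrightarrow> q div d < (r::nat)"
  by (rule less_mult_imp_div_less)

context setting
begin

definition Bv :: "nat \<Rightarrow> nat \<Rightarrow> nat \<Rightarrow> 'a fps" where
  "Bv i j = matvec (r * d) (blockdiag d r V0) (wvec d r Y u a i j)"

definition Z :: "nat \<Rightarrow> nat \<Rightarrow> nat \<Rightarrow> 'a fps" where
  "Z i j m = Y i j m oo ui i"

lemma Bform:
  assumes i: "i < d"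
  shows "Bv i j q = (if q < r * d then V0 (q mod d) i * Z i j (q div d) else 0)"
proof (cases "q < r * d")
  case False
  then show ?thesis unfolding Bv_def matvec_def blockdiag_def by simp
next
  case True
  have d0: "d > 0" using i by simp
  define q0 where "q0 = q div d * d + i"
  have q0r: "q0 < r * d" unfolding q0_def by (rule idx_lt[OF dm3[OF True] i])
  have q0m: "q0 mod d = i" and q0d: "q0 div d = q div d" unfolding q0_def using i by (simp_all add: dm1 dm2)
  have "Bv i j q = (\<Sum>q'<r * d. blockdiag d r V0 q q' * wvec d r Y u a i j q')"
    unfolding Bv_def matvec_def ..
  also have "\<dots> = (\<Sum>q'<r * d. if q' = q0 then V0 (q mod d) i * Z i j (q div d) else 0)"
  proof (rule sum.cong[OF refl])
    fix q' assume q': "q' \<in> {..<r * d}"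
    show "blockdiag d r V0 q q' * wvec d r Y u a i j q' = (if q' = q0 then V0 (q mod d) i * Z i j (q div d) else 0)"
    proof (cases "q' = q0")
      case True
      then show ?thesis using q0r q0m q0d \<open>q < r * d\<close>
        unfolding blockdiag_def wvec_def Z_def ui_def by simp
    next
      case False
      have "\<not> (q' div d = q div d \<and> q' mod d = i)"
      proof
        assume "q' div d = q div d \<and> q' mod d = i"
        then have "q' = q0" unfolding q0_def using div_mult_mod_eq[of q' d] by simp
        then show False using False by simp
      qed
      then show ?thesis using False unfolding blockdiag_def wvec_def by auto
    qed
  qed
  also have "\<dots> = V0 (q mod d) i * Z i j (q div d)" using q0r by simp
  finally show ?thesis using True by simp
qed

lemma Bzero: "i < d \<Longrightarrow> q \<ge> r * d \<Longrightarrow> Bv i j q = 0"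
  using Bform by simp

lemma Bin: "i < d \<Longrightarrow> l < r \<Longrightarrow> p < d \<Longrightarrow> Bv i j (l * d + p) = W p i * Z i j l"
  using Bform[of i j "l * d + p"] idx_lt[of l p] V0_eq[of p i] by (simp add: dm1 dm2)

lemma PhiB:
  assumes i: "i < d" and i': "i' < d" and m: "m < r"
  shows "Phi i' (Bv i j) m = (if i' = i then Z i j m else 0)"
proof -
  have "Phi i' (Bv i j) m = (\<Sum>p<d. W p i * Z i j m * u i' ^ p)"
    unfolding Phi_def by (rule sum.cong[OF refl]) (simp add: Bin[OF i m])
  also have "\<dots> = Z i j m * (\<Sum>p<d. u i' ^ p * W p i)"
    by (simp add: sum_distrib_left mult_ac)
  also have "\<dots> = (if i' = i then Z i j m else 0)" using UW[OF i' i] by simp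
  finally show ?thesis .
qed

lemma Y_props:
  assumes i: "i < d" and j: "j < r"
  shows "(\<forall>l\<ge>r. Y i j l = 0) \<and> (\<exists>\<rho>>0. \<rho> \<le> 1 \<and> (\<forall>l<r. \<forall>z. v z < \<rho> \<longrightarrow> tz (Y i j l) z))
     \<and> (\<forall>m<r. fps_deriv (Y i j m) + (\<Sum>l<r. tr (G m l) (a i) * Y i j l) = 0)"
proof -
  have "Y i j \<in> horiz_t opn v r G (a i)" using Ybas i j unfolding fam_basis_def by auto
  then show ?thesis using horiz_t_iff a_prop[OF i] by blast
qed

lemma good_Y: "i < d \<Longrightarrow> j < r \<Longrightarrow> good (Y i j l)"
proof -
  assume i: "i < d" and j: "j < r"
  show ?thesis
  proof (cases "l < r")
    case True
    then show ?thesis using Y_props[OF i j] unfolding good_def by blast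
  next
    case False
    then show ?thesis using Y_props[OF i j] good_0 by simp
  qed
qed

lemma good_Z: "i < d \<Longrightarrow> j < r \<Longrightarrow> good (Z i j l)"
  unfolding Z_def by (rule good_comp[OF ui0 good_ui good_Y])

lemma ZODE:
  assumes i: "i < d" and j: "j < r" and m: "m < r"
  shows "fps_deriv (Z i j m) + fps_deriv (u i) * (\<Sum>l<r. Gu i m l * Z i j l) = 0"
proof -
  have u0: "ui i $ 0 = 0" by (rule ui0[OF i])
  have Yo: "fps_deriv (Y i j m) = - (\<Sum>l<r. tr (G m l) (a i) * Y i j l)"
    using Y_props[OF i j] m by (simp add: eq_neg_iff_add_eq_0)
  have "fps_deriv (Z i j m) = (fps_deriv (Y i j m) oo ui i) * fps_deriv (ui i)"
    unfolding Z_def by (rule fps_compose_deriv[OF u0])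
  also have "\<dots> = - (fps_deriv (u i) * (\<Sum>l<r. Gu i m l * Z i j l))"
    unfolding Yo Gu_def Z_def ui_def
    by (simp add: fps_compose_uminus fps_compose_sum_distrib fps_compose_mult_distrib[OF u0[unfolded ui_def]] sum_distrib_left mult_ac)
  finally show ?thesis by simp
qed

lemma Bv_in:
  assumes i: "i < d" and j: "j < r"
  shows "Bv i j \<in> horiz_s opn v r d f G b"
  unfolding horiz_s_iff
proof (intro conjI)
  show "\<forall>q\<ge>r * d. Bv i j q = 0" using Bzero[OF i] by blast
  have "good (Bv i j q)" if q: "q < r * d" for q
  proof -
    have "q mod d < d" using i by simp
    then have "good (V0 (q mod d) i)" using V0_eq good_W i by simp
    then show ?thesis using Bform[OF i, of j q] q good_Z[OF i j] by (simp add: good_mult)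
  qed
  then show "\<exists>\<rho>>0. \<rho> \<le> 1 \<and> (\<forall>q<r * d. \<forall>z. v z < \<rho> \<longrightarrow> tz (Bv i j q) z)"
    by (rule good_finite)
  show "\<forall>m<r. \<forall>k<d. ODEs (Bv i j) m k = 0"
  proof (intro allI impI)
    fix m k assume m: "m < r" and k: "k < d"
    show "ODEs (Bv i j) m k = 0"
    proof (rule vanish[of "\<lambda>k. ODEs (Bv i j) m k"])
      fix i' assume i': "i' < d"
      have "(\<Sum>k<d. ODEs (Bv i j) m k * u i' ^ k)
          = fps_deriv (Phi i' (Bv i j) m) + fps_deriv (u i') * (\<Sum>l<r. Gu i' m l * Phi i' (Bv i j) l)"
        by (rule transform[OF i' m])
      also have "\<dots> = (if i' = i then fps_deriv (Z i j m) + fps_deriv (u i) * (\<Sum>l<r. Gu i m l * Z i j l) else 0)"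
      proof -
        have "(\<Sum>l<r. Gu i' m l * Phi i' (Bv i j) l) = (\<Sum>l<r. Gu i' m l * (if i' = i then Z i j l else 0))"
          by (rule sum.cong[OF refl]) (simp add: PhiB[OF i i'])
        then show ?thesis using PhiB[OF i i' m] by (cases "i' = i") simp_all
      qed
      also have "\<dots> = 0" using ZODE[OF i j m] by simp
      finally show "(\<Sum>k<d. ODEs (Bv i j) m k * u i' ^ k) = 0" .
    qed (rule k)
  qed
qed

end


context setting
begin

lemma Phi_lin: "Phi i (\<lambda>q. \<Sum>x\<in>S. fps_const (c x) * B x q) m = (\<Sum>x\<in>S. fps_const (c x) * Phi i (B x) m)"
proof -
  have "Phi i (\<lambda>q. \<Sum>x\<in>S. fps_const (c x) * B x q) m = (\<Sum>j<d. \<Sum>x\<in>S. fps_const (c x) * B x (m * d + j) * u i ^ j)"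
    unfolding Phi_def by (simp add: sum_distrib_right)
  also have "\<dots> = (\<Sum>x\<in>S. \<Sum>j<d. fps_const (c x) * B x (m * d + j) * u i ^ j)" by (rule sum.swap)
  also have "\<dots> = (\<Sum>x\<in>S. fps_const (c x) * Phi i (B x) m)"
    unfolding Phi_def by (simp add: sum_distrib_left mult_ac)
  finally show ?thesis .
qed

lemma Phi_diff: "Phi i (\<lambda>q. C q - D q) m = Phi i C m - Phi i D m"
  unfolding Phi_def by (simp add: sum_subtractf left_diff_distrib)

abbreviation Bf where "Bf \<equiv> (\<lambda>(i, j). Bv i j)"

lemma Phi_comb:
  assumes i': "i' < d" and m: "m < r"
  shows "Phi i' (\<lambda>q. \<Sum>x\<in>{..<d} \<times> {..<r}. fps_const (c x) * Bf x q) m = (\<Sum>j<r. fps_const (c (i', j)) * Z i' j m)"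
proof -
  have "Phi i' (\<lambda>q. \<Sum>x\<in>{..<d} \<times> {..<r}. fps_const (c x) * Bf x q) m
      = (\<Sum>x\<in>{..<d} \<times> {..<r}. fps_const (c x) * Phi i' (Bf x) m)" by (rule Phi_lin)
  also have "\<dots> = (\<Sum>x\<in>{..<d} \<times> {..<r}. case x of (i, j) \<Rightarrow> fps_const (c (i, j)) * Phi i' (Bv i j) m)"
    by (rule sum.cong[OF refl]) auto
  also have "\<dots> = (\<Sum>i<d. \<Sum>j<r. fps_const (c (i, j)) * Phi i' (Bv i j) m)"
    by (rule sum.cartesian_product[symmetric])
  also have "\<dots> = (\<Sum>i<d. if i' = i then (\<Sum>j<r. fps_const (c (i, j)) * Z i j m) else 0)"
    by (rule sum.cong[OF refl]) (auto simp: PhiB[OF _ i' m])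
  also have "\<dots> = (\<Sum>j<r. fps_const (c (i', j)) * Z i' j m)" using i' by simp
  finally show ?thesis .
qed

lemma Z_sum_comp: "i < d \<Longrightarrow> (\<Sum>j<r. fps_const (c j) * Z i j m) = (\<Sum>j<r. fps_const (c j) * Y i j m) oo ui i"
  unfolding Z_def using ui0
  by (simp add: fps_compose_sum_distrib fps_compose_mult_distrib)

lemma ui_ne0: "i < d \<Longrightarrow> ui i \<noteq> 0"
  using ui1 by fastforce

lemma indep:
  assumes h: "\<forall>q. (\<Sum>x\<in>{..<d} \<times> {..<r}. fps_const (c x) * Bf x q) = 0"
  shows "\<forall>x\<in>{..<d} \<times> {..<r}. c x = 0"
proof
  fix x assume x: "x \<in> {..<d} \<times> {..<r}"
  obtain i0 j0 where x': "x = (i0, j0)" "i0 < d" "j0 < r" using x by auto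
  have S: "(\<Sum>j<r. fps_const (c (i0, j)) * Y i0 j l) = 0" for l
  proof (cases "l < r")
    case True
    have "(\<Sum>j<r. fps_const (c (i0, j)) * Z i0 j l) = Phi i0 (\<lambda>q. \<Sum>x\<in>{..<d} \<times> {..<r}. fps_const (c x) * Bf x q) l"
      using Phi_comb[OF x'(2) True] by simp
    also have "\<dots> = 0" unfolding Phi_def using h by simp
    finally have "(\<Sum>j<r. fps_const (c (i0, j)) * Y i0 j l) oo ui i0 = 0"
      using Z_sum_comp[OF x'(2)] by simp
    then show ?thesis using fps_compose_eq_0_iff[OF ui0[OF x'(2)]] ui_ne0[OF x'(2)] by simp
  next
    case False
    then show ?thesis using Y_props[OF x'(2)] by simp
  qed
  have "fam_basis (horiz_t opn v r G (a i0)) (Y i0) {..<r}" using Ybas x'(2) by blast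
  then have I: "\<forall>c'. (\<forall>l. (\<Sum>x\<in>{..<r}. fps_const (c' x) * Y i0 x l) = 0) \<longrightarrow> (\<forall>x\<in>{..<r}. c' x = 0)"
    unfolding fam_basis_def by blast
  have "\<forall>j\<in>{..<r}. c (i0, j) = 0"
    using I[rule_format, of "\<lambda>j. c (i0, j)"] S by simp
  then show "c x = 0" using x' by simp
qed

lemma span:
  assumes C: "C \<in> horiz_s opn v r d f G b"
  shows "\<exists>c. \<forall>l. C l = (\<Sum>x\<in>{..<d} \<times> {..<r}. fps_const (c x) * Bf x l)"
proof -
  have Cz: "\<And>q. q \<ge> r * d \<Longrightarrow> C q = 0" and Cg: "\<exists>\<rho>>0. \<rho> \<le> 1 \<and> (\<forall>q<r * d. \<forall>z. v z < \<rho> \<longrightarrow> tz (C q) z)"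
    and CO: "\<And>m j. m < r \<Longrightarrow> j < d \<Longrightarrow> ODEs C m j = 0"
    using C unfolding horiz_s_iff by auto
  have goodC: "good (C q)" for q
  proof (cases "q < r * d")
    case True then show ?thesis using Cg unfolding good_def by blast
  next
    case False then show ?thesis using Cz good_0 by simp
  qed
  have goodPhi: "i < d \<Longrightarrow> good (Phi i C m)" for i m
    unfolding Phi_def by (intro good_sum good_mult good_power goodC good_u)
  define Yh where "Yh i l = Phi i C l oo fa i" for i l
  have PhiODE: "fps_deriv (Phi i C m) + fps_deriv (u i) * (\<Sum>l<r. Gu i m l * Phi i C l) = 0"
    if i: "i < d" and m: "m < r" for i m
    using transform[OF i m, of C] CO[OF m] by simp
  have Yh_in: "Yh i \<in> horiz_t opn v r G (a i)" if i: "i < d" for i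
    unfolding horiz_t_iff[OF conjunct1[OF a_prop[OF i]]]
  proof (intro conjI)
    show "\<forall>l\<ge>r. Yh i l = 0"
    proof (intro allI impI)
      fix l assume "r \<le> l"
      then have "\<And>j. j < d \<Longrightarrow> C (l * d + j) = 0" using Cz
        by (metis add.commute le_add2 mult_le_mono1 order.trans)
      then have "Phi i C l = 0" unfolding Phi_def by simp
      then show "Yh i l = 0" unfolding Yh_def by simp
    qed
    have "good (Yh i l)" for l unfolding Yh_def by (rule good_comp[OF fa0[OF i] good_fa[OF i] goodPhi[OF i]])
    then show "\<exists>\<rho>>0. \<rho> \<le> 1 \<and> (\<forall>l<r. \<forall>z. v z < \<rho> \<longrightarrow> tz (Yh i l) z)" by (rule good_finite)
    show "\<forall>m<r. fps_deriv (Yh i m) + (\<Sum>l<r. tr (G m l) (a i) * Yh i l) = 0"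
    proof (intro allI impI)
      fix m assume m: "m < r"
      have f0: "fa i $ 0 = 0" by (rule fa0[OF i])
      have uf: "(fps_deriv (u i) oo fa i) * fps_deriv (fa i) = 1"
      proof -
        have "fps_deriv (ui i oo fa i) = 1" using ui_fa[OF i] by simp
        then show ?thesis unfolding fps_compose_deriv[OF f0] ui_def by simp
      qed
      have Gf: "Gu i m l oo fa i = tr (G m l) (a i)" for l
        unfolding Gu_def using fps_compose_assoc[OF f0 ui0[OF i], of "tr (G m l) (a i)"] ui_fa[OF i] by simp
      have dP: "fps_deriv (Phi i C m) = - (fps_deriv (u i) * (\<Sum>l<r. Gu i m l * Phi i C l))"
        using PhiODE[OF i m] by (simp add: eq_neg_iff_add_eq_0)
      have "fps_deriv (Yh i m) = (fps_deriv (Phi i C m) oo fa i) * fps_deriv (fa i)"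
        unfolding Yh_def by (rule fps_compose_deriv[OF f0])
      also have "\<dots> = - (((fps_deriv (u i) oo fa i) * fps_deriv (fa i)) * (\<Sum>l<r. (Gu i m l oo fa i) * Yh i l))"
        unfolding dP Yh_def
        by (simp add: fps_compose_uminus fps_compose_sum_distrib fps_compose_mult_distrib[OF f0] mult_ac)
      also have "\<dots> = - (\<Sum>l<r. tr (G m l) (a i) * Yh i l)" unfolding uf Gf by simp
      finally show "fps_deriv (Yh i m) + (\<Sum>l<r. tr (G m l) (a i) * Yh i l) = 0" by simp
    qed
  qed
  have "\<forall>i<d. \<exists>cc. \<forall>l. Yh i l = (\<Sum>j<r. fps_const (cc j) * Y i j l)"
    using Yh_in Ybas unfolding fam_basis_def by blast
  then obtain cf where cf: "\<And>i l. i < d \<Longrightarrow> Yh i l = (\<Sum>j<r. fps_const (cf i j) * Y i j l)"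
    by metis
  define c where "c x = cf (fst x) (snd x)" for x
  have PhiC: "Phi i C m = (\<Sum>j<r. fps_const (cf i j) * Z i j m)" if i: "i < d" for i m
  proof -
    have "Phi i C m = Yh i m oo ui i"
      unfolding Yh_def using fps_compose_assoc[OF ui0[OF i] fa0[OF i], of "Phi i C m"] fa_ui[OF i] by simp
    also have "\<dots> = (\<Sum>j<r. fps_const (cf i j) * Z i j m)" unfolding cf[OF i] Z_sum_comp[OF i] ..
    finally show ?thesis .
  qed
  define S where "S q = (\<Sum>x\<in>{..<d} \<times> {..<r}. fps_const (c x) * Bf x q)" for q
  have "C q = S q" for q
  proof (cases "q < r * d")
    case False
    have "Bf x q = 0" if "x \<in> {..<d} \<times> {..<r}" for x using that Bzero False by auto
    then have "S q = 0" unfolding S_def by simp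
    then show ?thesis using Cz False by simp
  next
    case True
    then have d0: "d > 0" by (cases d) auto
    define m where "m = q div d"
    define p where "p = q mod d"
    have m: "m < r" unfolding m_def using dm3[OF True] .
    have p: "p < d" unfolding p_def using d0 by simp
    have q: "q = m * d + p" unfolding m_def p_def by simp
    have "C (m * d + p) - S (m * d + p) = 0"
    proof (rule vanish[of "\<lambda>p. C (m * d + p) - S (m * d + p)"])
      fix i' assume i': "i' < d"
      have "(\<Sum>j<d. (C (m * d + j) - S (m * d + j)) * u i' ^ j) = Phi i' (\<lambda>q. C q - S q) m"
        unfolding Phi_def ..
      also have "\<dots> = Phi i' C m - Phi i' S m" by (rule Phi_diff)
      also have "Phi i' S m = (\<Sum>j<r. fps_const (c (i', j)) * Z i' j m)"
        unfolding S_def by (rule Phi_comb[OF i' m])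
      also have "Phi i' C m = (\<Sum>j<r. fps_const (c (i', j)) * Z i' j m)"
        using PhiC[OF i'] unfolding c_def by simp
      finally show "(\<Sum>j<d. (C (m * d + j) - S (m * d + j)) * u i' ^ j) = 0" by simp
    qed (rule p)
    then show ?thesis using q by simp
  qed
  then show ?thesis unfolding S_def by blast
qed

theorem main: "fam_basis (horiz_s opn v r d f G b) Bf ({..<d} \<times> {..<r})"
  unfolding fam_basis_def
proof (intro conjI)
  show "finite ({..<d} \<times> {..<r})" by simp
  show "\<forall>x\<in>{..<d} \<times> {..<r}. Bf x \<in> horiz_s opn v r d f G b" using Bv_in by auto
  show "\<forall>c. (\<forall>l. (\<Sum>x\<in>{..<d} \<times> {..<r}. fps_const (c x) * Bf x l) = 0) \<longrightarrow> (\<forall>x\<in>{..<d} \<times> {..<r}. c x = 0)"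
    using indep by blast
  show "\<forall>Y\<in>horiz_s opn v r d f G b. \<exists>c. \<forall>l. Y l = (\<Sum>x\<in>{..<d} \<times> {..<r}. fps_const (c x) * Bf x l)"
    using span by blast
qed

end


lemma padic_nav:
  fixes v :: "'k::field_char_0 \<Rightarrow> real"
  assumes pb: "padic_base_field p v"
  shows "nav v"
proof -
  have na: "nonarch_abs v" and vc: "v_complete v" and ep: "extends_padic p v"
    using pb unfolding padic_base_field_def by auto
  have pr: "prime p" and vi: "\<And>n::int. n \<noteq> 0 \<Longrightarrow> v (of_int n) = real p powr (- real (multiplicity (int p) n))"
    using ep unfolding extends_padic_def by auto
  have p1: "real p > 1" using prime_gt_1_nat[OF pr] by simp
  have small: "\<exists>z. 0 < v z \<and> v z < e" if e: "e > 0" for e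
  proof -
    have "(\<lambda>n. inverse (real p ^ n)) \<longlonglongrightarrow> 0" by (rule LIMSEQ_inverse_realpow_zero[OF p1])
    then obtain n where n: "inverse (real p ^ n) < e"
      using e unfolding LIMSEQ_iff by (metis abs_of_nonneg diff_zero inverse_nonnegative_iff_nonnegative le_refl norm_conv_dist real_norm_def dist_real_def zero_le_power of_nat_0_le_iff)
    have pe: "prime_elem (int p)" using pr by (simp add: prime_imp_prime_elem)
    have nz: "int p ^ n \<noteq> 0" using pr by (simp add: prime_gt_0_nat)
    have "v (of_int (int p ^ n)) = real p powr (- real n)"
      using vi[OF nz] multiplicity_prime_power[OF pe, of n] by simp
    also have "\<dots> = inverse (real p ^ n)" using p1 by (simp add: powr_minus powr_realpow)
    finally have "v (of_int (int p ^ n) :: 'k) = inverse (real p ^ n)" .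
    then show ?thesis using n p1 by (intro exI[of _ "of_int (int p ^ n) :: 'k"]) simp
  qed
  show ?thesis
    using na vc small unfolding nonarch_abs_def by unfold_locales auto
qed

theorem theorem3p12:
  fixes v :: "'k::field_char_0 \<Rightarrow> real" and p :: nat and opn :: bool
    and f :: "'k fps" and d r :: nat and P :: "nat \<Rightarrow> 'k fps"
    and b :: 'k and a :: "nat \<Rightarrow> 'k" and u :: "nat \<Rightarrow> 'k fps"
    and G :: "nat \<Rightarrow> nat \<Rightarrow> 'k fps" and Y :: "nat \<Rightarrow> nat \<Rightarrow> nat \<Rightarrow> 'k fps"
  assumes "padic_base_field p v"
    and "finite_etale_disc opn v f d"
    and "\<forall>j<d. inO opn v (P j)"
    and "\<forall>x\<in>disc opn v. (\<Sum>j<d. feval v (P j) (feval v f x) * x ^ j) + x ^ d = 0"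
    and "b \<in> disc opn v"
    and "inj_on a {..<d}"
    and "a ` {..<d} = {x \<in> disc opn v. feval v f x = b}"
    and "\<forall>i<d. fps_nth (u i) 0 = a i \<and> (\<exists>\<rho>>0. \<rho> \<le> 1 \<and> conv_ball v (u i) \<rho> \<and>
           (\<forall>y. v (y - b) < \<rho> \<longrightarrow>
              (\<Sum>j<d. feval v (P j) y * feval v (u i) (y - b) ^ j) + feval v (u i) (y - b) ^ d = 0))"
    and "\<forall>m<r. \<forall>l<r. inO opn v (G m l)"
    and "\<forall>i<d. fam_basis (horiz_t opn v r G (a i)) (Y i) {..<r}"
  shows "fam_basis (horiz_s opn v r d f G b)
           (\<lambda>(i, j). matvec (r * d) (blockdiag d r (fps_mat_inv d (\<lambda>p q. u p ^ q))) (wvec d r Y u a i j))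
           ({..<d} \<times> {..<r})"
proof -
  have nv: "nav v" by (rule padic_nav[OF assms(1)])
  have st: "setting v opn f d r P b a u G Y"
    by (intro setting.intro nv setting_axioms.intro) (use assms in auto)
  interpret S: setting v opn f d r P b a u G Y by (rule st)
  show ?thesis using S.main unfolding S.Bv_def .
qed


end
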